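(* Let $Z:\mathrm{dom}Z\subseteq\mathfrak H_{-,+}\to\mathfrak H_{+,-}$ be an arbitrary linear operator and let $V$ be a linear homeomorphism from $\mathfrak H$ onto $\mathfrak H_{-,+}$. The following are equivalent: (i) $M_{\mathrm{Gr}(-\mathrm iZ)}$ is m-dissipative; (ii) $Z$ is maximal accretive and closed; (iii) $V^\#ZV$ is m-accretive in $\mathfrak H$.
   Context: $A$ closed densely defined symmetric in Hilbert space $\mathfrak X$; $S$ bounded uniformly positive selfadjoint in $\mathfrak X\oplus\mathfrak X$; $\mathfrak X^{2,S}$ is $\mathfrak X\oplus\mathfrak X$ with inner product $(S\cdot|\cdot)$; $M^*\{\psi_1,\psi_2\}=S^{-1}\{\mathrm iA^*\psi_2,-\mathrm iA^*\psi_1\}$ on $(\mathrm{dom}A^* )^2$ (adjoint of $M$, same formula with $A$ on $(\mathrm{dom}A)^2$). Mixed-order duality: Hilbert spaces $\mathfrak H,\mathfrak H_{-,+},\mathfrak H_{+,-}$ with $\widetilde{\mathfrak H}_{\mp,\pm}:=\mathfrak H\cap\mathfrak H_{\mp,\pm}$ dense in $\mathfrak H$ and in $\mathfrak H_{\mp,\pm}$, forms $\|h\|^2_{\mathfrak H_{\mp,\pm}}$ on $\widetilde{\mathfrak H}_{\mp,\pm}$ closed in $\mathfrak H$, and $\|h\|_{\mathfrak H_{\pm,\mp}}=\sup_{0\ne g\in\widetilde{\mathfrak H}_{\mp,\pm}}|(g|h)_{\mathfrak H}|/\|g\|_{\mathfrak H_{\mp,\pm}}$ for $h\in\widetilde{\mathfrak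 H}_{\pm,\mp}$; $\langle\cdot|\cdot\rangle_{\mathfrak H}$ the unique bounded sesquilinear extension of $(\cdot|\cdot)_{\mathfrak H}$ to $\mathfrak H_{-,+}\times\mathfrak H_{+,-}$, with $\langle h_{+,-}|h_{-,+}\rangle_{\mathfrak H}:=\overline{\langle h_{-,+}|h_{+,-}\rangle_{\mathfrak H}}$. Fix a reduction tuple $(\mathfrak H_{-,+},\mathfrak H,G,W)$ for $A^*$ ($G:\mathrm{dom}A^*\to\mathfrak H_{-,+}$ linear surjective, $W:\mathfrak H_{-,+}\to\mathfrak H_{+,-}$ linear homeomorphism, $(A^*f|g)_{\mathfrak X}-(f|A^*g)_{\mathfrak X}=\langle Gf|WGg\rangle_{\mathfrak H}$), and set $\Gamma_0\psi=G\psi_2$, $\Gamma_1\psi=\mathrm iWG\psi_1$. $M_{\mathrm{Gr}(-\mathrm iZ)}$ is the restriction of $M^*$ to $\{\psi:\Gamma_0\psi\in\mathrm{dom}Z,\ \mathrm iZ\Gamma_0\psi+\Gamma_1\psi=0\}$. $Z$ is accretive if $\mathrm{Re}\langle Zh|h\rangle_{\mathfrak H}\ge0$ for $h\in\mathrm{dom}Z$, maximal accretive if it has no proper accretive operator extension, closed if its graph is closed in $\mathfrak H_{-,+}\oplus\mathfrak H_{+,-}$. $V^\#:\mathfrak H_{+,-}\to\mathfrak H$ is defined by $\langle Vf|g\rangle_{\mathfrak H}=(f|V^\#g)_{\mathfrak H}$ ($f\in\mathfrak H$, $g\in\mathfrak H_{+,-}$). m-dissipative: upper half-plane in resolvent set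 with $\|(T-\lambda)^{-1}\|\le(\mathrm{Im}\lambda)^{-1}$; m-accretive: $(-\mathrm i)T$ m-dissipative. *)

theory Defs
  imports "HOL-Analysis.Analysis"
begin

class cvec = ab_group_add +
  fixes scaleC :: "complex \<Rightarrow> 'a \<Rightarrow> 'a" (infixr "*\<^sub>C" 75)
  assumes scaleC_add_right: "a *\<^sub>C (x + y) = a *\<^sub>C x + a *\<^sub>C y"
    and scaleC_add_left: "(a + b) *\<^sub>C x = a *\<^sub>C x + b *\<^sub>C x"
    and scaleC_scaleC: "a *\<^sub>C (b *\<^sub>C x) = (a * b) *\<^sub>C x"
    and scaleC_one: "1 *\<^sub>C x = x"

instantiation prod :: (cvec, cvec) cvec
begin
definition scaleC_prod_def: "c *\<^sub>C p = (c *\<^sub>C fst p, c *\<^sub>C snd p)"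
instance
  by standard (auto simp: scaleC_prod_def scaleC_add_right scaleC_add_left scaleC_scaleC scaleC_one)
end

definition csubspace :: "'a::cvec set \<Rightarrow> bool" where
  "csubspace V \<longleftrightarrow> 0 \<in> V \<and> (\<forall>x\<in>V. \<forall>y\<in>V. x + y \<in> V) \<and> (\<forall>c. \<forall>x\<in>V. c *\<^sub>C x \<in> V)"

definition inner_product_on :: "'a::cvec set \<Rightarrow> ('a \<Rightarrow> 'a \<Rightarrow> complex) \<Rightarrow> bool" where
  "inner_product_on V ip \<longleftrightarrow> csubspace V \<and>
     (\<forall>x\<in>V. \<forall>y\<in>V. \<forall>z\<in>V. \<forall>c. ip (x + y) z = ip x z + ip y z \<and> ip (c *\<^sub>C x) y = c * ip x y
         \<and> ip y x = cnj (ip x y)) \<and>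
     (\<forall>x\<in>V. Re (ip x x) \<ge> 0) \<and> (\<forall>x\<in>V. ip x x = 0 \<longrightarrow> x = 0)"

definition cnorm :: "('a \<Rightarrow> 'a \<Rightarrow> complex) \<Rightarrow> 'a \<Rightarrow> real" where
  "cnorm ip x = sqrt (Re (ip x x))"

definition ctends :: "('a::cvec \<Rightarrow> 'a \<Rightarrow> complex) \<Rightarrow> (nat \<Rightarrow> 'a) \<Rightarrow> 'a \<Rightarrow> bool" where
  "ctends ip f x \<longleftrightarrow> (\<lambda>n. cnorm ip (f n - x)) \<longlonglongrightarrow> 0"

definition ccauchy :: "('a::cvec \<Rightarrow> 'a \<Rightarrow> complex) \<Rightarrow> (nat \<Rightarrow> 'a) \<Rightarrow> bool" where
  "ccauchy ip f \<longleftrightarrow> (\<forall>e>0. \<exists>N. \<forall>m\<ge>N. \<forall>n\<ge>N. cnorm ip (f m - f n) < e)"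

definition hilbert_on :: "'a::cvec set \<Rightarrow> ('a \<Rightarrow> 'a \<Rightarrow> complex) \<Rightarrow> bool" where
  "hilbert_on V ip \<longleftrightarrow> inner_product_on V ip \<and>
     (\<forall>f. (\<forall>n. f n \<in> V) \<and> ccauchy ip f \<longrightarrow> (\<exists>x\<in>V. ctends ip f x))"

definition dense_in :: "('a::cvec \<Rightarrow> 'a \<Rightarrow> complex) \<Rightarrow> 'a set \<Rightarrow> 'a set \<Rightarrow> bool" where
  "dense_in ip V D \<longleftrightarrow> D \<subseteq> V \<and> (\<forall>x\<in>V. \<forall>e>0. \<exists>d\<in>D. cnorm ip (x - d) < e)"

definition linear_on :: "'a::cvec set \<Rightarrow> 'b::cvec set \<Rightarrow> ('a \<Rightarrow> 'b) \<Rightarrow> bool" where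
  "linear_on D W T \<longleftrightarrow> csubspace D \<and> (\<forall>x\<in>D. T x \<in> W) \<and>
     (\<forall>x\<in>D. \<forall>y\<in>D. T (x + y) = T x + T y) \<and> (\<forall>c. \<forall>x\<in>D. T (c *\<^sub>C x) = c *\<^sub>C T x)"

definition bounded_on :: "'a set \<Rightarrow> ('a \<Rightarrow> 'a \<Rightarrow> complex) \<Rightarrow> ('b \<Rightarrow> 'b \<Rightarrow> complex) \<Rightarrow> ('a \<Rightarrow> 'b) \<Rightarrow> bool" where
  "bounded_on V ip1 ip2 T \<longleftrightarrow> (\<exists>C. \<forall>x\<in>V. cnorm ip2 (T x) \<le> C * cnorm ip1 x)"

definition lin_homeo :: "'a::cvec set \<Rightarrow> ('a \<Rightarrow> 'a \<Rightarrow> complex) \<Rightarrow> 'b::cvec set \<Rightarrow> ('b \<Rightarrow> 'b \<Rightarrow> complex)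
    \<Rightarrow> ('a \<Rightarrow> 'b) \<Rightarrow> bool" where
  "lin_homeo V ip1 W ip2 T \<longleftrightarrow> linear_on V W T \<and> bij_betw T V W \<and> bounded_on V ip1 ip2 T \<and>
     bounded_on W ip2 ip1 (the_inv_into V T)"

definition closed_op :: "'a::cvec set \<Rightarrow> ('a \<Rightarrow> 'a \<Rightarrow> complex) \<Rightarrow> 'b::cvec set \<Rightarrow> ('b \<Rightarrow> 'b \<Rightarrow> complex)
    \<Rightarrow> 'a set \<Rightarrow> ('a \<Rightarrow> 'b) \<Rightarrow> bool" where
  "closed_op V ip1 W ip2 D T \<longleftrightarrow>
     (\<forall>f x y. (\<forall>n. f n \<in> D) \<and> x \<in> V \<and> y \<in> W \<and> ctends ip1 f x \<and> ctends ip2 (\<lambda>n. T (f n)) y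
        \<longrightarrow> x \<in> D \<and> T x = y)"

definition adj_dom :: "('a \<Rightarrow> 'a \<Rightarrow> complex) \<Rightarrow> 'a set \<Rightarrow> ('a \<Rightarrow> 'a) \<Rightarrow> 'a set" where
  "adj_dom ip D T = {g. \<exists>h. \<forall>f\<in>D. ip (T f) g = ip f h}"

definition adj :: "('a \<Rightarrow> 'a \<Rightarrow> complex) \<Rightarrow> 'a set \<Rightarrow> ('a \<Rightarrow> 'a) \<Rightarrow> 'a \<Rightarrow> 'a" where
  "adj ip D T g = (THE h. \<forall>f\<in>D. ip (T f) g = ip f h)"

definition m_dissipative :: "'a::cvec set \<Rightarrow> ('a \<Rightarrow> 'a \<Rightarrow> complex) \<Rightarrow> 'a set \<Rightarrow> ('a \<Rightarrow> 'a) \<Rightarrow> bool" where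
  "m_dissipative V ip D T \<longleftrightarrow> D \<subseteq> V \<and>
     (\<forall>z. Im z > 0 \<longrightarrow> bij_betw (\<lambda>f. T f - z *\<^sub>C f) D V \<and>
         (\<forall>f\<in>D. Im z * cnorm ip f \<le> cnorm ip (T f - z *\<^sub>C f)))"

definition m_accretive :: "'a::cvec set \<Rightarrow> ('a \<Rightarrow> 'a \<Rightarrow> complex) \<Rightarrow> 'a set \<Rightarrow> ('a \<Rightarrow> 'a) \<Rightarrow> bool" where
  "m_accretive V ip D T \<longleftrightarrow> m_dissipative V ip D (\<lambda>f. (- \<i>) *\<^sub>C T f)"

definition closed_dd_symmetric :: "('x::cvec \<Rightarrow> 'x \<Rightarrow> complex) \<Rightarrow> 'x set \<Rightarrow> ('x \<Rightarrow> 'x) \<Rightarrow> bool" where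
  "closed_dd_symmetric ipX domA A \<longleftrightarrow> linear_on domA UNIV A \<and> dense_in ipX UNIV domA \<and>
     closed_op UNIV ipX UNIV ipX domA A \<and> (\<forall>f\<in>domA. \<forall>g\<in>domA. ipX (A f) g = ipX f (A g))"

definition ip2 :: "('x \<Rightarrow> 'x \<Rightarrow> complex) \<Rightarrow> 'x \<times> 'x \<Rightarrow> 'x \<times> 'x \<Rightarrow> complex" where
  "ip2 ipX p q = ipX (fst p) (fst q) + ipX (snd p) (snd q)"

definition ipS :: "('x \<Rightarrow> 'x \<Rightarrow> complex) \<Rightarrow> ('x \<times> 'x \<Rightarrow> 'x \<times> 'x) \<Rightarrow> 'x \<times> 'x \<Rightarrow> 'x \<times> 'x \<Rightarrow> complex" where
  "ipS ipX S p q = ip2 ipX (S p) q"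

definition bounded_unif_pos_sa :: "('x::cvec \<Rightarrow> 'x \<Rightarrow> complex) \<Rightarrow> ('x \<times> 'x \<Rightarrow> 'x \<times> 'x) \<Rightarrow> bool" where
  "bounded_unif_pos_sa ipX S \<longleftrightarrow> linear_on UNIV UNIV S \<and> bounded_on UNIV (ip2 ipX) (ip2 ipX) S \<and>
     (\<forall>p q. ip2 ipX (S p) q = ip2 ipX p (S q)) \<and>
     (\<exists>c>0. \<forall>p. Re (ip2 ipX (S p) p) \<ge> c * (cnorm (ip2 ipX) p)\<^sup>2)"

definition Mstar :: "('x::cvec \<Rightarrow> 'x \<Rightarrow> complex) \<Rightarrow> 'x set \<Rightarrow> ('x \<Rightarrow> 'x) \<Rightarrow> ('x \<times> 'x \<Rightarrow> 'x \<times> 'x)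
    \<Rightarrow> 'x \<times> 'x \<Rightarrow> 'x \<times> 'x" where
  "Mstar ipX domA A S p = inv S (\<i> *\<^sub>C adj ipX domA A (snd p), (- \<i>) *\<^sub>C adj ipX domA A (fst p))"

definition closed_form_in :: "'h::cvec set \<Rightarrow> ('h \<Rightarrow> 'h \<Rightarrow> complex) \<Rightarrow> 'h set \<Rightarrow> ('h \<Rightarrow> 'h \<Rightarrow> complex) \<Rightarrow> bool" where
  "closed_form_in H ipH K ipK \<longleftrightarrow>
     (\<forall>f h. (\<forall>n. f n \<in> H \<inter> K) \<and> h \<in> H \<and> ctends ipH f h \<and> ccauchy ipK f
        \<longrightarrow> h \<in> H \<inter> K \<and> ctends ipK f h)"

definition dual_norm :: "'h::cvec set \<Rightarrow> ('h \<Rightarrow> 'h \<Rightarrow> complex) \<Rightarrow> 'h set \<Rightarrow> ('h \<Rightarrow> 'h \<Rightarrow> complex)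
    \<Rightarrow> 'h set \<Rightarrow> ('h \<Rightarrow> 'h \<Rightarrow> complex) \<Rightarrow> bool" where
  "dual_norm H ipH K1 ip1 K2 ip2' \<longleftrightarrow>
     (\<forall>h\<in>H \<inter> K1.
        (\<forall>g\<in>(H \<inter> K2) - {0}. cmod (ipH g h) / cnorm ip2' g \<le> cnorm ip1 h) \<and>
        (\<forall>c\<ge>0. (\<forall>g\<in>(H \<inter> K2) - {0}. cmod (ipH g h) / cnorm ip2' g \<le> c) \<longrightarrow> cnorm ip1 h \<le> c))"

definition mixed_duality :: "'h::cvec set \<Rightarrow> ('h \<Rightarrow> 'h \<Rightarrow> complex) \<Rightarrow> 'h set \<Rightarrow> ('h \<Rightarrow> 'h \<Rightarrow> complex)
    \<Rightarrow> 'h set \<Rightarrow> ('h \<Rightarrow> 'h \<Rightarrow> complex) \<Rightarrow> bool" where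
  "mixed_duality H ipH Hmp ipMP Hpm ipPM \<longleftrightarrow>
     hilbert_on H ipH \<and> hilbert_on Hmp ipMP \<and> hilbert_on Hpm ipPM \<and>
     dense_in ipH H (H \<inter> Hmp) \<and> dense_in ipMP Hmp (H \<inter> Hmp) \<and>
     dense_in ipH H (H \<inter> Hpm) \<and> dense_in ipPM Hpm (H \<inter> Hpm) \<and>
     closed_form_in H ipH Hmp ipMP \<and> closed_form_in H ipH Hpm ipPM \<and>
     dual_norm H ipH Hpm ipPM Hmp ipMP \<and> dual_norm H ipH Hmp ipMP Hpm ipPM"

text \<open>pair is the (unique) bounded sesquilinear extension of ipH to Hmp \<times> Hpm.\<close>
definition is_duality_pairing :: "'h::cvec set \<Rightarrow> ('h \<Rightarrow> 'h \<Rightarrow> complex) \<Rightarrow> 'h set \<Rightarrow> ('h \<Rightarrow> 'h \<Rightarrow> complex)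
    \<Rightarrow> 'h set \<Rightarrow> ('h \<Rightarrow> 'h \<Rightarrow> complex) \<Rightarrow> ('h \<Rightarrow> 'h \<Rightarrow> complex) \<Rightarrow> bool" where
  "is_duality_pairing H ipH Hmp ipMP Hpm ipPM pair \<longleftrightarrow>
     (\<forall>x\<in>Hmp. \<forall>y\<in>Hmp. \<forall>g\<in>Hpm. \<forall>c. pair (x + y) g = pair x g + pair y g \<and> pair (c *\<^sub>C x) g = c * pair x g) \<and>
     (\<forall>h\<in>Hmp. \<forall>x\<in>Hpm. \<forall>y\<in>Hpm. \<forall>c. pair h (x + y) = pair h x + pair h y \<and> pair h (c *\<^sub>C x) = cnj c * pair h x) \<and>
     (\<exists>C. \<forall>h\<in>Hmp. \<forall>g\<in>Hpm. cmod (pair h g) \<le> C * cnorm ipMP h * cnorm ipPM g) \<and>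
     (\<forall>h\<in>H \<inter> Hmp. \<forall>g\<in>H \<inter> Hpm. pair h g = ipH h g)"

definition reduction_tuple :: "('x::cvec \<Rightarrow> 'x \<Rightarrow> complex) \<Rightarrow> 'x set \<Rightarrow> ('x \<Rightarrow> 'x) \<Rightarrow>
    'h::cvec set \<Rightarrow> ('h \<Rightarrow> 'h \<Rightarrow> complex) \<Rightarrow> 'h set \<Rightarrow> ('h \<Rightarrow> 'h \<Rightarrow> complex) \<Rightarrow>
    'h set \<Rightarrow> ('h \<Rightarrow> 'h \<Rightarrow> complex) \<Rightarrow> ('h \<Rightarrow> 'h \<Rightarrow> complex) \<Rightarrow> ('x \<Rightarrow> 'h) \<Rightarrow> ('h \<Rightarrow> 'h) \<Rightarrow> bool" where
  "reduction_tuple ipX domA A H ipH Hmp ipMP Hpm ipPM pair G W \<longleftrightarrow>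
     linear_on (adj_dom ipX domA A) Hmp G \<and> G ` adj_dom ipX domA A = Hmp \<and>
     lin_homeo Hmp ipMP Hpm ipPM W \<and>
     (\<forall>f\<in>adj_dom ipX domA A. \<forall>g\<in>adj_dom ipX domA A.
        ipX (adj ipX domA A f) g - ipX f (adj ipX domA A g) = pair (G f) (W (G g)))"

text \<open>Domain of M_{Gr(-iZ)}: Gamma0 psi = G psi2, Gamma1 psi = i W G psi1.\<close>
definition dom_MGr :: "('x::cvec \<Rightarrow> 'x \<Rightarrow> complex) \<Rightarrow> 'x set \<Rightarrow> ('x \<Rightarrow> 'x) \<Rightarrow> ('x \<Rightarrow> 'h::cvec) \<Rightarrow> ('h \<Rightarrow> 'h)
    \<Rightarrow> 'h set \<Rightarrow> ('h \<Rightarrow> 'h) \<Rightarrow> ('x \<times> 'x) set" where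
  "dom_MGr ipX domA A G W domZ Z =
     {p \<in> adj_dom ipX domA A \<times> adj_dom ipX domA A.
        G (snd p) \<in> domZ \<and> \<i> *\<^sub>C Z (G (snd p)) + \<i> *\<^sub>C W (G (fst p)) = 0}"

text \<open>Accretivity: Re <Zh|h> \<ge> 0, where <h_{+,-}|h_{-,+}> := conj <h_{-,+}|h_{+,-}>.\<close>
definition accretive_Z :: "('h \<Rightarrow> 'h \<Rightarrow> complex) \<Rightarrow> 'h set \<Rightarrow> ('h \<Rightarrow> 'h) \<Rightarrow> bool" where
  "accretive_Z pair domZ Z \<longleftrightarrow> (\<forall>h\<in>domZ. Re (cnj (pair h (Z h))) \<ge> 0)"

definition max_accretive_Z :: "'h::cvec set \<Rightarrow> 'h set \<Rightarrow> ('h \<Rightarrow> 'h \<Rightarrow> complex) \<Rightarrow> 'h set \<Rightarrow> ('h \<Rightarrow> 'h) \<Rightarrow> bool" where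
  "max_accretive_Z Hmp Hpm pair domZ Z \<longleftrightarrow> accretive_Z pair domZ Z \<and>
     (\<forall>D' Z'. D' \<subseteq> Hmp \<and> linear_on D' Hpm Z' \<and> domZ \<subseteq> D' \<and> (\<forall>h\<in>domZ. Z' h = Z h) \<and>
        accretive_Z pair D' Z' \<longrightarrow> D' = domZ)"

definition Vsharp :: "'h set \<Rightarrow> ('h \<Rightarrow> 'h \<Rightarrow> complex) \<Rightarrow> ('h \<Rightarrow> 'h \<Rightarrow> complex) \<Rightarrow> ('h \<Rightarrow> 'h) \<Rightarrow> 'h \<Rightarrow> 'h" where
  "Vsharp H ipH pair V g = (THE h. h \<in> H \<and> (\<forall>f\<in>H. pair (V f) g = ipH f h))"

end

theory Submission
  imports Defs
begin

lemma scaleC_zero_left[simp]: "(0::complex) *\<^sub>C (x::'a::cvec) = 0"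
proof -
  have "(0::complex) *\<^sub>C x = (0 + 0) *\<^sub>C x" by simp
  also have "\<dots> = 0 *\<^sub>C x + 0 *\<^sub>C x" by (rule scaleC_add_left)
  finally show ?thesis by simp
qed

lemma scaleC_zero_right[simp]: "c *\<^sub>C (0::'a::cvec) = 0"
proof -
  have "c *\<^sub>C (0::'a) = c *\<^sub>C (0 + 0)" by simp
  also have "\<dots> = c *\<^sub>C 0 + c *\<^sub>C 0" by (rule scaleC_add_right)
  finally show ?thesis by simp
qed

lemma scaleC_minus_left: "(- c) *\<^sub>C (x::'a::cvec) = - (c *\<^sub>C x)"
proof -
  have "(- c) *\<^sub>C x + c *\<^sub>C x = 0" by (simp add: scaleC_add_left[symmetric])
  thus ?thesis by (simp add: eq_neg_iff_add_eq_0)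
qed

lemma scaleC_minus_right: "c *\<^sub>C (- x::'a::cvec) = - (c *\<^sub>C x)"
proof -
  have "c *\<^sub>C (- x) + c *\<^sub>C x = 0" by (simp add: scaleC_add_right[symmetric])
  thus ?thesis by (simp add: eq_neg_iff_add_eq_0)
qed

lemma scaleC_diff_right: "c *\<^sub>C (x - y::'a::cvec) = c *\<^sub>C x - c *\<^sub>C y"
  by (simp only: diff_conv_add_uminus scaleC_add_right scaleC_minus_right)

lemma scaleC_diff_left: "(a - b) *\<^sub>C (x::'a::cvec) = a *\<^sub>C x - b *\<^sub>C x"
  by (simp only: diff_conv_add_uminus scaleC_add_left scaleC_minus_left)

lemma scaleC_minus1: "(-1) *\<^sub>C (x::'a::cvec) = - x"
  by (simp add: scaleC_minus_left scaleC_one)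

lemma scaleC_cancel: "c \<noteq> 0 \<Longrightarrow> c *\<^sub>C (x::'a::cvec) = c *\<^sub>C y \<Longrightarrow> x = y"
proof -
  assume c: "c \<noteq> 0" and e: "c *\<^sub>C x = c *\<^sub>C y"
  have "(inverse c) *\<^sub>C (c *\<^sub>C x) = (inverse c) *\<^sub>C (c *\<^sub>C y)" using e by simp
  then show "x = y" using c by (simp add: scaleC_scaleC scaleC_one)
qed

lemma scaleC_eq_0: "c *\<^sub>C (x::'a::cvec) = 0 \<longleftrightarrow> c = 0 \<or> x = 0"
  using scaleC_cancel[of c x 0] by auto

lemma fst_scaleC[simp]: "fst (c *\<^sub>C p) = c *\<^sub>C fst p" by (simp add: scaleC_prod_def)
lemma snd_scaleC[simp]: "snd (c *\<^sub>C p) = c *\<^sub>C snd p" by (simp add: scaleC_prod_def)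
lemma scaleC_Pair[simp]: "c *\<^sub>C (a, b) = (c *\<^sub>C a, c *\<^sub>C b)" by (simp add: scaleC_prod_def)

lemma csubspace_0: "csubspace V \<Longrightarrow> 0 \<in> V" by (simp add: csubspace_def)
lemma csubspace_add: "csubspace V \<Longrightarrow> x \<in> V \<Longrightarrow> y \<in> V \<Longrightarrow> x + y \<in> V" by (simp add: csubspace_def)
lemma csubspace_scale: "csubspace V \<Longrightarrow> x \<in> V \<Longrightarrow> c *\<^sub>C x \<in> V" by (simp add: csubspace_def)
lemma csubspace_minus: "csubspace V \<Longrightarrow> x \<in> V \<Longrightarrow> - x \<in> V"
  using csubspace_scale[of V x "-1"] by (simp add: scaleC_minus1)
lemma csubspace_diff: "csubspace V \<Longrightarrow> x \<in> V \<Longrightarrow> y \<in> V \<Longrightarrow> x - y \<in> V"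
  using csubspace_add[of V x "-y"] csubspace_minus[of V y] by simp
lemma csubspace_UNIV: "csubspace UNIV" by (simp add: csubspace_def)

lemma linear_onD:
  assumes "linear_on D W T"
  shows "csubspace D" "x \<in> D \<Longrightarrow> T x \<in> W" "x \<in> D \<Longrightarrow> y \<in> D \<Longrightarrow> T (x + y) = T x + T y"
    "x \<in> D \<Longrightarrow> T (c *\<^sub>C x) = c *\<^sub>C T x"
  using assms by (auto simp: linear_on_def)

lemma linear_on_0: "linear_on D W T \<Longrightarrow> T 0 = 0"
  using linear_onD(4)[of D W T 0 0] linear_onD(1)[of D W T] csubspace_0[of D] by simp
lemma linear_on_minus: "linear_on D W T \<Longrightarrow> x \<in> D \<Longrightarrow> T (- x) = - T x"
  using linear_onD(4)[of D W T x "-1"] by (simp add: scaleC_minus1)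
lemma linear_on_diff: "linear_on D W T \<Longrightarrow> x \<in> D \<Longrightarrow> y \<in> D \<Longrightarrow> T (x - y) = T x - T y"
  using linear_onD(3)[of D W T x "-y"] linear_onD(1)[of D W T] linear_on_minus[of D W T y] csubspace_minus[of D y] by simp

locale ips =
  fixes V :: "'a::cvec set" and ip :: "'a \<Rightarrow> 'a \<Rightarrow> complex"
  assumes ipo: "inner_product_on V ip"
begin

lemma sub: "csubspace V" using ipo by (simp add: inner_product_on_def)
lemma in0: "0 \<in> V" using sub csubspace_0 by blast
lemma inadd: "x \<in> V \<Longrightarrow> y \<in> V \<Longrightarrow> x + y \<in> V" using sub csubspace_add by blast
lemma indiff: "x \<in> V \<Longrightarrow> y \<in> V \<Longrightarrow> x - y \<in> V" using sub csubspace_diff by blast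
lemma inminus: "x \<in> V \<Longrightarrow> - x \<in> V" using sub csubspace_minus by blast
lemma inscale: "x \<in> V \<Longrightarrow> c *\<^sub>C x \<in> V" using sub csubspace_scale by blast

lemma ipall: "\<forall>x\<in>V. \<forall>y\<in>V. \<forall>z\<in>V. \<forall>c. ip (x + y) z = ip x z + ip y z \<and> ip (c *\<^sub>C x) y = c * ip x y
         \<and> ip y x = cnj (ip x y)"
  using ipo unfolding inner_product_on_def by (elim conjE)
lemma ippos: "\<forall>x\<in>V. Re (ip x x) \<ge> 0"
  using ipo unfolding inner_product_on_def by (elim conjE)
lemma ipdef: "\<forall>x\<in>V. ip x x = 0 \<longrightarrow> x = 0"
  using ipo unfolding inner_product_on_def by (elim conjE)
lemma add_left: "x \<in> V \<Longrightarrow> y \<in> V \<Longrightarrow> z \<in> V \<Longrightarrow> ip (x + y) z = ip x z + ip y z"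
  using ipall by blast
lemma scale_left: "x \<in> V \<Longrightarrow> y \<in> V \<Longrightarrow> ip (c *\<^sub>C x) y = c * ip x y"
  using ipall by blast
lemma ipsym: "x \<in> V \<Longrightarrow> y \<in> V \<Longrightarrow> ip y x = cnj (ip x y)"
  using ipall by blast
lemma pos: "x \<in> V \<Longrightarrow> Re (ip x x) \<ge> 0"
  using ippos by blast
lemma definite: "x \<in> V \<Longrightarrow> ip x x = 0 \<Longrightarrow> x = 0"
  using ipdef by blast

lemma add_right: "x \<in> V \<Longrightarrow> y \<in> V \<Longrightarrow> z \<in> V \<Longrightarrow> ip z (x + y) = ip z x + ip z y"
proof -
  assume x: "x \<in> V" and y: "y \<in> V" and z: "z \<in> V"
  have "ip z (x + y) = cnj (ip (x + y) z)" using ipsym[OF inadd[OF x y] z] by simp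
  also have "\<dots> = cnj (ip x z + ip y z)" using add_left[OF x y z] by simp
  also have "\<dots> = ip z x + ip z y" using ipsym[OF x z] ipsym[OF y z] by simp
  finally show ?thesis .
qed
lemma scale_right: "x \<in> V \<Longrightarrow> y \<in> V \<Longrightarrow> ip x (c *\<^sub>C y) = cnj c * ip x y"
proof -
  assume x: "x \<in> V" and y: "y \<in> V"
  have "ip x (c *\<^sub>C y) = cnj (ip (c *\<^sub>C y) x)" using ipsym[OF inscale[OF y] x] by simp
  also have "\<dots> = cnj (c * ip y x)" using scale_left[OF y x] by simp
  also have "\<dots> = cnj c * ip x y" using ipsym[OF x y] by simp
  finally show ?thesis .
qed
lemma zero_left[simp]: "y \<in> V \<Longrightarrow> ip 0 y = 0"
  using scale_left[of 0 y 0] in0 by simp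
lemma zero_right[simp]: "y \<in> V \<Longrightarrow> ip y 0 = 0"
  using scale_right[of y 0 0] in0 by simp
lemma minus_left: "x \<in> V \<Longrightarrow> y \<in> V \<Longrightarrow> ip (- x) y = - ip x y"
  using scale_left[of x y "-1"] by (simp add: scaleC_minus1)
lemma minus_right: "x \<in> V \<Longrightarrow> y \<in> V \<Longrightarrow> ip x (- y) = - ip x y"
  using scale_right[of x y "-1"] by (simp add: scaleC_minus1)
lemma diff_left: "x \<in> V \<Longrightarrow> y \<in> V \<Longrightarrow> z \<in> V \<Longrightarrow> ip (x - y) z = ip x z - ip y z"
proof -
  assume x: "x \<in> V" and y: "y \<in> V" and z: "z \<in> V"
  have "ip (x + - y) z = ip x z + ip (- y) z" by (rule add_left[OF x inminus[OF y] z])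
  then show ?thesis using minus_left[OF y z] by (simp only: diff_conv_add_uminus)
qed
lemma diff_right: "x \<in> V \<Longrightarrow> y \<in> V \<Longrightarrow> z \<in> V \<Longrightarrow> ip z (x - y) = ip z x - ip z y"
proof -
  assume x: "x \<in> V" and y: "y \<in> V" and z: "z \<in> V"
  have "ip z (x + - y) = ip z x + ip z (- y)" by (rule add_right[OF x inminus[OF y] z])
  then show ?thesis using minus_right[OF z y] by (simp only: diff_conv_add_uminus)
qed

lemma self_real: "x \<in> V \<Longrightarrow> Im (ip x x) = 0"
proof -
  assume x: "x \<in> V"
  have "ip x x = cnj (ip x x)" using ipsym[OF x x] .
  then have "Im (ip x x) = Im (cnj (ip x x))" by (rule arg_cong)
  then show ?thesis by simp
qed


lemma self_eq: "x \<in> V \<Longrightarrow> ip x x = complex_of_real (Re (ip x x))"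
  using self_real by (simp add: complex_eq_iff)

lemma expand: assumes x: "x \<in> V" and y: "y \<in> V"
  shows "ip (x - t *\<^sub>C y) (x - t *\<^sub>C y) = ip x x - cnj t * ip x y - t * cnj (ip x y) + t * cnj t * ip y y"
proof -
  have ty: "t *\<^sub>C y \<in> V" using inscale[OF y] .
  have "ip (x - t *\<^sub>C y) (x - t *\<^sub>C y) = ip x (x - t *\<^sub>C y) - ip (t *\<^sub>C y) (x - t *\<^sub>C y)"
    using diff_left[OF x ty indiff[OF x ty]] .
  also have "ip x (x - t *\<^sub>C y) = ip x x - cnj t * ip x y"
    using diff_right[OF x ty x] scale_right[OF x y] by simp
  also have "ip (t *\<^sub>C y) (x - t *\<^sub>C y) = t * (ip y x - cnj t * ip y y)"
    using scale_left[OF y indiff[OF x ty]] diff_right[OF x ty y] scale_right[OF y y] by simp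
  finally show ?thesis using ipsym[OF x y] by (simp add: algebra_simps)
qed

definition nrm where "nrm x = cnorm ip x"

lemma nrm_nonneg: "x \<in> V \<Longrightarrow> nrm x \<ge> 0" using pos by (simp add: nrm_def cnorm_def)
lemma nrm_sq: assumes "x \<in> V" shows "(nrm x)\<^sup>2 = Re (ip x x)"
  using pos[OF assms] by (simp add: nrm_def cnorm_def)
lemma ip_self_nrm: "x \<in> V \<Longrightarrow> ip x x = complex_of_real ((nrm x)\<^sup>2)"
  using self_eq nrm_sq by simp
lemma nrm_0[simp]: "nrm 0 = 0" using in0 by (simp add: nrm_def cnorm_def)
lemma nrm_eq_0: "x \<in> V \<Longrightarrow> nrm x = 0 \<longleftrightarrow> x = 0"
proof
  assume x: "x \<in> V" and "nrm x = 0"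
  then have "ip x x = 0" using ip_self_nrm[OF x] by simp
  then show "x = 0" using definite[OF x] by simp
qed simp
lemma nrm_scale: assumes x: "x \<in> V" shows "nrm (c *\<^sub>C x) = cmod c * nrm x"
proof -
  have "(nrm (c *\<^sub>C x))\<^sup>2 = Re (c * (cnj c * ip x x))"
    using nrm_sq[OF inscale[OF x]] scale_left[OF x inscale[OF x]] scale_right[OF x x] by simp
  also have "\<dots> = (cmod c)\<^sup>2 * (nrm x)\<^sup>2"
    using ip_self_nrm[OF x] by (simp add: complex_mult_cnj mult.assoc[symmetric] cmod_power2 del: of_real_power)
  finally have "(nrm (c *\<^sub>C x))\<^sup>2 = (cmod c * nrm x)\<^sup>2" by (simp add: power_mult_distrib)
  then show ?thesis using nrm_nonneg[OF x] nrm_nonneg[OF inscale[OF x]] by (simp add: power2_eq_iff_nonneg)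
qed
lemma nrm_minus: "x \<in> V \<Longrightarrow> nrm (- x) = nrm x"
  using nrm_scale[of x "-1"] by (simp add: scaleC_minus1)
lemma nrm_commute: "x \<in> V \<Longrightarrow> y \<in> V \<Longrightarrow> nrm (x - y) = nrm (y - x)"
  using nrm_minus[of "y - x"] indiff[of y x] by simp

lemma CS: assumes x: "x \<in> V" and y: "y \<in> V" shows "cmod (ip x y) \<le> nrm x * nrm y"
proof (cases "y = 0")
  case True then show ?thesis using x by simp
next
  case False
  define d where "d = Re (ip y y)"
  have dpos: "d > 0" using False nrm_eq_0[OF y] nrm_sq[OF y] nrm_nonneg[OF y] unfolding d_def
    by (metis less_eq_real_def zero_less_power2)
  have dy: "ip y y = complex_of_real d" using self_eq[OF y] d_def by simp
  define t where "t = ip x y / complex_of_real d"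
  have ex: "ip (x - t *\<^sub>C y) (x - t *\<^sub>C y) = ip x x - cnj t * ip x y - t * cnj (ip x y) + t * cnj t * ip y y"
    by (rule expand[OF x y])
  have nb: "ip x y * cnj (ip x y) = complex_of_real ((cmod (ip x y))\<^sup>2)"
    using complex_norm_square[of "ip x y"] by simp
  have dne: "complex_of_real d \<noteq> 0" using dpos by simp
  have e1: "cnj t * ip x y = complex_of_real ((cmod (ip x y))\<^sup>2 / d)"
    unfolding t_def using nb dne by (simp add: field_simps)
  have e2: "t * cnj (ip x y) = complex_of_real ((cmod (ip x y))\<^sup>2 / d)"
    unfolding t_def using nb dne by (simp add: field_simps)
  have e3: "t * cnj t * ip y y = complex_of_real ((cmod (ip x y))\<^sup>2 / d)"
    unfolding t_def dy using nb dne by (simp add: field_simps power2_eq_square)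
  have "ip (x - t *\<^sub>C y) (x - t *\<^sub>C y) = ip x x - complex_of_real ((cmod (ip x y))\<^sup>2 / d)"
    unfolding ex e1 e2 e3 by simp
  then have "0 \<le> Re (ip x x) - (cmod (ip x y))\<^sup>2 / d"
    using pos[OF indiff[OF x inscale[OF y]], of t] by simp
  then have "(cmod (ip x y))\<^sup>2 \<le> Re (ip x x) * d" using dpos by (simp add: field_simps)
  also have "\<dots> = (nrm x * nrm y)\<^sup>2" using nrm_sq[OF x] nrm_sq[OF y] d_def by (simp add: power_mult_distrib)
  finally show ?thesis using nrm_nonneg[OF x] nrm_nonneg[OF y]
    by (meson mult_nonneg_nonneg power2_le_imp_le)
qed

lemma sq_add: assumes x: "x \<in> V" and y: "y \<in> V"
  shows "(nrm (x + y))\<^sup>2 = (nrm x)\<^sup>2 + (nrm y)\<^sup>2 + 2 * Re (ip x y)"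
proof -
  have "ip (x + y) (x + y) = ip x x + ip x y + (ip y x + ip y y)"
    using add_left[OF x y inadd[OF x y]] add_right[OF x y x] add_right[OF x y y] by simp
  then have "Re (ip (x + y) (x + y)) = Re (ip x x) + Re (ip y y) + 2 * Re (ip x y)"
    using ipsym[OF x y] by simp
  then show ?thesis using nrm_sq[OF x] nrm_sq[OF y] nrm_sq[OF inadd[OF x y]] by simp
qed

lemma sq_diff: assumes x: "x \<in> V" and y: "y \<in> V"
  shows "(nrm (x - y))\<^sup>2 = (nrm x)\<^sup>2 + (nrm y)\<^sup>2 - 2 * Re (ip x y)"
  using sq_add[OF x inminus[OF y]] nrm_minus[OF y] minus_right[OF x y] by simp

lemma Re_le: assumes x: "x \<in> V" and y: "y \<in> V" shows "Re (ip x y) \<le> nrm x * nrm y"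
  using CS[OF x y] complex_Re_le_cmod[of "ip x y"] by linarith

lemma triangle: assumes x: "x \<in> V" and y: "y \<in> V" shows "nrm (x + y) \<le> nrm x + nrm y"
proof -
  have "(nrm (x + y))\<^sup>2 \<le> (nrm x + nrm y)\<^sup>2"
    using sq_add[OF x y] Re_le[OF x y] by (simp add: power2_sum)
  then show ?thesis using nrm_nonneg[OF x] nrm_nonneg[OF y] by (meson add_nonneg_nonneg power2_le_imp_le)
qed

lemma triangle_diff: assumes x: "x \<in> V" and y: "y \<in> V" and z: "z \<in> V"
  shows "nrm (x - z) \<le> nrm (x - y) + nrm (y - z)"
  using triangle[OF indiff[OF x y] indiff[OF y z]] by simp

lemma nrm_diff_ge: assumes x: "x \<in> V" and y: "y \<in> V" shows "nrm x - nrm y \<le> nrm (x - y)"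
  using triangle[OF indiff[OF x y] y] by simp

end

lemma scaleC_two: "(2::complex) *\<^sub>C (x::'a::cvec) = x + x"
proof -
  have "(2::complex) *\<^sub>C x = (1 + 1) *\<^sub>C x" by simp
  then show ?thesis by (simp only: scaleC_add_left scaleC_one)
qed

lemma squeeze0: fixes a b :: "nat \<Rightarrow> real"
  assumes "\<And>n. 0 \<le> a n" "\<And>n. a n \<le> b n" "b \<longlonglongrightarrow> 0" shows "a \<longlonglongrightarrow> 0"
  by (rule Lim_null_comparison[OF _ assms(3)]) (use assms in auto)

lemma cplx_squeeze: fixes a :: "nat \<Rightarrow> complex" and b :: "nat \<Rightarrow> real"
  assumes "\<And>n. cmod (a n - l) \<le> b n" "b \<longlonglongrightarrow> 0" shows "a \<longlonglongrightarrow> l"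
proof -
  have "(\<lambda>n. a n - l) \<longlonglongrightarrow> 0"
    by (rule Lim_null_comparison[OF _ assms(2)]) (use assms in auto)
  then show ?thesis by (simp add: LIM_zero_iff)
qed

context ips begin

lemma ctends_iff: "ctends ip f x \<longleftrightarrow> (\<lambda>n. nrm (f n - x)) \<longlonglongrightarrow> 0"
  by (simp add: ctends_def nrm_def)
lemma ccauchy_iff: "ccauchy ip f \<longleftrightarrow> (\<forall>e>0. \<exists>N. \<forall>m\<ge>N. \<forall>n\<ge>N. nrm (f m - f n) < e)"
  by (simp add: ccauchy_def nrm_def)

lemma ctends_bound: assumes "\<And>n. f n \<in> V" "x \<in> V" "\<And>n. nrm (f n - x) \<le> b n" "b \<longlonglongrightarrow> 0"
  shows "ctends ip f x"
  unfolding ctends_iff by (rule squeeze0[OF _ assms(3,4)]) (use assms nrm_nonneg indiff in auto)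

lemma ctends_unique: assumes "\<And>n. f n \<in> V" "x \<in> V" "y \<in> V" "ctends ip f x" "ctends ip f y"
  shows "x = y"
proof -
  have l: "(\<lambda>n. nrm (f n - x) + nrm (f n - y)) \<longlonglongrightarrow> 0"
    using assms(4,5) unfolding ctends_iff using tendsto_add by fastforce
  have "\<forall>n. nrm (x - y) \<le> nrm (f n - x) + nrm (f n - y)"
  proof
    fix n
    have "nrm (x - y) \<le> nrm (x - f n) + nrm (f n - y)" by (rule triangle_diff[OF assms(2) assms(1) assms(3)])
    then show "nrm (x - y) \<le> nrm (f n - x) + nrm (f n - y)" using nrm_commute[OF assms(2) assms(1)[of n]] by simp
  qed
  then have "nrm (x - y) \<le> 0" using LIMSEQ_le_const[OF l] by blast
  then have "nrm (x - y) = 0" using nrm_nonneg[OF indiff[OF assms(2,3)]] by simp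
  then show ?thesis using nrm_eq_0[OF indiff[OF assms(2,3)]] by simp
qed

lemma ctends_const: "x \<in> V \<Longrightarrow> ctends ip (\<lambda>n. x) x"
  unfolding ctends_iff by simp

lemma ctends_add: assumes "\<And>n. f n \<in> V" "\<And>n. g n \<in> V" "x \<in> V" "y \<in> V" "ctends ip f x" "ctends ip g y"
  shows "ctends ip (\<lambda>n. f n + g n) (x + y)"
proof (rule ctends_bound)
  show "(\<lambda>n. nrm (f n - x) + nrm (g n - y)) \<longlonglongrightarrow> 0"
    using assms(5,6) unfolding ctends_iff using tendsto_add by fastforce
  fix n
  have e: "f n + g n - (x + y) = (f n - x) + (g n - y)" by simp
  show "nrm (f n + g n - (x + y)) \<le> nrm (f n - x) + nrm (g n - y)"
    unfolding e by (rule triangle[OF indiff[OF assms(1)[of n] assms(3)] indiff[OF assms(2)[of n] assms(4)]])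
qed (use assms inadd in auto)

lemma ctends_scale: assumes "\<And>n. f n \<in> V" "x \<in> V" "ctends ip f x"
  shows "ctends ip (\<lambda>n. c *\<^sub>C f n) (c *\<^sub>C x)"
proof (rule ctends_bound)
  show "(\<lambda>n. cmod c * nrm (f n - x)) \<longlonglongrightarrow> 0"
    using assms(3) unfolding ctends_iff using tendsto_mult_right_zero by blast
  fix n
  show "nrm (c *\<^sub>C f n - c *\<^sub>C x) \<le> cmod c * nrm (f n - x)"
    using nrm_scale[OF indiff[OF assms(1) assms(2)], of c] by (simp add: scaleC_diff_right)
qed (use assms inscale in auto)

lemma ctends_diff: assumes "\<And>n. f n \<in> V" "\<And>n. g n \<in> V" "x \<in> V" "y \<in> V" "ctends ip f x" "ctends ip g y"
  shows "ctends ip (\<lambda>n. f n - g n) (x - y)"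
proof -
  have "ctends ip (\<lambda>n. f n + (-1) *\<^sub>C g n) (x + (-1) *\<^sub>C y)"
    by (rule ctends_add) (use assms ctends_scale inscale in auto)
  then show ?thesis by (simp add: scaleC_minus1)
qed

lemma ctends_nrm: assumes "\<And>n. f n \<in> V" "x \<in> V" "ctends ip f x"
  shows "(\<lambda>n. nrm (f n)) \<longlonglongrightarrow> nrm x"
proof -
  have "(\<lambda>n. nrm (f n) - nrm x) \<longlonglongrightarrow> 0"
  proof (rule Lim_null_comparison)
    show "(\<lambda>n. nrm (f n - x)) \<longlonglongrightarrow> 0" using assms(3) ctends_iff by simp
    show "\<forall>\<^sub>F n in sequentially. norm (nrm (f n) - nrm x) \<le> nrm (f n - x)"
    proof (rule always_eventually, rule allI)
      fix n
      have "nrm (f n) - nrm x \<le> nrm (f n - x)" by (rule nrm_diff_ge[OF assms(1) assms(2)])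
      moreover have "nrm x - nrm (f n) \<le> nrm (f n - x)"
        using nrm_diff_ge[OF assms(2) assms(1)] nrm_commute[OF assms(2) assms(1)] by simp
      ultimately show "norm (nrm (f n) - nrm x) \<le> nrm (f n - x)" by simp
    qed
  qed
  then show ?thesis by (simp add: LIM_zero_iff)
qed

lemma ctends_ip: assumes f: "\<And>n. f n \<in> V" and g: "\<And>n. g n \<in> V" and x: "x \<in> V" and y: "y \<in> V"
  and fx: "ctends ip f x" and gy: "ctends ip g y"
  shows "(\<lambda>n. ip (f n) (g n)) \<longlonglongrightarrow> ip x y"
proof (rule cplx_squeeze)
  show "(\<lambda>n. nrm (f n - x) * nrm (g n) + nrm x * nrm (g n - y)) \<longlonglongrightarrow> 0"
  proof -
    have "(\<lambda>n. nrm (f n - x) * nrm (g n)) \<longlonglongrightarrow> 0 * nrm y"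
      by (rule tendsto_mult) (use fx ctends_iff ctends_nrm[OF g y gy] in auto)
    moreover have "(\<lambda>n. nrm x * nrm (g n - y)) \<longlonglongrightarrow> nrm x * 0"
      by (rule tendsto_mult) (use gy ctends_iff in auto)
    ultimately show ?thesis using tendsto_add by fastforce
  qed
  fix n
  have "ip (f n) (g n) - ip x y = ip (f n - x) (g n) + ip x (g n - y)"
    using diff_left[OF f[of n] x g[of n]] diff_right[OF g[of n] y x] by simp
  then have "cmod (ip (f n) (g n) - ip x y) \<le> cmod (ip (f n - x) (g n)) + cmod (ip x (g n - y))"
    by (metis norm_triangle_ineq)
  also have "\<dots> \<le> nrm (f n - x) * nrm (g n) + nrm x * nrm (g n - y)"
    by (rule add_mono[OF CS[OF indiff[OF f[of n] x] g[of n]] CS[OF x indiff[OF g[of n] y]]])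
  finally show "cmod (ip (f n) (g n) - ip x y) \<le> nrm (f n - x) * nrm (g n) + nrm x * nrm (g n - y)" .
qed

lemma ctends_cauchy: assumes "\<And>n. f n \<in> V" "x \<in> V" "ctends ip f x" shows "ccauchy ip f"
  unfolding ccauchy_iff
proof (intro allI impI)
  fix e :: real assume e: "e > 0"
  from assms(3) have "(\<lambda>n. nrm (f n - x)) \<longlonglongrightarrow> 0" by (simp add: ctends_iff)
  moreover have "e / 2 > 0" using e by simp
  ultimately obtain N where N: "\<forall>n\<ge>N. norm (nrm (f n - x) - 0) < e / 2"
    using LIMSEQ_D by blast
  show "\<exists>N. \<forall>m\<ge>N. \<forall>n\<ge>N. nrm (f m - f n) < e"
  proof (intro exI allI impI)
    fix m n assume "m \<ge> N" "n \<ge> N"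
    then have a: "nrm (f m - x) < e/2" "nrm (f n - x) < e/2" using N by auto
    have "nrm (f m - f n) \<le> nrm (f m - x) + nrm (x - f n)" by (rule triangle_diff[OF assms(1) assms(2) assms(1)])
    also have "nrm (x - f n) = nrm (f n - x)" by (rule nrm_commute[OF assms(2) assms(1)])
    finally show "nrm (f m - f n) < e" using a by simp
  qed
qed

end

locale hs = ips +
  assumes complete: "\<And>f. (\<forall>n. f n \<in> V) \<Longrightarrow> ccauchy ip f \<Longrightarrow> \<exists>x\<in>V. ctends ip f x"

lemma hilbert_on_hs: "hilbert_on V ip \<Longrightarrow> hs V ip"
  unfolding hilbert_on_def hs_def hs_axioms_def ips_def by blast

context hs begin

text \<open>Projection theorem in the form: a closed subspace with trivial orthocomplement is everything.\<close>
lemma orth_complete: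
  assumes RV: "R \<subseteq> V" and Rsub: "csubspace R"
    and Rclosed: "\<And>f x. (\<forall>n. f n \<in> R) \<Longrightarrow> x \<in> V \<Longrightarrow> ctends ip f x \<Longrightarrow> x \<in> R"
    and orth: "\<And>u. u \<in> V \<Longrightarrow> (\<forall>r\<in>R. ip r u = 0) \<Longrightarrow> u = 0"
  shows "R = V"
proof (rule ccontr)
  assume "R \<noteq> V"
  then obtain x where x: "x \<in> V" "x \<notin> R" using RV by blast
  define D where "D = (\<lambda>r. nrm (x - r)) ` R"
  define d where "d = Inf D"
  have Dne: "D \<noteq> {}" using csubspace_0[OF Rsub] D_def by blast
  have Dbdd: "bdd_below D" unfolding D_def bdd_below_def
    using nrm_nonneg indiff x(1) RV by blast
  have dle: "\<And>r. r \<in> R \<Longrightarrow> d \<le> nrm (x - r)"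
    unfolding d_def D_def by (rule cInf_lower) (use Dbdd D_def in auto)
  have d0: "d \<ge> 0" unfolding d_def
  proof (rule cInf_greatest[OF Dne])
    fix t assume "t \<in> D"
    then obtain r where "r \<in> R" "t = nrm (x - r)" unfolding D_def by blast
    then show "0 \<le> t" using nrm_nonneg[OF indiff[OF x(1)]] RV by blast
  qed
  have approx: "\<exists>r\<in>R. nrm (x - r) < d + e" if "e > 0" for e
  proof -
    have "Inf D < d + e" using that d_def by simp
    then obtain t where "t \<in> D" "t < d + e" using cInf_lessD[OF Dne] by blast
    then show ?thesis unfolding D_def by blast
  qed
  define ep where "ep = (\<lambda>n::nat. 1 / (real n + 1))"
  have ep_pos: "\<And>n. ep n > 0" unfolding ep_def by simp
  have ep_lim: "ep \<longlonglongrightarrow> 0" unfolding ep_def using LIMSEQ_inverse_real_of_nat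
    by (simp add: inverse_eq_divide add.commute)
  have "\<forall>n. \<exists>r\<in>R. nrm (x - r) < d + ep n" using approx ep_pos by blast
  then obtain r where r: "\<And>n. r n \<in> R" "\<And>n. nrm (x - r n) < d + ep n" by metis
  have rV: "\<And>n. r n \<in> V" using r RV by blast
  have para: "(nrm (r m - r n))\<^sup>2 \<le> 2 * (d + ep m)\<^sup>2 + 2 * (d + ep n)\<^sup>2 - 4 * d\<^sup>2" for m n
  proof -
    define a where "a = x - r m"
    define b where "b = x - r n"
    have aV: "a \<in> V" and bV: "b \<in> V" unfolding a_def b_def using indiff x(1) rV by auto
    have "(nrm (a + b))\<^sup>2 + (nrm (a - b))\<^sup>2 = 2 * (nrm a)\<^sup>2 + 2 * (nrm b)\<^sup>2"
      using sq_add[OF aV bV] sq_diff[OF aV bV] by simp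
    moreover have "a - b = r n - r m" unfolding a_def b_def by simp
    moreover have "a + b = 2 *\<^sub>C (x - (1/2) *\<^sub>C (r m + r n))"
      unfolding a_def b_def
      by (simp add: scaleC_diff_right scaleC_scaleC scaleC_add_right scaleC_one
          flip: scaleC_add_left) (simp add: algebra_simps scaleC_two)
    moreover have mR: "(1/2) *\<^sub>C (r m + r n) \<in> R"
      using r(1) Rsub csubspace_add csubspace_scale by blast
    ultimately have "4 * (nrm (x - (1/2) *\<^sub>C (r m + r n)))\<^sup>2 + (nrm (r n - r m))\<^sup>2
        = 2 * (nrm a)\<^sup>2 + 2 * (nrm b)\<^sup>2"
      using nrm_scale[OF indiff[OF x(1) RV[THEN subsetD, OF mR]], of 2] by (simp add: power_mult_distrib)
    moreover have "d\<^sup>2 \<le> (nrm (x - (1/2) *\<^sub>C (r m + r n)))\<^sup>2"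
      using dle[OF mR] d0 by (simp add: power_mono)
    moreover have "(nrm a)\<^sup>2 \<le> (d + ep m)\<^sup>2" unfolding a_def
      using r(2)[of m] nrm_nonneg[OF aV] a_def by (simp add: power_mono)
    moreover have "(nrm b)\<^sup>2 \<le> (d + ep n)\<^sup>2" unfolding b_def
      using r(2)[of n] nrm_nonneg[OF bV] b_def by (simp add: power_mono)
    moreover have "(nrm (r m - r n))\<^sup>2 = (nrm (r n - r m))\<^sup>2" using nrm_commute rV by metis
    ultimately show ?thesis by linarith
  qed
  have cauchy: "ccauchy ip r"
    unfolding ccauchy_iff
  proof (intro allI impI)
    fix e :: real assume e: "e > 0"
    have lim: "(\<lambda>n. 2 * (d + ep n)\<^sup>2 - 2 * d\<^sup>2) \<longlonglongrightarrow> 2 * (d + 0)\<^sup>2 - 2 * d\<^sup>2"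
      by (intro tendsto_intros ep_lim)
    then have "(\<lambda>n. 2 * (d + ep n)\<^sup>2 - 2 * d\<^sup>2) \<longlonglongrightarrow> 0" by simp
    moreover have "e\<^sup>2 / 2 > 0" using e by simp
    ultimately obtain N where N: "\<forall>n\<ge>N. norm (2 * (d + ep n)\<^sup>2 - 2 * d\<^sup>2 - 0) < e\<^sup>2 / 2"
      using LIMSEQ_D by blast
    show "\<exists>N. \<forall>m\<ge>N. \<forall>n\<ge>N. nrm (r m - r n) < e"
    proof (intro exI allI impI)
      fix m n assume "m \<ge> N" "n \<ge> N"
      then have a1: "norm (2 * (d + ep m)\<^sup>2 - 2 * d\<^sup>2 - 0) < e\<^sup>2 / 2"
        and a2: "norm (2 * (d + ep n)\<^sup>2 - 2 * d\<^sup>2 - 0) < e\<^sup>2 / 2" using N by auto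
      have b1: "2 * (d + ep m)\<^sup>2 - 2 * d\<^sup>2 < e\<^sup>2 / 2" using a1 by (simp only: real_norm_def diff_0_right abs_less_iff)
      have b2: "2 * (d + ep n)\<^sup>2 - 2 * d\<^sup>2 < e\<^sup>2 / 2" using a2 by (simp only: real_norm_def diff_0_right abs_less_iff)
      have "(nrm (r m - r n))\<^sup>2 < e\<^sup>2" using para[of m n] b1 b2 by linarith
      then show "nrm (r m - r n) < e" using e nrm_nonneg[OF indiff[OF rV rV]]
        by (meson abs_less_iff less_le_trans power2_less_imp_less less_eq_real_def)
    qed
  qed
  obtain r0 where r0: "r0 \<in> V" "ctends ip r r0" using complete[OF _ cauchy] rV by blast
  have r0R: "r0 \<in> R" using Rclosed[of r r0] r(1) r0 by blast
  have dist0: "nrm (x - r0) \<le> d"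
  proof -
    have l: "(\<lambda>n. d + ep n + nrm (r n - r0)) \<longlonglongrightarrow> d + 0 + 0"
      by (intro tendsto_intros ep_lim) (use r0 ctends_iff in simp)
    have "\<forall>n. nrm (x - r0) \<le> d + ep n + nrm (r n - r0)"
    proof
      fix n
      have "nrm (x - r0) \<le> nrm (x - r n) + nrm (r n - r0)" by (rule triangle_diff[OF x(1) rV r0(1)])
      then show "nrm (x - r0) \<le> d + ep n + nrm (r n - r0)" using r(2)[of n] by simp
    qed
    then show ?thesis using LIMSEQ_le_const[OF l, of "nrm (x - r0)"] by auto
  qed
  define u where "u = x - r0"
  have uV: "u \<in> V" unfolding u_def using indiff x(1) r0(1) by simp
  have une: "u \<noteq> 0" unfolding u_def using x(2) r0R by auto
  have "\<forall>s\<in>R. ip s u = 0"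
  proof
    fix s assume sR: "s \<in> R"
    have sV: "s \<in> V" using sR RV by blast
    define b where "b = ip u s"
    have key: "(nrm u)\<^sup>2 \<le> (nrm (u - t *\<^sub>C s))\<^sup>2" for t
    proof -
      have "r0 + t *\<^sub>C s \<in> R" using r0R sR Rsub csubspace_add csubspace_scale by blast
      then have "d \<le> nrm (x - (r0 + t *\<^sub>C s))" by (rule dle)
      then have "nrm u \<le> nrm (u - t *\<^sub>C s)" using dist0 unfolding u_def by (simp add: algebra_simps)
      then show ?thesis using nrm_nonneg[OF uV] by (simp add: power_mono)
    qed
    show "ip s u = 0"
    proof (rule ccontr)
      assume ne: "ip s u \<noteq> 0"
      then have bne: "b \<noteq> 0" unfolding b_def using ipsym[OF sV uV] by auto
      define q where "q = (cmod b)\<^sup>2"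
      have qpos: "q > 0" using bne q_def by simp
      define s0 where "s0 = 1 / ((nrm s)\<^sup>2 + 1)"
      have sq0: "(nrm s)\<^sup>2 + 1 > 0" by (simp add: add_nonneg_pos)
      have s0pos: "s0 > 0" unfolding s0_def using sq0 by simp
      have s0lt: "s0 * (nrm s)\<^sup>2 < 1" unfolding s0_def using sq0 by (simp add: field_simps)
      define t where "t = complex_of_real s0 * b"
      have nb: "b * cnj b = complex_of_real q" unfolding q_def using complex_norm_square[of b] by simp
      have "ip (u - t *\<^sub>C s) (u - t *\<^sub>C s) = ip u u - cnj t * b - t * cnj b + t * cnj t * ip s s"
        unfolding b_def by (rule expand[OF uV sV])
      also have "\<dots> = ip u u - complex_of_real (2 * s0 * q) + complex_of_real (s0 * s0 * q * (nrm s)\<^sup>2)"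
      proof -
        have e1: "cnj t * b = complex_of_real (s0 * q)" unfolding t_def using nb by (simp add: mult.commute mult.left_commute)
        have e2: "t * cnj b = complex_of_real (s0 * q)" unfolding t_def using nb by (simp add: mult.commute mult.left_commute)
        have e3: "t * cnj t * ip s s = complex_of_real (s0 * s0 * q * (nrm s)\<^sup>2)"
          unfolding t_def ip_self_nrm[OF sV] using nb by (simp add: mult.commute mult.left_commute)
        show ?thesis unfolding e1 e2 e3 by simp
      qed
      finally have "Re (ip (u - t *\<^sub>C s) (u - t *\<^sub>C s)) = (nrm u)\<^sup>2 - 2 * s0 * q + s0 * s0 * q * (nrm s)\<^sup>2"
        using nrm_sq[OF uV] by simp
      then have "(nrm (u - t *\<^sub>C s))\<^sup>2 = (nrm u)\<^sup>2 - 2 * s0 * q + s0 * s0 * q * (nrm s)\<^sup>2"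
        using nrm_sq[OF indiff[OF uV inscale[OF sV]]] by simp
      then have "0 \<le> - 2 * s0 * q + s0 * s0 * q * (nrm s)\<^sup>2" using key[of t] by simp
      then have "0 \<le> s0 * q * (s0 * (nrm s)\<^sup>2 - 2)" by (simp add: algebra_simps)
      moreover have "s0 * q > 0" using s0pos qpos by simp
      ultimately have "0 \<le> s0 * (nrm s)\<^sup>2 - 2" by (simp add: zero_le_mult_iff)
      then show False using s0lt by simp
    qed
  qed
  then have "u = 0" using orth[OF uV] by blast
  then show False using une by simp
qed

lemma riesz:
  assumes add: "\<And>x y. x \<in> V \<Longrightarrow> y \<in> V \<Longrightarrow> \<phi> (x + y) = \<phi> x + \<phi> y"
    and scl: "\<And>x c. x \<in> V \<Longrightarrow> \<phi> (c *\<^sub>C x) = c * \<phi> x"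
    and bnd: "\<And>x. x \<in> V \<Longrightarrow> cmod (\<phi> x) \<le> C * nrm x"
  shows "\<exists>y\<in>V. \<forall>x\<in>V. \<phi> x = ip x y"
proof -
  define K where "K = {x\<in>V. \<phi> x = 0}"
  have phi0: "\<phi> 0 = 0" using scl[OF in0, of 0] by simp
  have phidiff: "\<phi> (x - y) = \<phi> x - \<phi> y" if "x \<in> V" "y \<in> V" for x y
    using add[OF that(1) inminus[OF that(2)]] scl[OF that(2), of "-1"] by (simp add: scaleC_minus1)
  show ?thesis
  proof (cases "K = V")
    case True
    have "\<forall>x\<in>V. \<phi> x = ip x 0"
    proof
      fix x assume "x \<in> V"
      then have "x \<in> K" using True by simp
      then show "\<phi> x = ip x 0" using K_def zero_right by simp
    qed
    then show ?thesis using in0 by blast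
  next
    case False
    have Ksub: "csubspace K" unfolding csubspace_def K_def using in0 phi0 add scl inadd inscale by auto
    have Kclosed: "x \<in> K" if f: "\<forall>n. f n \<in> K" and x: "x \<in> V" and fx: "ctends ip f x" for f x
    proof -
      have fV: "\<And>n. f n \<in> V" using f K_def by auto
      have "\<forall>n. cmod (\<phi> x) \<le> C * nrm (f n - x)"
      proof
        fix n
        have "\<phi> x = - \<phi> (f n - x)" using phidiff[OF fV x] f K_def by auto
        then show "cmod (\<phi> x) \<le> C * nrm (f n - x)" using bnd[OF indiff[OF fV x]] by simp
      qed
      moreover have "(\<lambda>n. C * nrm (f n - x)) \<longlonglongrightarrow> C * 0"
        by (rule tendsto_mult) (use fx ctends_iff in auto)
      ultimately have "cmod (\<phi> x) \<le> C * 0" using LIMSEQ_le_const[of "\<lambda>n. C * nrm (f n - x)" "C * 0" "cmod (\<phi> x)"] by blast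
      then show ?thesis using x K_def by simp
    qed
    obtain u where u: "u \<in> V" "\<forall>r\<in>K. ip r u = 0" "u \<noteq> 0"
      using orth_complete[of K] Ksub Kclosed False K_def by blast
    have uu: "ip u u \<noteq> 0" using definite u by blast
    have phiu: "\<phi> u \<noteq> 0"
    proof
      assume "\<phi> u = 0"
      then have "u \<in> K" using u K_def by simp
      then show False using u uu by blast
    qed
    have uur: "cnj (ip u u) = ip u u" using self_eq[OF u(1)] by (metis complex_cnj_complex_of_real)
    define y where "y = (cnj (\<phi> u) / ip u u) *\<^sub>C u"
    have "\<forall>x\<in>V. \<phi> x = ip x y"
    proof
      fix x assume x: "x \<in> V"
      define w where "w = x - (\<phi> x / \<phi> u) *\<^sub>C u"
      have wV: "w \<in> V" unfolding w_def using indiff inscale x u by simp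
      have "\<phi> w = 0" unfolding w_def using phidiff[OF x inscale[OF u(1)]] scl[OF u(1)] phiu by simp
      then have "ip w u = 0" using u(2) K_def wV by simp
      then have "ip x u = (\<phi> x / \<phi> u) * ip u u"
        unfolding w_def using diff_left[OF x inscale[OF u(1)] u(1)] scale_left[OF u(1) u(1)] by simp
      then have "\<phi> x = \<phi> u * ip x u / ip u u" using phiu uu by (simp add: field_simps)
      moreover have "ip x y = \<phi> u / ip u u * ip x u"
        unfolding y_def using scale_right[OF x u(1)] uur by simp
      ultimately show "\<phi> x = ip x y" by simp
    qed
    moreover have "y \<in> V" unfolding y_def using inscale u by simp
    ultimately show ?thesis by blast
  qed
qed

end

lemma bound_nonneg: fixes a b :: "'a \<Rightarrow> real"
  assumes "\<And>x. x \<in> D \<Longrightarrow> a x \<le> C * b x" "\<And>x. x \<in> D \<Longrightarrow> b x \<ge> 0"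
  shows "\<exists>K\<ge>0. \<forall>x\<in>D. a x \<le> K * b x"
proof (intro exI[of _ "max C 0"] conjI ballI)
  fix x assume x: "x \<in> D"
  have "C * b x \<le> max C 0 * b x" using assms(2)[OF x] by (intro mult_right_mono) auto
  then show "a x \<le> max C 0 * b x" using assms(1)[OF x] by linarith
qed simp

lemma eps_scale: fixes a K :: real
  assumes "\<And>e. e > 0 \<Longrightarrow> a \<le> b + (K + 1) * e" "K \<ge> 0" shows "a \<le> b"
proof (rule field_le_epsilon)
  fix e :: real assume e: "e > 0"
  have "a \<le> b + (K + 1) * (e / (K + 1))" using assms(1)[of "e / (K + 1)"] e assms(2) by simp
  then show "a \<le> b + e" using assms(2) by simp
qed

context ips begin
lemma ip_ext: assumes "y1 \<in> V" "y2 \<in> V" "\<And>f. f \<in> V \<Longrightarrow> ip f y1 = ip f y2" shows "y1 = y2"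
proof -
  have d: "y1 - y2 \<in> V" using indiff assms by simp
  have "ip (y1 - y2) (y1 - y2) = ip (y1 - y2) y1 - ip (y1 - y2) y2" using diff_right[OF assms(1,2) d] .
  also have "\<dots> = 0" using assms(3)[OF d] by simp
  finally show ?thesis using definite[OF d] by simp
qed
end

locale setting =
  fixes ipX :: "'x::cvec \<Rightarrow> 'x \<Rightarrow> complex"
    and domA :: "'x set" and A :: "'x \<Rightarrow> 'x"
    and S :: "'x \<times> 'x \<Rightarrow> 'x \<times> 'x"
    and H Hmp Hpm :: "'h::cvec set"
    and ipH ipMP ipPM pair :: "'h \<Rightarrow> 'h \<Rightarrow> complex"
    and G :: "'x \<Rightarrow> 'h" and W :: "'h \<Rightarrow> 'h"
    and domZ :: "'h set" and Z :: "'h \<Rightarrow> 'h"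
    and V :: "'h \<Rightarrow> 'h"
  assumes X: "hilbert_on (UNIV :: 'x set) ipX"
    and A: "closed_dd_symmetric ipX domA A"
    and S: "bounded_unif_pos_sa ipX S"
    and duality: "mixed_duality H ipH Hmp ipMP Hpm ipPM"
    and pairing: "is_duality_pairing H ipH Hmp ipMP Hpm ipPM pair"
    and red: "reduction_tuple ipX domA A H ipH Hmp ipMP Hpm ipPM pair G W"
    and Z1: "domZ \<subseteq> Hmp" and Z2: "linear_on domZ Hpm Z"
    and Vh: "lin_homeo H ipH Hmp ipMP V"
begin

lemma md: "hilbert_on H ipH" "hilbert_on Hmp ipMP" "hilbert_on Hpm ipPM"
  "dense_in ipMP Hmp (H \<inter> Hmp)" "dense_in ipPM Hpm (H \<inter> Hpm)"
  "dual_norm H ipH Hpm ipPM Hmp ipMP" "dual_norm H ipH Hmp ipMP Hpm ipPM"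
  using duality unfolding mixed_duality_def by blast+

sublocale HH: hs H ipH using md(1) by (rule hilbert_on_hs)
sublocale MP: hs Hmp ipMP using md(2) by (rule hilbert_on_hs)
sublocale PM: hs Hpm ipPM using md(3) by (rule hilbert_on_hs)
sublocale XX: hs "UNIV :: 'x set" ipX using X by (rule hilbert_on_hs)

lemma pair_all1: "\<forall>x\<in>Hmp. \<forall>y\<in>Hmp. \<forall>g\<in>Hpm. \<forall>c. pair (x + y) g = pair x g + pair y g \<and> pair (c *\<^sub>C x) g = c * pair x g"
  using pairing unfolding is_duality_pairing_def by (elim conjE)
lemma pair_all2: "\<forall>h\<in>Hmp. \<forall>x\<in>Hpm. \<forall>y\<in>Hpm. \<forall>c. pair h (x + y) = pair h x + pair h y \<and> pair h (c *\<^sub>C x) = cnj c * pair h x"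
  using pairing unfolding is_duality_pairing_def by (elim conjE)
lemma pair_all3: "\<exists>C. \<forall>h\<in>Hmp. \<forall>g\<in>Hpm. cmod (pair h g) \<le> C * cnorm ipMP h * cnorm ipPM g"
  using pairing unfolding is_duality_pairing_def by (elim conjE)
lemma pair_all4: "\<forall>h\<in>H \<inter> Hmp. \<forall>g\<in>H \<inter> Hpm. pair h g = ipH h g"
  using pairing unfolding is_duality_pairing_def by (elim conjE)

lemma pair_add1: "x \<in> Hmp \<Longrightarrow> y \<in> Hmp \<Longrightarrow> g \<in> Hpm \<Longrightarrow> pair (x + y) g = pair x g + pair y g"
  using pair_all1 by blast
lemma pair_scale1: "x \<in> Hmp \<Longrightarrow> g \<in> Hpm \<Longrightarrow> pair (c *\<^sub>C x) g = c * pair x g"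
  using pair_all1 by blast
lemma pair_add2: "h \<in> Hmp \<Longrightarrow> x \<in> Hpm \<Longrightarrow> y \<in> Hpm \<Longrightarrow> pair h (x + y) = pair h x + pair h y"
  using pair_all2 by blast
lemma pair_scale2: "h \<in> Hmp \<Longrightarrow> x \<in> Hpm \<Longrightarrow> pair h (c *\<^sub>C x) = cnj c * pair h x"
  using pair_all2 by blast
lemma pair_H: "h \<in> H \<Longrightarrow> h \<in> Hmp \<Longrightarrow> g \<in> H \<Longrightarrow> g \<in> Hpm \<Longrightarrow> pair h g = ipH h g"
  using pair_all4 by blast

lemma pair_minus1: "x \<in> Hmp \<Longrightarrow> g \<in> Hpm \<Longrightarrow> pair (- x) g = - pair x g"
  using pair_scale1[of x g "-1"] by (simp add: scaleC_minus1)
lemma pair_diff1: "x \<in> Hmp \<Longrightarrow> y \<in> Hmp \<Longrightarrow> g \<in> Hpm \<Longrightarrow> pair (x - y) g = pair x g - pair y g"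
  using pair_add1[of x "-y" g] pair_minus1[of y g] MP.inminus[of y] by simp
lemma pair_minus2: "h \<in> Hmp \<Longrightarrow> x \<in> Hpm \<Longrightarrow> pair h (- x) = - pair h x"
  using pair_scale2[of h x "-1"] by (simp add: scaleC_minus1)
lemma pair_diff2: "h \<in> Hmp \<Longrightarrow> x \<in> Hpm \<Longrightarrow> y \<in> Hpm \<Longrightarrow> pair h (x - y) = pair h x - pair h y"
  using pair_add2[of h x "-y"] pair_minus2[of h y] PM.inminus[of y] by simp
lemma pair_01: "g \<in> Hpm \<Longrightarrow> pair 0 g = 0"
  using pair_scale1[OF MP.in0, of g 0] by simp
lemma pair_02: "h \<in> Hmp \<Longrightarrow> pair h 0 = 0"
  using pair_scale2[OF _ PM.in0, of h 0] by simp

definition Cp where "Cp = (SOME K. K \<ge> 0 \<and> (\<forall>p\<in>Hmp \<times> Hpm. cmod (pair (fst p) (snd p)) \<le> K * (MP.nrm (fst p) * PM.nrm (snd p))))"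

lemma Cp: "Cp \<ge> 0 \<and> (\<forall>p\<in>Hmp \<times> Hpm. cmod (pair (fst p) (snd p)) \<le> Cp * (MP.nrm (fst p) * PM.nrm (snd p)))"
proof -
  obtain C where C: "\<forall>h\<in>Hmp. \<forall>g\<in>Hpm. cmod (pair h g) \<le> C * cnorm ipMP h * cnorm ipPM g"
    using pair_all3 by blast
  have "\<exists>K\<ge>0. \<forall>p\<in>Hmp \<times> Hpm. cmod (pair (fst p) (snd p)) \<le> K * (MP.nrm (fst p) * PM.nrm (snd p))"
  proof (rule bound_nonneg)
    fix p assume "p \<in> Hmp \<times> Hpm"
    then show "cmod (pair (fst p) (snd p)) \<le> C * (MP.nrm (fst p) * PM.nrm (snd p))"
      "0 \<le> MP.nrm (fst p) * PM.nrm (snd p)"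
      using C MP.nrm_nonneg PM.nrm_nonneg by (auto simp: MP.nrm_def PM.nrm_def mult.assoc)
  qed
  then show ?thesis unfolding Cp_def by (rule someI_ex)
qed

lemma Cp_nonneg: "Cp \<ge> 0" using Cp by blast
lemma pair_bound: "h \<in> Hmp \<Longrightarrow> g \<in> Hpm \<Longrightarrow> cmod (pair h g) \<le> Cp * MP.nrm h * PM.nrm g"
  using Cp by (auto simp: mult.assoc)

lemma pair_cont: assumes a: "\<And>n. a n \<in> Hmp" "x \<in> Hmp" "ctends ipMP a x"
  and b: "\<And>n. b n \<in> Hpm" "y \<in> Hpm" "ctends ipPM b y"
  shows "(\<lambda>n. pair (a n) (b n)) \<longlonglongrightarrow> pair x y"
proof (rule cplx_squeeze)
  show "(\<lambda>n. Cp * MP.nrm (a n - x) * PM.nrm (b n) + Cp * MP.nrm x * PM.nrm (b n - y)) \<longlonglongrightarrow> 0"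
  proof -
    have "(\<lambda>n. Cp * MP.nrm (a n - x) * PM.nrm (b n)) \<longlonglongrightarrow> Cp * 0 * PM.nrm y"
      by (intro tendsto_mult tendsto_const) (use a b MP.ctends_iff PM.ctends_nrm in auto)
    moreover have "(\<lambda>n. Cp * MP.nrm x * PM.nrm (b n - y)) \<longlonglongrightarrow> Cp * MP.nrm x * 0"
      by (intro tendsto_mult tendsto_const) (use b PM.ctends_iff in auto)
    ultimately show ?thesis using tendsto_add by fastforce
  qed
  fix n
  have "pair (a n) (b n) - pair x y = pair (a n - x) (b n) + pair x (b n - y)"
    using pair_diff1[OF a(1)[of n] a(2) b(1)[of n]] pair_diff2[OF a(2) b(1)[of n] b(2)] by simp
  then have "cmod (pair (a n) (b n) - pair x y) \<le> cmod (pair (a n - x) (b n)) + cmod (pair x (b n - y))"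
    by (metis norm_triangle_ineq)
  also have "\<dots> \<le> Cp * MP.nrm (a n - x) * PM.nrm (b n) + Cp * MP.nrm x * PM.nrm (b n - y)"
    by (rule add_mono[OF pair_bound[OF MP.indiff[OF a(1)[of n] a(2)] b(1)[of n]] pair_bound[OF a(2) PM.indiff[OF b(1)[of n] b(2)]]])
  finally show "cmod (pair (a n) (b n) - pair x y) \<le> Cp * MP.nrm (a n - x) * PM.nrm (b n) + Cp * MP.nrm x * PM.nrm (b n - y)" .
qed

lemma dense_MP: "h \<in> Hmp \<Longrightarrow> e > 0 \<Longrightarrow> \<exists>d\<in>H \<inter> Hmp. MP.nrm (h - d) < e"
  using md(4) unfolding dense_in_def MP.nrm_def by blast
lemma dense_PM: "g \<in> Hpm \<Longrightarrow> e > 0 \<Longrightarrow> \<exists>d\<in>H \<inter> Hpm. PM.nrm (g - d) < e"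
  using md(5) unfolding dense_in_def PM.nrm_def by blast

lemma dn_MP: "h \<in> H \<Longrightarrow> h \<in> Hmp \<Longrightarrow> c \<ge> 0 \<Longrightarrow>
   (\<And>g. g \<in> H \<Longrightarrow> g \<in> Hpm \<Longrightarrow> g \<noteq> 0 \<Longrightarrow> cmod (ipH g h) / PM.nrm g \<le> c) \<Longrightarrow> MP.nrm h \<le> c"
  using md(7) unfolding dual_norm_def MP.nrm_def PM.nrm_def by blast
lemma dn_PM: "g \<in> H \<Longrightarrow> g \<in> Hpm \<Longrightarrow> c \<ge> 0 \<Longrightarrow>
   (\<And>h. h \<in> H \<Longrightarrow> h \<in> Hmp \<Longrightarrow> h \<noteq> 0 \<Longrightarrow> cmod (ipH h g) / MP.nrm h \<le> c) \<Longrightarrow> PM.nrm g \<le> c"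
  using md(6) unfolding dual_norm_def MP.nrm_def PM.nrm_def by blast

lemma ND1: assumes h: "h \<in> Hmp" and z: "\<And>g. g \<in> Hpm \<Longrightarrow> pair h g = 0" shows "h = 0"
proof -
  have "MP.nrm h \<le> 0 + (Cp + 1) * e" if e: "e > 0" for e
  proof -
    obtain d where d: "d \<in> H" "d \<in> Hmp" "MP.nrm (h - d) < e" using dense_MP[OF h e] by blast
    have dh: "MP.nrm (d - h) = MP.nrm (h - d)" using MP.nrm_commute d(2) h by blast
    have "MP.nrm d \<le> Cp * MP.nrm (d - h)"
    proof (rule dn_MP[OF d(1,2)])
      show "0 \<le> Cp * MP.nrm (d - h)" using Cp_nonneg MP.nrm_nonneg[OF MP.indiff[OF d(2) h]] by simp
      fix g assume g: "g \<in> H" "g \<in> Hpm" "g \<noteq> 0"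
      have gpos: "PM.nrm g > 0" using PM.nrm_eq_0[OF g(2)] PM.nrm_nonneg[OF g(2)] g(3) by simp
      have "cmod (ipH g d) = cmod (ipH d g)" using HH.ipsym[OF d(1) g(1)] by simp
      also have "ipH d g = pair (d - h) g" using pair_H[OF d(1,2) g(1,2)] pair_diff1[OF d(2) h g(2)] z[OF g(2)] by simp
      also have "cmod \<dots> \<le> Cp * MP.nrm (d - h) * PM.nrm g" by (rule pair_bound[OF MP.indiff[OF d(2) h] g(2)])
      finally show "cmod (ipH g d) / PM.nrm g \<le> Cp * MP.nrm (d - h)" using gpos by (simp add: field_simps)
    qed
    moreover have "MP.nrm h \<le> MP.nrm d + MP.nrm (h - d)"
      using MP.triangle[OF d(2) MP.indiff[OF h d(2)]] by simp
    ultimately have "MP.nrm h \<le> (Cp + 1) * MP.nrm (h - d)" using dh by (simp add: algebra_simps)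
    also have "\<dots> \<le> (Cp + 1) * e" using d(3) Cp_nonneg by (simp add: mult_left_mono)
    finally show ?thesis by simp
  qed
  then have "MP.nrm h \<le> 0" by (rule eps_scale[OF _ Cp_nonneg])
  then show ?thesis using MP.nrm_eq_0[OF h] MP.nrm_nonneg[OF h] by simp
qed


lemma ND2: assumes g: "g \<in> Hpm" and z: "\<And>h. h \<in> Hmp \<Longrightarrow> pair h g = 0" shows "g = 0"
proof -
  have "PM.nrm g \<le> 0 + (Cp + 1) * e" if e: "e > 0" for e
  proof -
    obtain d where d: "d \<in> H" "d \<in> Hpm" "PM.nrm (g - d) < e" using dense_PM[OF g e] by blast
    have dg: "PM.nrm (d - g) = PM.nrm (g - d)" using PM.nrm_commute d(2) g by blast
    have "PM.nrm d \<le> Cp * PM.nrm (d - g)"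
    proof (rule dn_PM[OF d(1,2)])
      show "0 \<le> Cp * PM.nrm (d - g)" using Cp_nonneg PM.nrm_nonneg[OF PM.indiff[OF d(2) g]] by simp
      fix h assume h: "h \<in> H" "h \<in> Hmp" "h \<noteq> 0"
      have hpos: "MP.nrm h > 0" using MP.nrm_eq_0[OF h(2)] MP.nrm_nonneg[OF h(2)] h(3) by simp
      have "ipH h d = pair h (d - g)" using pair_H[OF h(1,2) d(1,2)] pair_diff2[OF h(2) d(2) g] z[OF h(2)] by simp
      then have "cmod (ipH h d) \<le> Cp * MP.nrm h * PM.nrm (d - g)"
        using pair_bound[OF h(2) PM.indiff[OF d(2) g]] by simp
      then show "cmod (ipH h d) / MP.nrm h \<le> Cp * PM.nrm (d - g)" using hpos by (simp add: field_simps)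
    qed
    moreover have "PM.nrm g \<le> PM.nrm d + PM.nrm (g - d)"
      using PM.triangle[OF d(2) PM.indiff[OF g d(2)]] by simp
    ultimately have "PM.nrm g \<le> (Cp + 1) * PM.nrm (g - d)" using dg by (simp add: algebra_simps)
    also have "\<dots> \<le> (Cp + 1) * e" using d(3) Cp_nonneg by (simp add: mult_left_mono)
    finally show ?thesis by simp
  qed
  then have "PM.nrm g \<le> 0" by (rule eps_scale[OF _ Cp_nonneg])
  then show ?thesis using PM.nrm_eq_0[OF g] PM.nrm_nonneg[OF g] by simp
qed

lemma Vparts: "linear_on H Hmp V" "bij_betw V H Hmp" "bounded_on H ipH ipMP V"
   "bounded_on Hmp ipMP ipH (the_inv_into H V)"
  using Vh unfolding lin_homeo_def by blast+

definition Vi where "Vi = the_inv_into H V"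

lemma V_in: "f \<in> H \<Longrightarrow> V f \<in> Hmp" using Vparts(1) linear_onD(2) by blast
lemma V_add: "f \<in> H \<Longrightarrow> g \<in> H \<Longrightarrow> V (f + g) = V f + V g" using Vparts(1) linear_onD(3) by blast
lemma V_scale: "f \<in> H \<Longrightarrow> V (c *\<^sub>C f) = c *\<^sub>C V f" using Vparts(1) linear_onD(4) by blast
lemma V_diff: "f \<in> H \<Longrightarrow> g \<in> H \<Longrightarrow> V (f - g) = V f - V g" using Vparts(1) linear_on_diff by blast
lemma V_0: "V 0 = 0" using Vparts(1) linear_on_0 by blast
lemma V_inj: "f \<in> H \<Longrightarrow> g \<in> H \<Longrightarrow> V f = V g \<Longrightarrow> f = g"
  using Vparts(2) unfolding bij_betw_def inj_on_def by blast
lemma Vi_in: "h \<in> Hmp \<Longrightarrow> Vi h \<in> H"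
  unfolding Vi_def using Vparts(2) by (metis bij_betw_def the_inv_into_into subset_refl)
lemma V_Vi: "h \<in> Hmp \<Longrightarrow> V (Vi h) = h"
  unfolding Vi_def using Vparts(2) by (metis bij_betw_def f_the_inv_into_f)
lemma Vi_V: "f \<in> H \<Longrightarrow> Vi (V f) = f"
  unfolding Vi_def using Vparts(2) by (metis bij_betw_def the_inv_into_f_f)

definition Kv where "Kv = (SOME K. K \<ge> 0 \<and> (\<forall>f\<in>H. MP.nrm (V f) \<le> K * HH.nrm f))"
lemma Kv: "Kv \<ge> 0" "f \<in> H \<Longrightarrow> MP.nrm (V f) \<le> Kv * HH.nrm f"
proof -
  obtain C where C: "\<forall>x\<in>H. cnorm ipMP (V x) \<le> C * cnorm ipH x" using Vparts(3) unfolding bounded_on_def by blast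
  have "\<exists>K\<ge>0. \<forall>f\<in>H. MP.nrm (V f) \<le> K * HH.nrm f"
    by (rule bound_nonneg) (use C HH.nrm_nonneg in \<open>auto simp: MP.nrm_def HH.nrm_def\<close>)
  then have "Kv \<ge> 0 \<and> (\<forall>f\<in>H. MP.nrm (V f) \<le> Kv * HH.nrm f)" unfolding Kv_def by (rule someI_ex)
  then show "Kv \<ge> 0" "f \<in> H \<Longrightarrow> MP.nrm (V f) \<le> Kv * HH.nrm f" by auto
qed

definition Ki where "Ki = (SOME K. K \<ge> 0 \<and> (\<forall>h\<in>Hmp. HH.nrm (Vi h) \<le> K * MP.nrm h))"
lemma Ki: "Ki \<ge> 0" "h \<in> Hmp \<Longrightarrow> HH.nrm (Vi h) \<le> Ki * MP.nrm h"
proof -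
  obtain C where C: "\<forall>x\<in>Hmp. cnorm ipH (Vi x) \<le> C * cnorm ipMP x" using Vparts(4) unfolding bounded_on_def Vi_def by blast
  have "\<exists>K\<ge>0. \<forall>h\<in>Hmp. HH.nrm (Vi h) \<le> K * MP.nrm h"
    by (rule bound_nonneg) (use C MP.nrm_nonneg in \<open>auto simp: MP.nrm_def HH.nrm_def\<close>)
  then have "Ki \<ge> 0 \<and> (\<forall>h\<in>Hmp. HH.nrm (Vi h) \<le> Ki * MP.nrm h)" unfolding Ki_def by (rule someI_ex)
  then show "Ki \<ge> 0" "h \<in> Hmp \<Longrightarrow> HH.nrm (Vi h) \<le> Ki * MP.nrm h" by auto
qed

definition VS where "VS = Vsharp H ipH pair V"

lemma VS_char: assumes g: "g \<in> Hpm" shows "VS g \<in> H" "\<And>f. f \<in> H \<Longrightarrow> pair (V f) g = ipH f (VS g)"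
proof -
  have "\<exists>y\<in>H. \<forall>x\<in>H. pair (V x) g = ipH x y"
  proof (rule HH.riesz)
    show "pair (V (x + y)) g = pair (V x) g + pair (V y) g" if "x \<in> H" "y \<in> H" for x y
      using that V_add V_in pair_add1 g by simp
    show "pair (V (c *\<^sub>C x)) g = c * pair (V x) g" if "x \<in> H" for x c
      using that V_scale V_in pair_scale1 g by simp
    show "cmod (pair (V x) g) \<le> (Cp * Kv * PM.nrm g) * HH.nrm x" if x: "x \<in> H" for x
    proof -
      have "cmod (pair (V x) g) \<le> Cp * MP.nrm (V x) * PM.nrm g" by (rule pair_bound[OF V_in[OF x] g])
      also have "\<dots> \<le> Cp * (Kv * HH.nrm x) * PM.nrm g"
        using Kv(2)[OF x] Cp_nonneg PM.nrm_nonneg[OF g] by (simp add: mult_left_mono mult_right_mono)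
      finally show ?thesis by (simp add: algebra_simps)
    qed
  qed
  then obtain y where y: "y \<in> H" "\<forall>x\<in>H. pair (V x) g = ipH x y" by blast
  have "VS g = y" unfolding VS_def Vsharp_def
  proof (rule the_equality)
    show "y \<in> H \<and> (\<forall>f\<in>H. pair (V f) g = ipH f y)" using y by blast
    fix h assume h: "h \<in> H \<and> (\<forall>f\<in>H. pair (V f) g = ipH f h)"
    show "h = y" by (rule HH.ip_ext) (use h y in auto)
  qed
  then show "VS g \<in> H" "\<And>f. f \<in> H \<Longrightarrow> pair (V f) g = ipH f (VS g)" using y by auto
qed

lemma VS_in: "g \<in> Hpm \<Longrightarrow> VS g \<in> H" using VS_char by blast
lemma VS_eq: "g \<in> Hpm \<Longrightarrow> f \<in> H \<Longrightarrow> pair (V f) g = ipH f (VS g)" using VS_char by blast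
lemma VS_eq2: "g \<in> Hpm \<Longrightarrow> h \<in> Hmp \<Longrightarrow> pair h g = ipH (Vi h) (VS g)"
  using VS_eq[of g "Vi h"] V_Vi Vi_in by simp

lemma VS_add: assumes "g1 \<in> Hpm" "g2 \<in> Hpm" shows "VS (g1 + g2) = VS g1 + VS g2"
proof (rule HH.ip_ext)
  show "VS (g1 + g2) \<in> H" using VS_in PM.inadd assms by simp
  show "VS g1 + VS g2 \<in> H" using VS_in HH.inadd assms by simp
  fix f assume f: "f \<in> H"
  show "ipH f (VS (g1 + g2)) = ipH f (VS g1 + VS g2)"
    using VS_eq[OF PM.inadd[OF assms] f] pair_add2[OF V_in[OF f] assms] VS_eq[OF assms(1) f] VS_eq[OF assms(2) f]
      HH.add_right[OF VS_in[OF assms(1)] VS_in[OF assms(2)] f] by simp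
qed

lemma VS_scale: assumes "g \<in> Hpm" shows "VS (c *\<^sub>C g) = c *\<^sub>C VS g"
proof (rule HH.ip_ext)
  show "VS (c *\<^sub>C g) \<in> H" using VS_in PM.inscale assms by simp
  show "c *\<^sub>C VS g \<in> H" using VS_in HH.inscale assms by simp
  fix f assume f: "f \<in> H"
  show "ipH f (VS (c *\<^sub>C g)) = ipH f (c *\<^sub>C VS g)"
    using VS_eq[OF PM.inscale[OF assms] f] pair_scale2[OF V_in[OF f] assms] VS_eq[OF assms f]
      HH.scale_right[OF f VS_in[OF assms]] by simp
qed

lemma VS_diff: assumes "g1 \<in> Hpm" "g2 \<in> Hpm" shows "VS (g1 - g2) = VS g1 - VS g2"
  using VS_add[OF assms(1) PM.inminus[OF assms(2)]] VS_scale[OF assms(2), of "-1"]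
  by (simp add: scaleC_minus1)

lemma VS_0: "VS 0 = 0" using VS_scale[OF PM.in0, of 0] by simp

lemma VS_bound: assumes g: "g \<in> Hpm" shows "HH.nrm (VS g) \<le> (Cp * Kv) * PM.nrm g"
proof (cases "HH.nrm (VS g) = 0")
  case True then show ?thesis using Cp_nonneg Kv(1) PM.nrm_nonneg[OF g] by simp
next
  case False
  have y: "VS g \<in> H" using VS_in[OF g] .
  then have pos: "HH.nrm (VS g) > 0" using False HH.nrm_nonneg by (simp add: less_le)
  have "(HH.nrm (VS g))\<^sup>2 = Re (pair (V (VS g)) g)" using HH.nrm_sq[OF y] VS_eq[OF g y] by simp
  also have "\<dots> \<le> cmod (pair (V (VS g)) g)" by (rule complex_Re_le_cmod)
  also have "\<dots> \<le> Cp * MP.nrm (V (VS g)) * PM.nrm g" by (rule pair_bound[OF V_in[OF y] g])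
  also have "\<dots> \<le> Cp * (Kv * HH.nrm (VS g)) * PM.nrm g"
    using Kv(2)[OF y] Cp_nonneg PM.nrm_nonneg[OF g] by (simp add: mult_left_mono mult_right_mono)
  finally have "HH.nrm (VS g) * HH.nrm (VS g) \<le> (Cp * Kv * PM.nrm g) * HH.nrm (VS g)"
    by (simp add: power2_eq_square algebra_simps)
  then show ?thesis using pos by simp
qed

lemma VS_inj0: assumes g: "g \<in> Hpm" "VS g = 0" shows "g = 0"
proof (rule ND2[OF g(1)])
  fix h assume "h \<in> Hmp"
  then show "pair h g = 0" using VS_eq2[OF g(1)] g(2) Vi_in by simp
qed

lemma VS_inj: "g1 \<in> Hpm \<Longrightarrow> g2 \<in> Hpm \<Longrightarrow> VS g1 = VS g2 \<Longrightarrow> g1 = g2"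
  using VS_inj0[of "g1 - g2"] VS_diff PM.indiff by simp

lemma VS_lower: assumes g: "g \<in> Hpm" shows "PM.nrm g \<le> Ki * HH.nrm (VS g)"
proof -
  have y: "VS g \<in> H" using VS_in[OF g] .
  have "PM.nrm g \<le> Ki * HH.nrm (VS g) + (Cp + 1) * e" if e: "e > 0" for e
  proof -
    obtain d where d: "d \<in> H" "d \<in> Hpm" "PM.nrm (g - d) < e" using dense_PM[OF g e] by blast
    have dg: "PM.nrm (d - g) = PM.nrm (g - d)" using PM.nrm_commute d(2) g by blast
    have "PM.nrm d \<le> Ki * HH.nrm (VS g) + Cp * PM.nrm (d - g)"
    proof (rule dn_PM[OF d(1,2)])
      show "0 \<le> Ki * HH.nrm (VS g) + Cp * PM.nrm (d - g)"
        using Cp_nonneg Ki(1) HH.nrm_nonneg[OF y] PM.nrm_nonneg[OF PM.indiff[OF d(2) g]] by simp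
      fix h assume h: "h \<in> H" "h \<in> Hmp" "h \<noteq> 0"
      have hpos: "MP.nrm h > 0" using MP.nrm_eq_0[OF h(2)] MP.nrm_nonneg[OF h(2)] h(3) by simp
      have "ipH h d = pair h g + pair h (d - g)" using pair_H[OF h(1,2) d(1,2)] pair_diff2[OF h(2) d(2) g] by simp
      then have "cmod (ipH h d) \<le> cmod (pair h g) + cmod (pair h (d - g))" by (simp add: norm_triangle_ineq)
      also have "cmod (pair h g) \<le> Ki * MP.nrm h * HH.nrm (VS g)"
      proof -
        have "cmod (pair h g) = cmod (ipH (Vi h) (VS g))" using VS_eq2[OF g h(2)] by simp
        also have "\<dots> \<le> HH.nrm (Vi h) * HH.nrm (VS g)" by (rule HH.CS[OF Vi_in[OF h(2)] y])
        also have "\<dots> \<le> (Ki * MP.nrm h) * HH.nrm (VS g)"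
          using Ki(2)[OF h(2)] HH.nrm_nonneg[OF y] by (simp add: mult_right_mono)
        finally show ?thesis by simp
      qed
      also have "cmod (pair h (d - g)) \<le> Cp * MP.nrm h * PM.nrm (d - g)"
        by (rule pair_bound[OF h(2) PM.indiff[OF d(2) g]])
      finally have "cmod (ipH h d) \<le> MP.nrm h * (Ki * HH.nrm (VS g) + Cp * PM.nrm (d - g))"
        by (simp add: algebra_simps)
      then show "cmod (ipH h d) / MP.nrm h \<le> Ki * HH.nrm (VS g) + Cp * PM.nrm (d - g)"
        using hpos by (simp add: field_simps)
    qed
    moreover have "PM.nrm g \<le> PM.nrm d + PM.nrm (g - d)"
      using PM.triangle[OF d(2) PM.indiff[OF g d(2)]] by simp
    ultimately have "PM.nrm g \<le> Ki * HH.nrm (VS g) + (Cp + 1) * PM.nrm (g - d)" using dg by (simp add: algebra_simps)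
    also have "\<dots> \<le> Ki * HH.nrm (VS g) + (Cp + 1) * e" using d(3) Cp_nonneg by (simp add: mult_left_mono)
    finally show ?thesis .
  qed
  then show ?thesis by (rule eps_scale[OF _ Cp_nonneg])
qed

lemma VS_surj: assumes y: "y \<in> H" shows "\<exists>g\<in>Hpm. VS g = y"
proof -
  define R where "R = VS ` Hpm"
  have RH: "R \<subseteq> H" unfolding R_def using VS_in by blast
  have Rsub: "csubspace R" unfolding csubspace_def R_def
  proof (intro conjI ballI allI)
    show "0 \<in> VS ` Hpm" using VS_0 PM.in0 by force
    fix x y assume "x \<in> VS ` Hpm" "y \<in> VS ` Hpm"
    then obtain a b where "a \<in> Hpm" "b \<in> Hpm" "x = VS a" "y = VS b" by blast
    then show "x + y \<in> VS ` Hpm" using VS_add PM.inadd by (metis image_eqI)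
  next
    fix c x assume "x \<in> VS ` Hpm"
    then obtain a where "a \<in> Hpm" "x = VS a" by blast
    then show "c *\<^sub>C x \<in> VS ` Hpm" using VS_scale PM.inscale by (metis image_eqI)
  qed
  have Rclosed: "x \<in> R" if f: "\<forall>n. f n \<in> R" and x: "x \<in> H" and fx: "ctends ipH f x" for f x
  proof -
    have "\<forall>n. \<exists>g\<in>Hpm. f n = VS g" using f R_def by blast
    then obtain gs where gs: "\<And>n. gs n \<in> Hpm" "\<And>n. f n = VS (gs n)" by metis
    have fH: "\<And>n. f n \<in> H" using gs VS_in by simp
    have cf: "ccauchy ipH f" by (rule HH.ctends_cauchy[OF fH x fx])
    have cg: "ccauchy ipPM gs" unfolding PM.ccauchy_iff
    proof (intro allI impI)
      fix e :: real assume e: "e > 0"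
      then have e': "e / (Ki + 1) > 0" using Ki(1) by simp
      obtain N where N: "\<forall>m\<ge>N. \<forall>n\<ge>N. HH.nrm (f m - f n) < e / (Ki + 1)"
        using cf e' unfolding HH.ccauchy_iff by blast
      show "\<exists>N. \<forall>m\<ge>N. \<forall>n\<ge>N. PM.nrm (gs m - gs n) < e"
      proof (intro exI allI impI)
        fix m n assume mn: "m \<ge> N" "n \<ge> N"
        have "PM.nrm (gs m - gs n) \<le> Ki * HH.nrm (VS (gs m - gs n))" by (rule VS_lower[OF PM.indiff[OF gs(1) gs(1)]])
        also have "VS (gs m - gs n) = f m - f n" using VS_diff gs by simp
        also have "Ki * HH.nrm (f m - f n) \<le> (Ki + 1) * HH.nrm (f m - f n)"
          using HH.nrm_nonneg[OF HH.indiff[OF fH fH]] by (simp add: algebra_simps)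
        also have "\<dots> < (Ki + 1) * (e / (Ki + 1))" using N mn Ki(1) by (intro mult_strict_left_mono) auto
        finally show "PM.nrm (gs m - gs n) < e" using Ki(1) by simp
      qed
    qed
    obtain g where g: "g \<in> Hpm" "ctends ipPM gs g" using PM.complete[OF _ cg] gs(1) by blast
    have "ctends ipH f (VS g)"
    proof (rule HH.ctends_bound[OF fH VS_in[OF g(1)]])
      fix n
      show "HH.nrm (f n - VS g) \<le> (Cp * Kv) * PM.nrm (gs n - g)"
        using VS_bound[OF PM.indiff[OF gs(1) g(1)]] VS_diff[OF gs(1) g(1)] gs(2) by simp
      show "(\<lambda>n. (Cp * Kv) * PM.nrm (gs n - g)) \<longlonglongrightarrow> 0"
        using tendsto_mult_right_zero g(2) PM.ctends_iff by blast
    qed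
    then have "x = VS g" using HH.ctends_unique[OF fH x VS_in[OF g(1)] fx] by simp
    then show ?thesis using R_def g(1) by blast
  qed
  have orth: "u = 0" if u: "u \<in> H" "\<forall>r\<in>R. ipH r u = 0" for u
  proof -
    have "V u = 0"
    proof (rule ND1[OF V_in[OF u(1)]])
      fix g assume g: "g \<in> Hpm"
      have "ipH (VS g) u = 0" using u(2) R_def g by blast
      then have "ipH u (VS g) = 0" using HH.ipsym[OF VS_in[OF g] u(1)] by simp
      then show "pair (V u) g = 0" using VS_eq[OF g u(1)] by simp
    qed
    then show "u = 0" using V_inj[OF u(1) HH.in0] V_0 by simp
  qed
  have "R = H" by (rule HH.orth_complete[OF RH Rsub Rclosed orth]) auto
  then have "y \<in> VS ` Hpm" using y R_def by simp
  then obtain g where "g \<in> Hpm" "y = VS g" by (rule imageE)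
  then show ?thesis by blast
qed

end

context ips begin

lemma triangle_sub: assumes x: "x \<in> V" and y: "y \<in> V" shows "nrm (x - y) \<le> nrm x + nrm y"
proof -
  have "nrm (x + - y) \<le> nrm x + nrm (- y)" by (rule triangle[OF x inminus[OF y]])
  then show ?thesis using nrm_minus[OF y] by (simp only: diff_conv_add_uminus)
qed

lemma expand2: assumes x: "x \<in> V" and y: "y \<in> V" and w: "w \<in> V"
  shows "ip (x + c *\<^sub>C y) (w + d *\<^sub>C y) = ip x w + cnj d * ip x y + c * ip y w + c * cnj d * ip y y"
proof -
  have cy: "c *\<^sub>C y \<in> V" and dy: "d *\<^sub>C y \<in> V" using inscale x y by auto
  have "ip (x + c *\<^sub>C y) (w + d *\<^sub>C y) = ip x (w + d *\<^sub>C y) + ip (c *\<^sub>C y) (w + d *\<^sub>C y)"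
    by (rule add_left[OF x cy inadd[OF w dy]])
  also have "ip x (w + d *\<^sub>C y) = ip x w + cnj d * ip x y"
    using add_right[OF w dy x] scale_right[OF x y] by simp
  also have "ip (c *\<^sub>C y) (w + d *\<^sub>C y) = c * (ip y w + cnj d * ip y y)"
    using scale_left[OF y inadd[OF w dy]] add_right[OF w dy y] scale_right[OF y y] by simp
  finally show ?thesis by (simp add: algebra_simps)
qed

lemma cnorm_0: "cnorm ip 0 = 0" using nrm_0 unfolding nrm_def .

lemma diss_of_m:
  assumes m: "m_dissipative V ip D L" and f: "f \<in> D" and Lf: "L f \<in> V"
  shows "Im (ip (L f) f) \<le> 0"
proof (rule ccontr)
  assume "\<not> Im (ip (L f) f) \<le> 0"
  then have wpos: "Im (ip (L f) f) > 0" by simp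
  have fV: "f \<in> V" using m f unfolding m_dissipative_def by blast
  define t where "t = (nrm (L f))\<^sup>2 / Im (ip (L f) f) + 1"
  have tpos: "t > 0" unfolding t_def using wpos by (simp add: add_nonneg_pos)
  have "Im (\<i> * complex_of_real t) > 0" using tpos by simp
  then have "\<forall>f\<in>D. Im (\<i> * complex_of_real t) * cnorm ip f \<le> cnorm ip (L f - (\<i> * complex_of_real t) *\<^sub>C f)"
    using m unfolding m_dissipative_def by blast
  then have "t * nrm f \<le> nrm (L f - (\<i> * complex_of_real t) *\<^sub>C f)"
    using f unfolding nrm_def by simp
  then have "(t * nrm f)\<^sup>2 \<le> (nrm (L f - (\<i> * complex_of_real t) *\<^sub>C f))\<^sup>2"
    using tpos nrm_nonneg[OF fV] by (intro power_mono) auto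
  also have "\<dots> = (nrm (L f))\<^sup>2 + (nrm ((\<i> * complex_of_real t) *\<^sub>C f))\<^sup>2 - 2 * Re (ip (L f) ((\<i> * complex_of_real t) *\<^sub>C f))"
    by (rule sq_diff[OF Lf inscale[OF fV]])
  also have "nrm ((\<i> * complex_of_real t) *\<^sub>C f) = t * nrm f" using nrm_scale[OF fV] tpos by (simp add: norm_mult)
  also have "Re (ip (L f) ((\<i> * complex_of_real t) *\<^sub>C f)) = t * Im (ip (L f) f)"
    using scale_right[OF Lf fV] by simp
  finally have "0 \<le> (nrm (L f))\<^sup>2 - 2 * t * Im (ip (L f) f)" by simp
  moreover have "t * Im (ip (L f) f) = (nrm (L f))\<^sup>2 + Im (ip (L f) f)"
    unfolding t_def using wpos by (simp add: field_simps)
  ultimately show False using wpos zero_le_power2[of "nrm (L f)"] by (simp add: mult.assoc)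
qed

lemma est_of_diss:
  assumes fV: "f \<in> V" and Lf: "Lf \<in> V" and d: "Im (ip Lf f) \<le> 0" and z: "Im z > 0"
  shows "Im z * nrm f \<le> nrm (Lf - z *\<^sub>C f)"
proof (cases "nrm f = 0")
  case True then show ?thesis using nrm_nonneg[OF indiff[OF Lf inscale[OF fV]]] by simp
next
  case False
  then have pos: "nrm f > 0" using nrm_nonneg[OF fV] by (simp add: less_le)
  have e: "ip (Lf - z *\<^sub>C f) f = ip Lf f - z * complex_of_real ((nrm f)\<^sup>2)"
    using diff_left[OF Lf inscale[OF fV] fV] scale_left[OF fV fV] ip_self_nrm[OF fV] by simp
  have "Im z * (nrm f)\<^sup>2 \<le> - Im (ip (Lf - z *\<^sub>C f) f)" unfolding e using d by simp
  also have "\<dots> \<le> cmod (ip (Lf - z *\<^sub>C f) f)" using abs_Im_le_cmod[of "ip (Lf - z *\<^sub>C f) f"] by linarith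
  also have "\<dots> \<le> nrm (Lf - z *\<^sub>C f) * nrm f" by (rule CS[OF indiff[OF Lf inscale[OF fV]] fV])
  finally have "(Im z * nrm f) * nrm f \<le> nrm (Lf - z *\<^sub>C f) * nrm f" by (simp add: power2_eq_square algebra_simps)
  then show ?thesis using pos by simp
qed

lemma m_diss_intro:
  assumes DV: "D \<subseteq> V" and Dsub: "csubspace D" and LV: "\<And>f. f \<in> D \<Longrightarrow> L f \<in> V"
    and Ldiff: "\<And>f g. f \<in> D \<Longrightarrow> g \<in> D \<Longrightarrow> L (f - g) = L f - L g"
    and diss: "\<And>f. f \<in> D \<Longrightarrow> Im (ip (L f) f) \<le> 0"
    and surj: "\<And>z y. Im z > 0 \<Longrightarrow> y \<in> V \<Longrightarrow> \<exists>f\<in>D. L f - z *\<^sub>C f = y"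
  shows "m_dissipative V ip D L"
  unfolding m_dissipative_def
proof (intro conjI allI impI ballI DV)
  fix z :: complex assume z: "Im z > 0"
  show est: "Im z * cnorm ip f \<le> cnorm ip (L f - z *\<^sub>C f)" if "f \<in> D" for f
    using est_of_diss[OF _ LV diss z, of f] that DV unfolding nrm_def by blast
  show "bij_betw (\<lambda>f. L f - z *\<^sub>C f) D V"
    unfolding bij_betw_def
  proof (intro conjI)
    show "inj_on (\<lambda>f. L f - z *\<^sub>C f) D"
    proof (rule inj_onI)
      fix f g assume f: "f \<in> D" and g: "g \<in> D" and eq: "L f - z *\<^sub>C f = L g - z *\<^sub>C g"
      have fg: "f - g \<in> D" using csubspace_diff[OF Dsub f g] .
      have "L (f - g) - z *\<^sub>C (f - g) = (L f - z *\<^sub>C f) - (L g - z *\<^sub>C g)"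
        using Ldiff[OF f g] by (simp add: scaleC_diff_right algebra_simps)
      also have "\<dots> = 0" using eq by simp
      finally have "L (f - g) - z *\<^sub>C (f - g) = 0" .
      then have "Im z * nrm (f - g) \<le> 0" using est[OF fg] by (simp add: nrm_def cnorm_0)
      then have "nrm (f - g) = 0" using z nrm_nonneg[of "f - g"] fg DV
        by (meson subsetD mult_le_0_iff not_less order_antisym)
      then show "f = g" using nrm_eq_0[of "f - g"] fg DV by auto
    qed
    show "(\<lambda>f. L f - z *\<^sub>C f) ` D = V"
    proof
      show "(\<lambda>f. L f - z *\<^sub>C f) ` D \<subseteq> V" using LV DV indiff inscale by blast
      show "V \<subseteq> (\<lambda>f. L f - z *\<^sub>C f) ` D" using surj[OF z] by blast
    qed
  qed
qed

lemma m_diss_closed: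
  assumes m: "m_dissipative V ip D L" and Dsub: "csubspace D" and LV: "\<And>f. f \<in> D \<Longrightarrow> L f \<in> V"
    and Ldiff: "\<And>f g. f \<in> D \<Longrightarrow> g \<in> D \<Longrightarrow> L (f - g) = L f - L g"
    and fD: "\<And>n. f n \<in> D" and x: "x \<in> V" and t: "t \<in> V"
    and fx: "ctends ip f x" and ft: "ctends ip (\<lambda>n. L (f n)) t"
  shows "x \<in> D \<and> L x = t"
proof -
  have DV: "D \<subseteq> V" using m unfolding m_dissipative_def by blast
  have zi: "Im \<i> > 0" by simp
  have mi: "bij_betw (\<lambda>f. L f - \<i> *\<^sub>C f) D V \<and> (\<forall>f\<in>D. Im \<i> * cnorm ip f \<le> cnorm ip (L f - \<i> *\<^sub>C f))"
    using m zi unfolding m_dissipative_def by blast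
  have bij: "bij_betw (\<lambda>f. L f - \<i> *\<^sub>C f) D V" and est: "\<And>f. f \<in> D \<Longrightarrow> nrm f \<le> nrm (L f - \<i> *\<^sub>C f)"
    using mi unfolding nrm_def by auto
  have im: "(\<lambda>f. L f - \<i> *\<^sub>C f) ` D = V" using bij by (simp add: bij_betw_def)
  have "t - \<i> *\<^sub>C x \<in> V" using t x indiff inscale by simp
  then have "t - \<i> *\<^sub>C x \<in> (\<lambda>f. L f - \<i> *\<^sub>C f) ` D" using im by simp
  then obtain g where g: "g \<in> D" "t - \<i> *\<^sub>C x = L g - \<i> *\<^sub>C g" by (rule imageE)
  then have g2: "L g - \<i> *\<^sub>C g = t - \<i> *\<^sub>C x" by simp
  have gV: "g \<in> V" using g DV by blast
  have Lg: "L g = (t - \<i> *\<^sub>C x) + \<i> *\<^sub>C g" using g2 by (metis diff_add_cancel)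
  have fV: "\<And>n. f n \<in> V" using fD DV by blast
  have Lf: "\<And>n. L (f n) \<in> V" using LV fD by blast
  have "ctends ip f g"
  proof (rule ctends_bound[OF fV gV])
    fix n
    have "f n - g \<in> D" using csubspace_diff[OF Dsub fD g(1)] .
    then have "nrm (f n - g) \<le> nrm (L (f n - g) - \<i> *\<^sub>C (f n - g))" using est by simp
    also have "L (f n - g) - \<i> *\<^sub>C (f n - g) = (L (f n) - t) - \<i> *\<^sub>C (f n - x)"
      unfolding Ldiff[OF fD g(1)] scaleC_diff_right Lg by (simp add: algebra_simps)
    also have "nrm \<dots> \<le> nrm (L (f n) - t) + nrm (\<i> *\<^sub>C (f n - x))"
      by (rule triangle_sub[OF indiff[OF Lf t] inscale[OF indiff[OF fV x]]])
    also have "nrm (\<i> *\<^sub>C (f n - x)) = nrm (f n - x)" using nrm_scale[OF indiff[OF fV x]] by simp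
    finally show "nrm (f n - g) \<le> nrm (L (f n) - t) + nrm (f n - x)" .
    show "(\<lambda>n. nrm (L (f n) - t) + nrm (f n - x)) \<longlonglongrightarrow> 0"
      using ft fx unfolding ctends_iff using tendsto_add by fastforce
  qed
  then have xg: "x = g" using ctends_unique[OF fV x gV fx] by simp
  have "L x = t" using g2 xg by (simp add: algebra_simps)
  then show ?thesis using xg g(1) by simp
qed

end


lemma closed_opD: "closed_op V ipa W ipb D T \<Longrightarrow> (\<And>n. f n \<in> D) \<Longrightarrow> x \<in> V \<Longrightarrow> y \<in> W \<Longrightarrow>
  ctends ipa f x \<Longrightarrow> ctends ipb (\<lambda>n. T (f n)) y \<Longrightarrow> x \<in> D \<and> T x = y"
  unfolding closed_op_def by blast

lemma Re_cnj_acc: "Re (cnj z) = Re z" by simp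

context setting begin

lemma domZ_sub: "csubspace domZ" using Z2 linear_onD(1) by blast
lemma Z_in: "h \<in> domZ \<Longrightarrow> Z h \<in> Hpm" using Z2 linear_onD(2) by blast
lemma Z_add: "h \<in> domZ \<Longrightarrow> k \<in> domZ \<Longrightarrow> Z (h + k) = Z h + Z k" using Z2 linear_onD(3) by blast
lemma Z_scale: "h \<in> domZ \<Longrightarrow> Z (c *\<^sub>C h) = c *\<^sub>C Z h" using Z2 linear_onD(4) by blast
lemma Z_diff: "h \<in> domZ \<Longrightarrow> k \<in> domZ \<Longrightarrow> Z (h - k) = Z h - Z k" using Z2 linear_on_diff by blast
lemma domZ_in: "h \<in> domZ \<Longrightarrow> h \<in> Hmp" using Z1 by blast

lemma Vi_diff: assumes "a \<in> Hmp" "b \<in> Hmp" shows "Vi (a - b) = Vi a - Vi b"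
proof (rule V_inj)
  show "Vi (a - b) \<in> H" using Vi_in MP.indiff assms by simp
  show "Vi a - Vi b \<in> H" using Vi_in HH.indiff assms by simp
  show "V (Vi (a - b)) = V (Vi a - Vi b)" using V_diff[OF Vi_in Vi_in] V_Vi MP.indiff assms by simp
qed

lemma cauchy_transfer: assumes g: "\<And>n. g n \<in> Hpm" and c: "ccauchy ipH (\<lambda>n. VS (g n))"
  shows "ccauchy ipPM g"
  unfolding PM.ccauchy_iff
proof (intro allI impI)
  fix e :: real assume e: "e > 0"
  then have e': "e / (Ki + 1) > 0" using Ki(1) by simp
  obtain N where N: "\<forall>m\<ge>N. \<forall>n\<ge>N. HH.nrm (VS (g m) - VS (g n)) < e / (Ki + 1)"
    using c e' unfolding HH.ccauchy_iff by blast
  show "\<exists>N. \<forall>m\<ge>N. \<forall>n\<ge>N. PM.nrm (g m - g n) < e"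
  proof (intro exI allI impI)
    fix m n assume mn: "m \<ge> N" "n \<ge> N"
    have fH: "VS (g m) - VS (g n) \<in> H" using VS_in g HH.indiff by simp
    have "PM.nrm (g m - g n) \<le> Ki * HH.nrm (VS (g m - g n))" by (rule VS_lower[OF PM.indiff[OF g g]])
    also have "VS (g m - g n) = VS (g m) - VS (g n)" using VS_diff g by simp
    also have "Ki * HH.nrm (VS (g m) - VS (g n)) \<le> (Ki + 1) * HH.nrm (VS (g m) - VS (g n))"
      using HH.nrm_nonneg[OF fH] by (simp add: algebra_simps)
    also have "\<dots> < (Ki + 1) * (e / (Ki + 1))" using N mn Ki(1) by (intro mult_strict_left_mono) auto
    finally show "PM.nrm (g m - g n) < e" using Ki(1) by simp
  qed
qed

lemma VS_tends: assumes g: "\<And>n. g n \<in> Hpm" "y \<in> Hpm" "ctends ipPM g y"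
  shows "ctends ipH (\<lambda>n. VS (g n)) (VS y)"
proof (rule HH.ctends_bound[OF VS_in[OF g(1)] VS_in[OF g(2)]])
  fix n
  show "HH.nrm (VS (g n) - VS y) \<le> (Cp * Kv) * PM.nrm (g n - y)"
    using VS_bound[OF PM.indiff[OF g(1) g(2)]] VS_diff[OF g(1) g(2)] by simp
  show "(\<lambda>n. (Cp * Kv) * PM.nrm (g n - y)) \<longlonglongrightarrow> 0"
    using tendsto_mult_right_zero g(3) PM.ctends_iff by blast
qed

lemma V_tends: assumes f: "\<And>n. f n \<in> H" "x \<in> H" "ctends ipH f x"
  shows "ctends ipMP (\<lambda>n. V (f n)) (V x)"
proof (rule MP.ctends_bound[OF V_in[OF f(1)] V_in[OF f(2)]])
  fix n
  show "MP.nrm (V (f n) - V x) \<le> Kv * HH.nrm (f n - x)"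
    using Kv(2)[OF HH.indiff[OF f(1) f(2)]] V_diff[OF f(1) f(2)] by simp
  show "(\<lambda>n. Kv * HH.nrm (f n - x)) \<longlonglongrightarrow> 0"
    using tendsto_mult_right_zero f(3) HH.ctends_iff by blast
qed

lemma Vi_tends: assumes f: "\<And>n. f n \<in> Hmp" "x \<in> Hmp" "ctends ipMP f x"
  shows "ctends ipH (\<lambda>n. Vi (f n)) (Vi x)"
proof (rule HH.ctends_bound[OF Vi_in[OF f(1)] Vi_in[OF f(2)]])
  fix n
  show "HH.nrm (Vi (f n) - Vi x) \<le> Ki * MP.nrm (f n - x)"
    using Ki(2)[OF MP.indiff[OF f(1) f(2)]] Vi_diff[OF f(1) f(2)] by simp
  show "(\<lambda>n. Ki * MP.nrm (f n - x)) \<longlonglongrightarrow> 0"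
    using tendsto_mult_right_zero f(3) MP.ctends_iff by blast
qed

definition DT where "DT = {f \<in> H. V f \<in> domZ}"
definition T where "T f = VS (Z (V f))"

lemma DT_H: "DT \<subseteq> H" unfolding DT_def by blast
lemma DT_sub: "csubspace DT"
  unfolding csubspace_def DT_def
  using HH.in0 V_0 csubspace_0[OF domZ_sub] HH.inadd V_add csubspace_add[OF domZ_sub]
    HH.inscale V_scale csubspace_scale[OF domZ_sub] by auto
lemma T_in: "f \<in> DT \<Longrightarrow> T f \<in> H" unfolding DT_def T_def using VS_in Z_in by blast
lemma T_diff: "f \<in> DT \<Longrightarrow> g \<in> DT \<Longrightarrow> T (f - g) = T f - T g"
  unfolding DT_def T_def using V_diff Z_diff VS_diff Z_in by simp
lemma T_add: "f \<in> DT \<Longrightarrow> g \<in> DT \<Longrightarrow> T (f + g) = T f + T g"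
  unfolding DT_def T_def using V_add Z_add VS_add Z_in by simp
lemma T_scale: "f \<in> DT \<Longrightarrow> T (c *\<^sub>C f) = c *\<^sub>C T f"
  unfolding DT_def T_def using V_scale Z_scale VS_scale Z_in by simp
lemma T_ip: "f \<in> DT \<Longrightarrow> ipH f (T f) = pair (V f) (Z (V f))"
  unfolding DT_def T_def using VS_eq Z_in by simp
lemma T_ip2: "f \<in> DT \<Longrightarrow> Re (ipH (T f) f) = Re (pair (V f) (Z (V f)))"
  using T_ip[of f] HH.ipsym[of f "T f"] T_in[of f] DT_H by (metis Re_cnj_acc subsetD)

lemma acc_T: assumes "accretive_Z pair domZ Z" "f \<in> DT" shows "Re (ipH (T f) f) \<ge> 0"
  using assms T_ip2 unfolding accretive_Z_def DT_def by auto

lemma T_closed: assumes cl: "closed_op Hmp ipMP Hpm ipPM domZ Z"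
  and f: "\<And>n. f n \<in> DT" and x: "x \<in> H" and t: "t \<in> H"
  and fx: "ctends ipH f x" and ft: "ctends ipH (\<lambda>n. T (f n)) t"
  shows "x \<in> DT \<and> T x = t"
proof -
  have fH: "\<And>n. f n \<in> H" using f DT_H by blast
  have g: "\<And>n. Z (V (f n)) \<in> Hpm" using f Z_in unfolding DT_def by blast
  have "ccauchy ipH (\<lambda>n. VS (Z (V (f n))))"
    using HH.ctends_cauchy[OF T_in[OF f] t ft] unfolding T_def .
  then have "ccauchy ipPM (\<lambda>n. Z (V (f n)))" by (rule cauchy_transfer[OF g])
  moreover have "\<forall>n. Z (V (f n)) \<in> Hpm" using g by blast
  ultimately have "\<exists>k\<in>Hpm. ctends ipPM (\<lambda>n. Z (V (f n))) k" using PM.complete[of "\<lambda>n. Z (V (f n))"] by blast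
  then obtain k where k: "k \<in> Hpm" "ctends ipPM (\<lambda>n. Z (V (f n))) k" by blast
  have "ctends ipH (\<lambda>n. VS (Z (V (f n)))) (VS k)" by (rule VS_tends[OF g k])
  then have tk: "t = VS k" using HH.ctends_unique[OF T_in[OF f] t VS_in[OF k(1)] ft] unfolding T_def by simp
  have "V x \<in> domZ \<and> Z (V x) = k"
  proof (rule closed_opD[OF cl _ V_in[OF x] k(1) V_tends[OF fH x fx] k(2)])
    fix n show "V (f n) \<in> domZ" using f[of n] unfolding DT_def by blast
  qed
  then show ?thesis using x tk unfolding DT_def T_def by simp
qed


lemma K0:
  assumes mx: "max_accretive_Z Hmp Hpm pair domZ Z" and h0: "h0 \<in> Hmp" and k0: "k0 \<in> Hpm"
    and acc: "\<And>h c. h \<in> domZ \<Longrightarrow> Re (pair (h + c *\<^sub>C h0) (Z h + c *\<^sub>C k0)) \<ge> 0"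
  shows "h0 \<in> domZ"
proof (rule ccontr)
  assume nd: "h0 \<notin> domZ"
  have dsub: "csubspace domZ" by (rule domZ_sub)
  define D' where "D' = {x. \<exists>h c. h \<in> domZ \<and> x = h + c *\<^sub>C h0}"
  have uniq: "c = c' \<and> h = h'" if h: "h \<in> domZ" "h' \<in> domZ" and e: "h + c *\<^sub>C h0 = h' + c' *\<^sub>C h0" for h c h' c'
  proof -
    have "c = c'"
    proof (rule ccontr)
      assume ne: "c \<noteq> c'"
      have "(c - c') *\<^sub>C h0 = h' - h" using e by (simp add: scaleC_diff_left algebra_simps)
      then have "(1 / (c - c')) *\<^sub>C ((c - c') *\<^sub>C h0) = (1 / (c - c')) *\<^sub>C (h' - h)" by simp
      then have "h0 = (1 / (c - c')) *\<^sub>C (h' - h)" using ne by (simp add: scaleC_scaleC scaleC_one)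
      then have "h0 \<in> domZ" using csubspace_scale[OF dsub csubspace_diff[OF dsub h(2) h(1)]] by simp
      then show False using nd by simp
    qed
    then show ?thesis using e by simp
  qed
  define cf where "cf x = (THE c. \<exists>h\<in>domZ. x = h + c *\<^sub>C h0)" for x
  have cf: "cf (h + c *\<^sub>C h0) = c" if "h \<in> domZ" for h c
    unfolding cf_def by (rule the_equality) (use that uniq in blast)+
  define Z' where "Z' x = Z (x - cf x *\<^sub>C h0) + cf x *\<^sub>C k0" for x
  have Z': "Z' (h + c *\<^sub>C h0) = Z h + c *\<^sub>C k0" if "h \<in> domZ" for h c
    unfolding Z'_def cf[OF that] by simp
  have D'E: "x \<in> D' \<longleftrightarrow> (\<exists>h c. h \<in> domZ \<and> x = h + c *\<^sub>C h0)" for x unfolding D'_def by simp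
  have dZ: "domZ \<subseteq> D'"
  proof
    fix h assume "h \<in> domZ" then show "h \<in> D'" unfolding D'E by (intro exI[of _ h] exI[of _ 0]) simp
  qed
  have h0D: "h0 \<in> D'" unfolding D'E using csubspace_0[OF dsub] by (intro exI[of _ 0] exI[of _ 1]) (simp add: scaleC_one)
  have "D' = domZ"
  proof (rule mx[unfolded max_accretive_Z_def, THEN conjunct2, rule_format], intro conjI)
    show "D' \<subseteq> Hmp" using domZ_in MP.inadd MP.inscale h0 unfolding D'_def by blast
    show "domZ \<subseteq> D'" by (rule dZ)
    show "\<forall>h\<in>domZ. Z' h = Z h" using Z'[of _ 0] by simp
    show "linear_on D' Hpm Z'"
      unfolding linear_on_def
    proof (intro conjI ballI allI)
      show "csubspace D'" unfolding csubspace_def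
      proof (intro conjI ballI allI)
        show "0 \<in> D'" using dZ csubspace_0[OF dsub] by blast
        fix x y assume "x \<in> D'" "y \<in> D'"
        then obtain h1 c1 h2 c2 where "h1 \<in> domZ" "x = h1 + c1 *\<^sub>C h0" "h2 \<in> domZ" "y = h2 + c2 *\<^sub>C h0"
          unfolding D'E by blast
        then show "x + y \<in> D'" unfolding D'E using csubspace_add[OF dsub]
          by (intro exI[of _ "h1 + h2"] exI[of _ "c1 + c2"]) (simp add: scaleC_add_left algebra_simps)
      next
        fix c x assume "x \<in> D'"
        then obtain h1 c1 where "h1 \<in> domZ" "x = h1 + c1 *\<^sub>C h0" unfolding D'E by blast
        then show "c *\<^sub>C x \<in> D'" unfolding D'E using csubspace_scale[OF dsub]
          by (intro exI[of _ "c *\<^sub>C h1"] exI[of _ "c * c1"]) (simp add: scaleC_add_right scaleC_scaleC)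
      qed
      fix x assume "x \<in> D'"
      then obtain h1 c1 where x: "h1 \<in> domZ" "x = h1 + c1 *\<^sub>C h0" unfolding D'E by blast
      show "Z' x \<in> Hpm" using x Z' Z_in PM.inadd PM.inscale k0 by simp
      fix c
      show "Z' (c *\<^sub>C x) = c *\<^sub>C Z' x"
      proof -
        have "c *\<^sub>C x = c *\<^sub>C h1 + (c * c1) *\<^sub>C h0" using x by (simp add: scaleC_add_right scaleC_scaleC)
        then have "Z' (c *\<^sub>C x) = Z (c *\<^sub>C h1) + (c * c1) *\<^sub>C k0" using Z' csubspace_scale[OF dsub x(1)] by simp
        also have "\<dots> = c *\<^sub>C (Z h1 + c1 *\<^sub>C k0)" using Z_scale[OF x(1)] by (simp add: scaleC_add_right scaleC_scaleC)
        finally show ?thesis using Z'[OF x(1)] x(2) by simp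
      qed
    next
      fix x y assume "x \<in> D'" "y \<in> D'"
      then obtain h1 c1 h2 c2 where x: "h1 \<in> domZ" "x = h1 + c1 *\<^sub>C h0" and y: "h2 \<in> domZ" "y = h2 + c2 *\<^sub>C h0"
        unfolding D'E by blast
      have "x + y = (h1 + h2) + (c1 + c2) *\<^sub>C h0" using x y by (simp add: scaleC_add_left algebra_simps)
      then have "Z' (x + y) = Z (h1 + h2) + (c1 + c2) *\<^sub>C k0" using Z' csubspace_add[OF dsub x(1) y(1)] by simp
      also have "\<dots> = (Z h1 + c1 *\<^sub>C k0) + (Z h2 + c2 *\<^sub>C k0)" using Z_add[OF x(1) y(1)] by (simp add: scaleC_add_left algebra_simps)
      finally show "Z' (x + y) = Z' x + Z' y" using Z'[OF x(1)] Z'[OF y(1)] x(2) y(2) by simp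
    qed
    show "accretive_Z pair D' Z'" unfolding accretive_Z_def
    proof
      fix x assume "x \<in> D'"
      then obtain h c where x: "h \<in> domZ" "x = h + c *\<^sub>C h0" unfolding D'E by blast
      show "0 \<le> Re (cnj (pair x (Z' x)))" using acc[OF x(1), of c] Z'[OF x(1)] x(2) by simp
    qed
  qed
  then show False using h0D nd by simp
qed

lemma cplx_acc: fixes Aa p c z :: complex and r :: real
  assumes "Re Aa \<ge> 0" "r \<ge> 0" "Im z \<ge> 0"
  shows "0 \<le> Re (Aa + cnj (c * (\<i> * cnj z)) * p + c * cnj (\<i> * z * p) + c * cnj (c * (\<i> * cnj z)) * complex_of_real r)"
proof -
  have "Re (Aa + cnj (c * (\<i> * cnj z)) * p + c * cnj (\<i> * z * p) + c * cnj (c * (\<i> * cnj z)) * complex_of_real r)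
      = Re Aa + ((Re c)\<^sup>2 + (Im c)\<^sup>2) * (r * Im z)"
    by (simp add: algebra_simps power2_eq_square)
  moreover have "((Re c)\<^sup>2 + (Im c)\<^sup>2) * (r * Im z) \<ge> 0" using assms by simp
  ultimately show ?thesis using assms(1) by linarith
qed

theorem ZtoT:
  assumes mx: "max_accretive_Z Hmp Hpm pair domZ Z" and cl: "closed_op Hmp ipMP Hpm ipPM domZ Z"
  shows "m_accretive H ipH DT T"
  unfolding m_accretive_def
proof (rule HH.m_diss_intro[OF DT_H DT_sub])
  have accZ: "accretive_Z pair domZ Z" using mx unfolding max_accretive_Z_def by blast
  show LV: "(- \<i>) *\<^sub>C T f \<in> H" if "f \<in> DT" for f using T_in[OF that] HH.inscale by simp
  show Ld: "(- \<i>) *\<^sub>C T (f - g) = (- \<i>) *\<^sub>C T f - (- \<i>) *\<^sub>C T g" if "f \<in> DT" "g \<in> DT" for f g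
    using T_diff[OF that] by (simp add: scaleC_diff_right)
  show diss: "Im (ipH ((- \<i>) *\<^sub>C T f) f) \<le> 0" if f: "f \<in> DT" for f
  proof -
    have "ipH ((- \<i>) *\<^sub>C T f) f = (- \<i>) * ipH (T f) f" using HH.scale_left[OF T_in[OF f]] f DT_H by blast
    then show ?thesis using acc_T[OF accZ f] by simp
  qed
  fix z y assume z: "Im z > 0" and y: "y \<in> H"
  define Lz where "Lz f = (- \<i>) *\<^sub>C T f - z *\<^sub>C f" for f
  have LzH: "Lz f \<in> H" if "f \<in> DT" for f unfolding Lz_def using LV[OF that] that DT_H HH.indiff HH.inscale by blast
  have Lzd: "Lz (f - g) = Lz f - Lz g" if "f \<in> DT" "g \<in> DT" for f g
    unfolding Lz_def using Ld[OF that] by (simp add: scaleC_diff_right algebra_simps)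
  have est: "Im z * HH.nrm f \<le> HH.nrm (Lz f)" if f: "f \<in> DT" for f
    unfolding Lz_def by (rule HH.est_of_diss[OF _ LV[OF f] diss[OF f] z]) (use f DT_H in blast)
  define R where "R = Lz ` DT"
  have RH: "R \<subseteq> H" unfolding R_def using LzH by blast
  have Rsub: "csubspace R" unfolding csubspace_def R_def
  proof (intro conjI ballI allI)
    have "Lz 0 = 0" using Lzd[OF csubspace_0[OF DT_sub] csubspace_0[OF DT_sub]] by simp
    then show "0 \<in> Lz ` DT" using csubspace_0[OF DT_sub] by force
    fix a b assume "a \<in> Lz ` DT" "b \<in> Lz ` DT"
    then obtain f g where fg: "f \<in> DT" "g \<in> DT" "a = Lz f" "b = Lz g" by blast
    have "Lz (f + g) = a + b" unfolding fg(3,4) Lz_def T_add[OF fg(1,2)] by (simp add: scaleC_add_right algebra_simps)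
    then show "a + b \<in> Lz ` DT" using csubspace_add[OF DT_sub fg(1,2)] by (metis image_eqI)
  next
    fix c a assume "a \<in> Lz ` DT"
    then obtain f where f: "f \<in> DT" "a = Lz f" by blast
    have "Lz (c *\<^sub>C f) = c *\<^sub>C a" unfolding f(2) Lz_def using T_scale[OF f(1)]
      by (simp add: scaleC_diff_right scaleC_scaleC mult.commute)
    then show "c *\<^sub>C a \<in> Lz ` DT" using csubspace_scale[OF DT_sub f(1)] by (metis image_eqI)
  qed
  have Rclosed: "x \<in> R" if fR: "\<forall>n. f n \<in> R" and x: "x \<in> H" and fx: "ctends ipH f x" for f x
  proof -
    have "\<forall>n. \<exists>g\<in>DT. f n = Lz g" using fR R_def by blast
    then obtain fs where fs: "\<And>n. fs n \<in> DT" "\<And>n. f n = Lz (fs n)" by metis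
    have fsH: "\<And>n. fs n \<in> H" using fs DT_H by blast
    have fH: "\<And>n. f n \<in> H" using fs LzH by simp
    have cf: "ccauchy ipH f" by (rule HH.ctends_cauchy[OF fH x fx])
    have cfs: "ccauchy ipH fs" unfolding HH.ccauchy_iff
    proof (intro allI impI)
      fix e :: real assume e: "e > 0"
      obtain N where N: "\<forall>m\<ge>N. \<forall>n\<ge>N. HH.nrm (f m - f n) < Im z * e"
        using cf z e unfolding HH.ccauchy_iff by (meson mult_pos_pos)
      show "\<exists>N. \<forall>m\<ge>N. \<forall>n\<ge>N. HH.nrm (fs m - fs n) < e"
      proof (intro exI allI impI)
        fix m n assume mn: "m \<ge> N" "n \<ge> N"
        have "Im z * HH.nrm (fs m - fs n) \<le> HH.nrm (Lz (fs m - fs n))"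
          by (rule est[OF csubspace_diff[OF DT_sub fs(1) fs(1)]])
        also have "Lz (fs m - fs n) = f m - f n" using Lzd[OF fs(1) fs(1)] fs(2) by simp
        finally have "Im z * HH.nrm (fs m - fs n) < Im z * e" using N mn by fastforce
        then show "HH.nrm (fs m - fs n) < e" using z by simp
      qed
    qed
    have "\<exists>p\<in>H. ctends ipH fs p" using HH.complete[of fs] fsH cfs by blast
    then obtain p where p: "p \<in> H" "ctends ipH fs p" by blast
    have Tfs: "T (fs n) = \<i> *\<^sub>C (f n + z *\<^sub>C fs n)" for n
    proof -
      have "f n + z *\<^sub>C fs n = (- \<i>) *\<^sub>C T (fs n)" using fs(2)[of n] unfolding Lz_def by simp
      then have "\<i> *\<^sub>C (f n + z *\<^sub>C fs n) = \<i> *\<^sub>C ((- \<i>) *\<^sub>C T (fs n))" by simp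
      then show ?thesis by (simp add: scaleC_scaleC scaleC_one)
    qed
    have xzp: "\<i> *\<^sub>C (x + z *\<^sub>C p) \<in> H" using x p HH.inadd HH.inscale by simp
    have "ctends ipH (\<lambda>n. \<i> *\<^sub>C (f n + z *\<^sub>C fs n)) (\<i> *\<^sub>C (x + z *\<^sub>C p))"
      by (intro HH.ctends_scale HH.ctends_add) (use fH fsH x p fx HH.inscale HH.inadd HH.ctends_scale in auto)
    then have "ctends ipH (\<lambda>n. T (fs n)) (\<i> *\<^sub>C (x + z *\<^sub>C p))" unfolding Tfs .
    then have pT: "p \<in> DT \<and> T p = \<i> *\<^sub>C (x + z *\<^sub>C p)" by (rule T_closed[OF cl fs(1) p(1) xzp p(2)])
    have "Lz p = x" unfolding Lz_def using pT by (simp add: scaleC_scaleC scaleC_one)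
    then show "x \<in> R" using pT R_def by blast
  qed
  have orth: "u = 0" if u: "u \<in> H" and ou: "\<forall>r\<in>R. ipH r u = 0" for u
  proof -
    obtain k where k: "k \<in> Hpm" "VS k = u" using VS_surj[OF u] by blast
    define a where "a = \<i> * cnj z"
    have oT: "ipH (T f) u = \<i> * z * ipH f u" if f: "f \<in> DT" for f
    proof -
      have fH: "f \<in> H" using f DT_H by blast
      have "ipH (Lz f) u = 0" using ou R_def f by blast
      moreover have "ipH (Lz f) u = (- \<i>) * ipH (T f) u - z * ipH f u"
        unfolding Lz_def using HH.diff_left[OF HH.inscale[OF T_in[OF f]] HH.inscale[OF fH] u]
          HH.scale_left[OF T_in[OF f] u] HH.scale_left[OF fH u] by simp
      ultimately have "(- \<i>) * ipH (T f) u = z * ipH f u" by simp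
      then have "\<i> * ((- \<i>) * ipH (T f) u) = \<i> * (z * ipH f u)" by simp
      then show ?thesis by (simp add: mult.assoc)
    qed
    have "V u \<in> domZ"
    proof (rule K0[OF mx V_in[OF u] PM.inscale[OF k(1), of a]])
      fix h c assume h: "h \<in> domZ"
      define f where "f = Vi h"
      have fH: "f \<in> H" unfolding f_def using Vi_in domZ_in h by blast
      have Vf: "V f = h" unfolding f_def using V_Vi domZ_in h by blast
      have fD: "f \<in> DT" unfolding DT_def using fH Vf h by simp
      have e1: "h + c *\<^sub>C V u = V (f + c *\<^sub>C u)" using V_add[OF fH HH.inscale[OF u]] V_scale[OF u] Vf by simp
      have gk: "Z h + c *\<^sub>C (a *\<^sub>C k) \<in> Hpm" using Z_in[OF h] PM.inadd PM.inscale k(1) by simp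
      have e2: "VS (Z h + c *\<^sub>C (a *\<^sub>C k)) = T f + (c * a) *\<^sub>C u"
        using VS_add[OF Z_in[OF h] PM.inscale[OF PM.inscale[OF k(1)]]] VS_scale[OF PM.inscale[OF k(1)]]
          VS_scale[OF k(1)] k(2) Vf unfolding T_def by (simp add: scaleC_scaleC)
      have "pair (h + c *\<^sub>C V u) (Z h + c *\<^sub>C (a *\<^sub>C k)) = ipH (f + c *\<^sub>C u) (T f + (c * a) *\<^sub>C u)"
        unfolding e1 using VS_eq[OF gk HH.inadd[OF fH HH.inscale[OF u]]] e2 by simp
      also have "\<dots> = ipH f (T f) + cnj (c * a) * ipH f u + c * ipH u (T f) + c * cnj (c * a) * ipH u u"
        by (rule HH.expand2[OF fH u T_in[OF fD]])
      also have "ipH u (T f) = cnj (\<i> * z * ipH f u)" using HH.ipsym[OF T_in[OF fD] u] oT[OF fD] by simp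
      also have "ipH u u = complex_of_real ((HH.nrm u)\<^sup>2)" by (rule HH.ip_self_nrm[OF u])
      finally have eq: "pair (h + c *\<^sub>C V u) (Z h + c *\<^sub>C (a *\<^sub>C k)) = ipH f (T f) + cnj (c * a) * ipH f u
          + c * cnj (\<i> * z * ipH f u) + c * cnj (c * a) * complex_of_real ((HH.nrm u)\<^sup>2)" .
      have A: "Re (ipH f (T f)) \<ge> 0"
        using acc_T[OF accZ fD] HH.ipsym[OF fH T_in[OF fD]] by simp
      have fin: "0 \<le> Re (ipH f (T f) + cnj (c * a) * ipH f u
          + c * cnj (\<i> * z * ipH f u) + c * cnj (c * a) * complex_of_real ((HH.nrm u)\<^sup>2))"
        unfolding a_def by (rule cplx_acc[OF A]) (use z in auto)
      show "0 \<le> Re (pair (h + c *\<^sub>C V u) (Z h + c *\<^sub>C (a *\<^sub>C k)))"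
        unfolding eq by (rule fin)
    qed
    then have uD: "u \<in> DT" unfolding DT_def using u by simp
    have "ipH (Lz u) u = 0" using ou R_def uD by blast
    moreover have "ipH (Lz u) u = (- \<i>) * ipH (T u) u - z * complex_of_real ((HH.nrm u)\<^sup>2)"
      unfolding Lz_def using HH.diff_left[OF HH.inscale[OF T_in[OF uD]] HH.inscale[OF u] u]
        HH.scale_left[OF T_in[OF uD] u] HH.scale_left[OF u u] HH.ip_self_nrm[OF u] by simp
    ultimately have "Im ((- \<i>) * ipH (T u) u - z * complex_of_real ((HH.nrm u)\<^sup>2)) = 0" by simp
    then have "Im z * (HH.nrm u)\<^sup>2 = - Re (ipH (T u) u)" by simp
    then have "Im z * (HH.nrm u)\<^sup>2 \<le> 0" using acc_T[OF accZ uD] by simp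
    then have "(HH.nrm u)\<^sup>2 \<le> 0" using z by (simp add: mult_le_0_iff)
    then have "HH.nrm u = 0" by simp
    then show "u = 0" using HH.nrm_eq_0[OF u] by simp
  qed
  have "R = H" by (rule HH.orth_complete[OF RH Rsub Rclosed orth]) auto
  then have "y \<in> Lz ` DT" using y R_def by simp
  then obtain f where "f \<in> DT" "y = Lz f" by (rule imageE)
  then show "\<exists>f\<in>DT. (- \<i>) *\<^sub>C T f - z *\<^sub>C f = y" unfolding Lz_def by blast
qed


lemma closed_opI: "(\<And>f x y. (\<And>n. f n \<in> D) \<Longrightarrow> x \<in> VV \<Longrightarrow> y \<in> WW \<Longrightarrow>
  ctends ipa f x \<Longrightarrow> ctends ipb (\<lambda>n. TT (f n)) y \<Longrightarrow> x \<in> D \<and> TT x = y) \<Longrightarrow> closed_op VV ipa WW ipb D TT"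
  unfolding closed_op_def by blast

theorem TtoZ:
  assumes m: "m_accretive H ipH DT T"
  shows "max_accretive_Z Hmp Hpm pair domZ Z \<and> closed_op Hmp ipMP Hpm ipPM domZ Z"
proof -
  have md: "m_dissipative H ipH DT (\<lambda>f. (- \<i>) *\<^sub>C T f)" using m unfolding m_accretive_def .
  have LV: "(- \<i>) *\<^sub>C T f \<in> H" if "f \<in> DT" for f using T_in[OF that] HH.inscale by simp
  have Ld: "(- \<i>) *\<^sub>C T (f - g) = (- \<i>) *\<^sub>C T f - (- \<i>) *\<^sub>C T g" if "f \<in> DT" "g \<in> DT" for f g
    using T_diff[OF that] by (simp add: scaleC_diff_right)
  have accT: "Re (ipH (T f) f) \<ge> 0" if f: "f \<in> DT" for f
  proof -
    have "Im (ipH ((- \<i>) *\<^sub>C T f) f) \<le> 0" by (rule HH.diss_of_m[OF md f LV[OF f]])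
    moreover have "ipH ((- \<i>) *\<^sub>C T f) f = (- \<i>) * ipH (T f) f" using HH.scale_left[OF T_in[OF f]] f DT_H by blast
    ultimately show ?thesis by simp
  qed
  have ViD: "Vi h \<in> DT" if "h \<in> domZ" for h unfolding DT_def using Vi_in V_Vi domZ_in that by simp
  have accZ: "accretive_Z pair domZ Z" unfolding accretive_Z_def
  proof
    fix h assume h: "h \<in> domZ"
    have "Re (ipH (T (Vi h)) (Vi h)) = Re (pair h (Z h))" using T_ip2[OF ViD[OF h]] V_Vi domZ_in h by simp
    then show "0 \<le> Re (cnj (pair h (Z h)))" using accT[OF ViD[OF h]] by simp
  qed
  have zi: "Im \<i> > 0" by simp
  have bij: "bij_betw (\<lambda>f. (- \<i>) *\<^sub>C T f - \<i> *\<^sub>C f) DT H" using md zi unfolding m_dissipative_def by blast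
  then have im: "(\<lambda>f. (- \<i>) *\<^sub>C T f - \<i> *\<^sub>C f) ` DT = H" by (simp add: bij_betw_def)
  have mx: "max_accretive_Z Hmp Hpm pair domZ Z" unfolding max_accretive_Z_def
  proof (intro conjI accZ allI impI)
    fix D' Z' assume a: "D' \<subseteq> Hmp \<and> linear_on D' Hpm Z' \<and> domZ \<subseteq> D' \<and> (\<forall>h\<in>domZ. Z' h = Z h) \<and> accretive_Z pair D' Z'"
    then have D'H: "D' \<subseteq> Hmp" and lin: "linear_on D' Hpm Z'" and dD: "domZ \<subseteq> D'" and ZZ: "\<And>h. h \<in> domZ \<Longrightarrow> Z' h = Z h"
      and acc': "accretive_Z pair D' Z'" by auto
    show "D' = domZ"
    proof
      show "domZ \<subseteq> D'" by (rule dD)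
      show "D' \<subseteq> domZ"
      proof
        fix h assume h: "h \<in> D'"
        have hm: "h \<in> Hmp" using h D'H by blast
        define f where "f = Vi h"
        have fH: "f \<in> H" unfolding f_def using Vi_in[OF hm] .
        have Vf: "V f = h" unfolding f_def using V_Vi[OF hm] .
        have Zh: "Z' h \<in> Hpm" using linear_onD(2)[OF lin h] .
        define X where "X = VS (Z' h)"
        have XH: "X \<in> H" unfolding X_def using VS_in[OF Zh] .
        have "(- \<i>) *\<^sub>C X - \<i> *\<^sub>C f \<in> H" using XH fH HH.indiff HH.inscale by simp
        then have "(- \<i>) *\<^sub>C X - \<i> *\<^sub>C f \<in> (\<lambda>f. (- \<i>) *\<^sub>C T f - \<i> *\<^sub>C f) ` DT" using im by simp
        then obtain g where g: "g \<in> DT" "(- \<i>) *\<^sub>C X - \<i> *\<^sub>C f = (- \<i>) *\<^sub>C T g - \<i> *\<^sub>C g" by (rule imageE)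
        have gH: "g \<in> H" using g DT_H by blast
        have Vg: "V g \<in> domZ" using g unfolding DT_def by blast
        have "\<i> *\<^sub>C ((- \<i>) *\<^sub>C X - \<i> *\<^sub>C f) = \<i> *\<^sub>C ((- \<i>) *\<^sub>C T g - \<i> *\<^sub>C g)" using g(2) by simp
        then have "X + f = T g + g" by (simp add: scaleC_diff_right scaleC_scaleC scaleC_one scaleC_minus1)
        then have Xw: "X - T g = - (f - g)" by (simp add: algebra_simps)
        define w where "w = f - g"
        have wH: "w \<in> H" unfolding w_def using HH.indiff fH gH by simp
        have Vw: "V w = h - V g" unfolding w_def using V_diff[OF fH gH] Vf by simp
        have VgD: "V g \<in> D'" using Vg dD by blast
        have VwD: "V w \<in> D'" unfolding Vw by (rule csubspace_diff[OF linear_onD(1)[OF lin] h VgD])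
        have Z'w: "Z' (V w) = Z' h - Z (V g)" unfolding Vw linear_on_diff[OF lin h VgD] ZZ[OF Vg] ..
        have ZVg: "Z (V g) \<in> Hpm" using Z_in[OF Vg] .
        have "VS (Z' (V w)) = X - T g" unfolding Z'w X_def T_def using VS_diff[OF Zh ZVg] .
        then have VSw: "VS (Z' (V w)) = - w" using Xw w_def by simp
        have "0 \<le> Re (cnj (pair (V w) (Z' (V w))))" using acc' VwD unfolding accretive_Z_def by blast
        also have "pair (V w) (Z' (V w)) = ipH w (- w)" using VS_eq[OF linear_onD(2)[OF lin VwD] wH] VSw by simp
        also have "ipH w (- w) = - complex_of_real ((HH.nrm w)\<^sup>2)" using HH.minus_right[OF wH wH] HH.ip_self_nrm[OF wH] by simp
        finally have "(HH.nrm w)\<^sup>2 \<le> 0" by simp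
        then have "HH.nrm w = 0" by simp
        then have "w = 0" using HH.nrm_eq_0[OF wH] by simp
        then have "f = g" unfolding w_def by simp
        then show "h \<in> domZ" using Vf Vg by simp
      qed
    qed
  qed
  have cl: "closed_op Hmp ipMP Hpm ipPM domZ Z"
  proof (rule closed_opI)
    fix hs x y assume hs: "\<And>n. hs n \<in> domZ" and x: "x \<in> Hmp" and y: "y \<in> Hpm"
      and hx: "ctends ipMP hs x" and hy: "ctends ipPM (\<lambda>n. Z (hs n)) y"
    have hsm: "\<And>n. hs n \<in> Hmp" using hs domZ_in by blast
    have fD: "\<And>n. Vi (hs n) \<in> DT" using ViD hs by blast
    have TV: "T (Vi (hs n)) = VS (Z (hs n))" for n unfolding T_def using V_Vi[OF hsm] by simp
    have t1: "ctends ipH (\<lambda>n. Vi (hs n)) (Vi x)" by (rule Vi_tends[OF hsm x hx])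
    have t2: "ctends ipH (\<lambda>n. (- \<i>) *\<^sub>C T (Vi (hs n))) ((- \<i>) *\<^sub>C VS y)"
      unfolding TV by (rule HH.ctends_scale[OF VS_in[OF Z_in[OF hs]] VS_in[OF y] VS_tends[OF Z_in[OF hs] y hy]])
    have r: "Vi x \<in> DT \<and> (- \<i>) *\<^sub>C T (Vi x) = (- \<i>) *\<^sub>C VS y"
      by (rule HH.m_diss_closed[OF md DT_sub LV Ld fD Vi_in[OF x] HH.inscale[OF VS_in[OF y]] t1 t2])
    have xD: "x \<in> domZ" using r V_Vi[OF x] unfolding DT_def by simp
    have "T (Vi x) = VS y" using r scaleC_cancel[of "- \<i>" "T (Vi x)" "VS y"] by simp
    then have "VS (Z x) = VS y" unfolding T_def using V_Vi[OF x] by simp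
    then have "Z x = y" using VS_inj[OF Z_in[OF xD] y] by simp
    then show "x \<in> domZ \<and> Z x = y" using xD by simp
  qed
  show ?thesis using mx cl by simp
qed

end

lemma sqrt_sum_le: fixes a b :: real assumes "a \<ge> 0" "b \<ge> 0" shows "sqrt (a\<^sup>2 + b\<^sup>2) \<le> a + b"
proof -
  have "a\<^sup>2 + b\<^sup>2 \<le> (a + b)\<^sup>2" using assms by (simp add: power2_sum)
  then have "sqrt (a\<^sup>2 + b\<^sup>2) \<le> sqrt ((a + b)\<^sup>2)" by (rule real_sqrt_le_mono)
  then show ?thesis using assms by simp
qed

context setting begin

lemma X2_ipo: "inner_product_on UNIV (ip2 ipX)"
  unfolding inner_product_on_def
proof (intro conjI ballI allI impI csubspace_UNIV)
  fix x y z :: "'x \<times> 'x" and c :: complex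
  show "ip2 ipX (x + y) z = ip2 ipX x z + ip2 ipX y z"
    unfolding ip2_def using XX.add_left[of "fst x" "fst y" "fst z"] XX.add_left[of "snd x" "snd y" "snd z"] by simp
  show "ip2 ipX (c *\<^sub>C x) y = c * ip2 ipX x y"
    unfolding ip2_def using XX.scale_left[of "fst x" "fst y" c] XX.scale_left[of "snd x" "snd y" c] by (simp add: distrib_left)
  show "ip2 ipX y x = cnj (ip2 ipX x y)"
    unfolding ip2_def using XX.ipsym[of "fst x" "fst y"] XX.ipsym[of "snd x" "snd y"] by simp
next
  fix x :: "'x \<times> 'x"
  show "0 \<le> Re (ip2 ipX x x)" unfolding ip2_def using XX.pos[of "fst x"] XX.pos[of "snd x"] by simp
  assume "ip2 ipX x x = 0"
  then have "Re (ipX (fst x) (fst x)) + Re (ipX (snd x) (snd x)) = 0" unfolding ip2_def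
    by (metis plus_complex.sel(1) zero_complex.sel(1))
  then have "Re (ipX (fst x) (fst x)) = 0" "Re (ipX (snd x) (snd x)) = 0"
    using XX.pos[of "fst x"] XX.pos[of "snd x"] by auto
  then have "ipX (fst x) (fst x) = 0" "ipX (snd x) (snd x) = 0"
    using XX.self_eq[of "fst x"] XX.self_eq[of "snd x"] by auto
  then have "fst x = 0" "snd x = 0" using XX.definite by auto
  then show "x = 0" by (simp add: prod_eq_iff)
qed

sublocale X2i: ips "UNIV :: ('x \<times> 'x) set" "ip2 ipX" by (rule ips.intro[OF X2_ipo])

lemma X2_nrm_sq: "(X2i.nrm p)\<^sup>2 = (XX.nrm (fst p))\<^sup>2 + (XX.nrm (snd p))\<^sup>2"
proof -
  have "(X2i.nrm p)\<^sup>2 = Re (ip2 ipX p p)" using X2i.nrm_sq[of p] by simp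
  also have "\<dots> = Re (ipX (fst p) (fst p)) + Re (ipX (snd p) (snd p))" by (simp add: ip2_def)
  also have "\<dots> = (XX.nrm (fst p))\<^sup>2 + (XX.nrm (snd p))\<^sup>2" using XX.nrm_sq[of "fst p"] XX.nrm_sq[of "snd p"] by simp
  finally show ?thesis .
qed

lemma X2_fst: "XX.nrm (fst p) \<le> X2i.nrm p"
proof -
  have "(XX.nrm (fst p))\<^sup>2 \<le> (X2i.nrm p)\<^sup>2" using X2_nrm_sq[of p] zero_le_power2[of "XX.nrm (snd p)"] by linarith
  then show ?thesis by (rule power2_le_imp_le[OF _ X2i.nrm_nonneg]) simp
qed
lemma X2_snd: "XX.nrm (snd p) \<le> X2i.nrm p"
proof -
  have "(XX.nrm (snd p))\<^sup>2 \<le> (X2i.nrm p)\<^sup>2" using X2_nrm_sq[of p] zero_le_power2[of "XX.nrm (fst p)"] by linarith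
  then show ?thesis by (rule power2_le_imp_le[OF _ X2i.nrm_nonneg]) simp
qed
lemma X2_le: "X2i.nrm p \<le> XX.nrm (fst p) + XX.nrm (snd p)"
proof -
  have "X2i.nrm p = sqrt ((XX.nrm (fst p))\<^sup>2 + (XX.nrm (snd p))\<^sup>2)"
    using X2_nrm_sq[of p] X2i.nrm_nonneg[of p] by (metis UNIV_I real_sqrt_abs abs_of_nonneg)
  also have "\<dots> \<le> XX.nrm (fst p) + XX.nrm (snd p)" by (rule sqrt_sum_le) (use XX.nrm_nonneg in auto)
  finally show ?thesis .
qed

lemma X2_complete: assumes c: "ccauchy (ip2 ipX) f" shows "\<exists>x. ctends (ip2 ipX) f x"
proof -
  have c1: "ccauchy ipX (\<lambda>n. fst (f n))" unfolding XX.ccauchy_iff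
  proof (intro allI impI)
    fix e :: real assume e: "e > 0"
    then obtain N where N: "\<forall>m\<ge>N. \<forall>n\<ge>N. X2i.nrm (f m - f n) < e" using c unfolding X2i.ccauchy_iff by blast
    show "\<exists>N. \<forall>m\<ge>N. \<forall>n\<ge>N. XX.nrm (fst (f m) - fst (f n)) < e"
    proof (intro exI allI impI)
      fix m n assume "m \<ge> N" "n \<ge> N"
      then have "X2i.nrm (f m - f n) < e" using N by blast
      then show "XX.nrm (fst (f m) - fst (f n)) < e" using X2_fst[of "f m - f n"] by simp
    qed
  qed
  have c2: "ccauchy ipX (\<lambda>n. snd (f n))" unfolding XX.ccauchy_iff
  proof (intro allI impI)
    fix e :: real assume e: "e > 0"
    then obtain N where N: "\<forall>m\<ge>N. \<forall>n\<ge>N. X2i.nrm (f m - f n) < e" using c unfolding X2i.ccauchy_iff by blast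
    show "\<exists>N. \<forall>m\<ge>N. \<forall>n\<ge>N. XX.nrm (snd (f m) - snd (f n)) < e"
    proof (intro exI allI impI)
      fix m n assume "m \<ge> N" "n \<ge> N"
      then have "X2i.nrm (f m - f n) < e" using N by blast
      then show "XX.nrm (snd (f m) - snd (f n)) < e" using X2_snd[of "f m - f n"] by simp
    qed
  qed
  obtain a where a: "ctends ipX (\<lambda>n. fst (f n)) a" using XX.complete[OF _ c1] by blast
  obtain b where b: "ctends ipX (\<lambda>n. snd (f n)) b" using XX.complete[OF _ c2] by blast
  have "ctends (ip2 ipX) f (a, b)"
  proof (rule X2i.ctends_bound)
    fix n show "X2i.nrm (f n - (a, b)) \<le> XX.nrm (fst (f n) - a) + XX.nrm (snd (f n) - b)"
      using X2_le[of "f n - (a, b)"] by simp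
    show "(\<lambda>n. XX.nrm (fst (f n) - a) + XX.nrm (snd (f n) - b)) \<longlonglongrightarrow> 0"
      using a b unfolding XX.ctends_iff using tendsto_add by fastforce
  qed auto
  then show ?thesis by blast
qed

sublocale X2: hs "UNIV :: ('x \<times> 'x) set" "ip2 ipX"
  by (rule hs.intro[OF ips.intro[OF X2_ipo]]) (unfold_locales, use X2_complete in blast)

lemma Sparts: "linear_on UNIV UNIV S" "bounded_on UNIV (ip2 ipX) (ip2 ipX) S"
  "\<And>p q. ip2 ipX (S p) q = ip2 ipX p (S q)"
  "\<exists>c>0. \<forall>p. Re (ip2 ipX (S p) p) \<ge> c * (cnorm (ip2 ipX) p)\<^sup>2"
  using S unfolding bounded_unif_pos_sa_def by blast+

lemma S_add: "S (p + q) = S p + S q" using linear_onD(3)[OF Sparts(1)] by simp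
lemma S_scale: "S (c *\<^sub>C p) = c *\<^sub>C S p" using linear_onD(4)[OF Sparts(1)] by simp
lemma S_diff: "S (p - q) = S p - S q" using linear_on_diff[OF Sparts(1)] by simp
lemma S_0: "S 0 = 0" using linear_on_0[OF Sparts(1)] .
lemma S_sym: "ip2 ipX (S p) q = ip2 ipX p (S q)" by (rule Sparts(3))

definition cs where "cs = (SOME c. c > 0 \<and> (\<forall>p. Re (ip2 ipX (S p) p) \<ge> c * (X2i.nrm p)\<^sup>2))"
lemma cs: "cs > 0" "Re (ip2 ipX (S p) p) \<ge> cs * (X2i.nrm p)\<^sup>2"
proof -
  have "\<exists>c. c > 0 \<and> (\<forall>p. Re (ip2 ipX (S p) p) \<ge> c * (X2i.nrm p)\<^sup>2)"
    using Sparts(4) unfolding X2i.nrm_def by blast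
  then have "cs > 0 \<and> (\<forall>p. Re (ip2 ipX (S p) p) \<ge> cs * (X2i.nrm p)\<^sup>2)" unfolding cs_def by (rule someI_ex)
  then show "cs > 0" "Re (ip2 ipX (S p) p) \<ge> cs * (X2i.nrm p)\<^sup>2" by blast+
qed

definition CS where "CS = (SOME K. K \<ge> 0 \<and> (\<forall>p\<in>UNIV. X2i.nrm (S p) \<le> K * X2i.nrm p))"
lemma CS: "CS \<ge> 0" "X2i.nrm (S p) \<le> CS * X2i.nrm p"
proof -
  obtain C where C: "\<forall>x\<in>UNIV. cnorm (ip2 ipX) (S x) \<le> C * cnorm (ip2 ipX) x" using Sparts(2) unfolding bounded_on_def by blast
  have "\<exists>K\<ge>0. \<forall>p\<in>UNIV. X2i.nrm (S p) \<le> K * X2i.nrm p"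
    by (rule bound_nonneg) (use C X2i.nrm_nonneg in \<open>auto simp: X2i.nrm_def\<close>)
  then have "CS \<ge> 0 \<and> (\<forall>p\<in>UNIV. X2i.nrm (S p) \<le> CS * X2i.nrm p)" unfolding CS_def by (rule someI_ex)
  then show "CS \<ge> 0" "X2i.nrm (S p) \<le> CS * X2i.nrm p" by blast+
qed

lemma S_lower: "cs * X2i.nrm p \<le> X2i.nrm (S p)"
proof (cases "X2i.nrm p = 0")
  case True then show ?thesis using X2i.nrm_nonneg by simp
next
  case False
  then have pos: "X2i.nrm p > 0" using X2i.nrm_nonneg[of p] by (simp add: less_le)
  have "cs * (X2i.nrm p)\<^sup>2 \<le> Re (ip2 ipX (S p) p)" using cs(2) .
  also have "\<dots> \<le> X2i.nrm (S p) * X2i.nrm p" by (rule X2i.Re_le) auto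
  finally have "(cs * X2i.nrm p) * X2i.nrm p \<le> X2i.nrm (S p) * X2i.nrm p" by (simp add: power2_eq_square algebra_simps)
  then show ?thesis using pos by simp
qed

lemma S_inj: "S p = S q \<Longrightarrow> p = q"
proof -
  assume "S p = S q"
  then have "S (p - q) = 0" using S_diff by simp
  then have "cs * X2i.nrm (p - q) \<le> 0" using S_lower[of "p - q"] by simp
  then have "X2i.nrm (p - q) = 0" using cs(1) X2i.nrm_nonneg[of "p - q"] by (simp add: mult_le_0_iff)
  then show "p = q" using X2i.nrm_eq_0[of "p - q"] by simp
qed

lemma S_surj: "\<exists>p. S p = q"
proof -
  define R where "R = range S"
  have Rsub: "csubspace R" unfolding csubspace_def R_def
  proof (intro conjI ballI allI)
    show "0 \<in> range S" using S_0 by (metis rangeI)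
    fix x y assume "x \<in> range S" "y \<in> range S"
    then obtain a b where "x = S a" "y = S b" by blast
    then have "x + y = S (a + b)" using S_add by simp
    then show "x + y \<in> range S" by simp
  next
    fix c x assume "x \<in> range S"
    then obtain a where "x = S a" by blast
    then have "c *\<^sub>C x = S (c *\<^sub>C a)" using S_scale by simp
    then show "c *\<^sub>C x \<in> range S" by simp
  qed
  have Rclosed: "x \<in> R" if f: "\<forall>n. f n \<in> R" and fx: "ctends (ip2 ipX) f x" for f x
  proof -
    have "\<forall>n. \<exists>p. f n = S p" using f R_def by blast
    then obtain ps where ps: "\<And>n. f n = S (ps n)" by metis
    have cf: "ccauchy (ip2 ipX) f" by (rule X2i.ctends_cauchy[OF _ _ fx]) auto
    have "ccauchy (ip2 ipX) ps" unfolding X2i.ccauchy_iff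
    proof (intro allI impI)
      fix e :: real assume e: "e > 0"
      obtain N where N: "\<forall>m\<ge>N. \<forall>n\<ge>N. X2i.nrm (f m - f n) < cs * e"
        using cf cs(1) e unfolding X2i.ccauchy_iff by (meson mult_pos_pos)
      show "\<exists>N. \<forall>m\<ge>N. \<forall>n\<ge>N. X2i.nrm (ps m - ps n) < e"
      proof (intro exI allI impI)
        fix m n assume mn: "m \<ge> N" "n \<ge> N"
        have "cs * X2i.nrm (ps m - ps n) \<le> X2i.nrm (S (ps m - ps n))" by (rule S_lower)
        also have "S (ps m - ps n) = f m - f n" using S_diff ps by simp
        finally have "cs * X2i.nrm (ps m - ps n) < cs * e" using N mn by fastforce
        then show "X2i.nrm (ps m - ps n) < e" using cs(1) by simp
      qed
    qed
    then obtain p where p: "ctends (ip2 ipX) ps p" using X2.complete[of ps] by blast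
    have "ctends (ip2 ipX) f (S p)"
    proof (rule X2i.ctends_bound)
      fix n show "X2i.nrm (f n - S p) \<le> CS * X2i.nrm (ps n - p)" using CS(2)[of "ps n - p"] S_diff ps by simp
      show "(\<lambda>n. CS * X2i.nrm (ps n - p)) \<longlonglongrightarrow> 0" using tendsto_mult_right_zero p X2i.ctends_iff by blast
    qed auto
    then have "x = S p" using X2i.ctends_unique[OF _ _ _ fx] by blast
    then show ?thesis using R_def by simp
  qed
  have orth: "u = 0" if "\<forall>r\<in>R. ip2 ipX r u = 0" for u
  proof -
    have "S u \<in> R" unfolding R_def by simp
    then have "ip2 ipX (S u) u = 0" using that by blast
    then have "cs * (X2i.nrm u)\<^sup>2 \<le> 0" using cs(2)[of u] by simp
    then have "X2i.nrm u = 0" using cs(1) by (simp add: mult_le_0_iff)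
    then show "u = 0" using X2i.nrm_eq_0 by simp
  qed
  have "R = UNIV" by (rule X2.orth_complete[OF _ Rsub Rclosed orth]) auto
  then show ?thesis unfolding R_def by (metis UNIV_I imageE)
qed

lemma S_inv1: "S (inv S q) = q" using S_surj by (metis f_inv_into_f rangeI)
lemma S_inv2: "inv S (S p) = p" using S_inj by (metis inv_f_f injI)
lemma Sinv_diff: "inv S (a - b) = inv S a - inv S b" by (rule S_inj) (simp add: S_inv1 S_diff)
lemma Sinv_add: "inv S (a + b) = inv S a + inv S b" by (rule S_inj) (simp add: S_inv1 S_add)
lemma Sinv_scale: "inv S (c *\<^sub>C a) = c *\<^sub>C inv S a" by (rule S_inj) (simp add: S_inv1 S_scale)

lemma XS_ipo: "inner_product_on UNIV (ipS ipX S)"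
  unfolding inner_product_on_def ipS_def
proof (intro conjI ballI allI impI csubspace_UNIV)
  fix x y z :: "'x \<times> 'x" and c :: complex
  show "ip2 ipX (S (x + y)) z = ip2 ipX (S x) z + ip2 ipX (S y) z" unfolding S_add by (rule X2i.add_left) auto
  show "ip2 ipX (S (c *\<^sub>C x)) y = c * ip2 ipX (S x) y" unfolding S_scale by (rule X2i.scale_left) auto
  have "ip2 ipX (S y) x = ip2 ipX y (S x)" by (rule S_sym)
  also have "\<dots> = cnj (ip2 ipX (S x) y)" by (rule X2i.ipsym) auto
  finally show "ip2 ipX (S y) x = cnj (ip2 ipX (S x) y)" .
next
  fix x :: "'x \<times> 'x"
  have "0 \<le> cs * (X2i.nrm x)\<^sup>2" using cs(1) by simp
  then show "0 \<le> Re (ip2 ipX (S x) x)" using cs(2)[of x] by linarith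
  assume "ip2 ipX (S x) x = 0"
  then have "cs * (X2i.nrm x)\<^sup>2 \<le> 0" using cs(2)[of x] by simp
  then have "X2i.nrm x = 0" using cs(1) by (simp add: mult_le_0_iff)
  then show "x = 0" using X2i.nrm_eq_0 by simp
qed

sublocale XSi: ips "UNIV :: ('x \<times> 'x) set" "ipS ipX S" by (rule ips.intro[OF XS_ipo])

lemma XS_sq: "(XSi.nrm p)\<^sup>2 = Re (ip2 ipX (S p) p)" using XSi.nrm_sq[of p] unfolding ipS_def by simp
lemma XS_lower: "sqrt cs * X2i.nrm p \<le> XSi.nrm p"
proof -
  have "(sqrt cs * X2i.nrm p)\<^sup>2 \<le> (XSi.nrm p)\<^sup>2" using cs XS_sq[of p] by (simp add: power_mult_distrib)
  then show ?thesis by (rule power2_le_imp_le[OF _ XSi.nrm_nonneg]) simp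
qed
lemma XS_upper: "XSi.nrm p \<le> sqrt CS * X2i.nrm p"
proof -
  have "(XSi.nrm p)\<^sup>2 \<le> X2i.nrm (S p) * X2i.nrm p" using XS_sq[of p] X2i.Re_le[of "S p" p] by simp
  also have "\<dots> \<le> (CS * X2i.nrm p) * X2i.nrm p" using CS(2)[of p] X2i.nrm_nonneg[of p] by (simp add: mult_right_mono)
  also have "\<dots> = (sqrt CS * X2i.nrm p)\<^sup>2" using CS(1) by (simp add: power_mult_distrib power2_eq_square)
  finally have "(XSi.nrm p)\<^sup>2 \<le> (sqrt CS * X2i.nrm p)\<^sup>2" .
  then show ?thesis by (rule power2_le_imp_le) (use CS(1) X2i.nrm_nonneg[of p] in simp)
qed

lemma XS_complete: assumes c: "ccauchy (ipS ipX S) f" shows "\<exists>x. ctends (ipS ipX S) f x"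
proof -
  have c2: "ccauchy (ip2 ipX) f" unfolding X2i.ccauchy_iff
  proof (intro allI impI)
    fix e :: real assume e: "e > 0"
    have sc: "sqrt cs > 0" using cs(1) by simp
    obtain N where N: "\<forall>m\<ge>N. \<forall>n\<ge>N. XSi.nrm (f m - f n) < sqrt cs * e"
      using c sc e unfolding XSi.ccauchy_iff by (meson mult_pos_pos)
    show "\<exists>N. \<forall>m\<ge>N. \<forall>n\<ge>N. X2i.nrm (f m - f n) < e"
    proof (intro exI allI impI)
      fix m n assume "m \<ge> N" "n \<ge> N"
      then have "sqrt cs * X2i.nrm (f m - f n) < sqrt cs * e" using N XS_lower[of "f m - f n"] by fastforce
      then show "X2i.nrm (f m - f n) < e" using sc by simp
    qed
  qed
  obtain x where x: "ctends (ip2 ipX) f x" using X2.complete[of f] c2 by blast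
  have "ctends (ipS ipX S) f x"
  proof (rule XSi.ctends_bound)
    fix n show "XSi.nrm (f n - x) \<le> sqrt CS * X2i.nrm (f n - x)" by (rule XS_upper)
    show "(\<lambda>n. sqrt CS * X2i.nrm (f n - x)) \<longlonglongrightarrow> 0" using tendsto_mult_right_zero x X2i.ctends_iff by blast
  qed auto
  then show ?thesis by blast
qed

sublocale XS: hs "UNIV :: ('x \<times> 'x) set" "ipS ipX S"
  by (rule hs.intro[OF ips.intro[OF XS_ipo]]) (unfold_locales, use XS_complete in blast)

end

context setting begin

lemma Aparts: "linear_on domA UNIV A" "dense_in ipX UNIV domA" "\<And>f g. f \<in> domA \<Longrightarrow> g \<in> domA \<Longrightarrow> ipX (A f) g = ipX f (A g)"
  using A unfolding closed_dd_symmetric_def by blast+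

lemma domA_sub: "csubspace domA" using linear_onD(1)[OF Aparts(1)] .
lemma A_diff: "f \<in> domA \<Longrightarrow> g \<in> domA \<Longrightarrow> A (f - g) = A f - A g" using linear_on_diff[OF Aparts(1)] by blast
lemma A_0: "A 0 = 0" using linear_on_0[OF Aparts(1)] .

lemma A_dense: "e > 0 \<Longrightarrow> \<exists>d\<in>domA. XX.nrm (x - d) < e"
  using Aparts(2) unfolding dense_in_def XX.nrm_def by blast

lemma adj_uniq: assumes "\<And>f. f \<in> domA \<Longrightarrow> ipX f h1 = ipX f h2" shows "h1 = h2"
proof -
  define d where "d = h1 - h2"
  have d0: "ipX f d = 0" if "f \<in> domA" for f unfolding d_def using XX.diff_right assms[OF that] by simp
  have le: "XX.nrm d \<le> e" if e: "e > 0" for e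
  proof (cases "XX.nrm d = 0")
    case True then show ?thesis using e by simp
  next
    case False
    then have pos: "XX.nrm d > 0" using XX.nrm_nonneg[of d] by (simp add: less_le)
    obtain f where f: "f \<in> domA" "XX.nrm (d - f) < e" using A_dense[OF e] by blast
    have "(XX.nrm d)\<^sup>2 = Re (ipX d d)" by (rule XX.nrm_sq) simp
    also have "ipX d d = ipX (d - f) d + ipX f d" using XX.diff_left[of d f d] by simp
    also have "Re (ipX (d - f) d + ipX f d) = Re (ipX (d - f) d)" using d0[OF f(1)] by simp
    also have "\<dots> \<le> XX.nrm (d - f) * XX.nrm d" by (rule XX.Re_le) auto
    also have "\<dots> \<le> e * XX.nrm d" using f(2) pos by simp
    finally have "XX.nrm d * XX.nrm d \<le> e * XX.nrm d" by (simp add: power2_eq_square)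
    then show ?thesis using pos by simp
  qed
  have "XX.nrm d \<le> 0"
  proof (rule field_le_epsilon)
    fix e :: real assume "0 < e"
    then have "XX.nrm d \<le> e" by (rule le)
    then show "XX.nrm d \<le> 0 + e" by simp
  qed
  then have "d = 0" using XX.nrm_nonneg[of d] XX.nrm_eq_0[of d] by simp
  then show ?thesis unfolding d_def by simp
qed

abbreviation "AD \<equiv> adj_dom ipX domA A"
abbreviation "As \<equiv> adj ipX domA A"

lemma adj_intro: assumes "\<And>f. f \<in> domA \<Longrightarrow> ipX (A f) g = ipX f h" shows "g \<in> AD" "As g = h"
proof -
  show "g \<in> AD" unfolding adj_dom_def using assms by blast
  show "As g = h" unfolding adj_def
    by (rule the_equality) (use assms adj_uniq in auto)
qed

lemma adj_char: assumes "g \<in> AD" "f \<in> domA" shows "ipX (A f) g = ipX f (As g)"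
proof -
  obtain h where h: "\<forall>f\<in>domA. ipX (A f) g = ipX f h" using assms(1) unfolding adj_dom_def by blast
  then have "As g = h" using adj_intro(2)[of g h] by blast
  then show ?thesis using h assms(2) by simp
qed

lemma AD_sub: "csubspace AD" and As_diff: "f \<in> AD \<Longrightarrow> g \<in> AD \<Longrightarrow> As (f - g) = As f - As g"
  and As_scale: "f \<in> AD \<Longrightarrow> As (c *\<^sub>C f) = c *\<^sub>C As f"
  and As_add: "f \<in> AD \<Longrightarrow> g \<in> AD \<Longrightarrow> As (f + g) = As f + As g"
proof -
  have add: "f + g \<in> AD \<and> As (f + g) = As f + As g" if "f \<in> AD" "g \<in> AD" for f g
  proof -
    have "\<And>u. u \<in> domA \<Longrightarrow> ipX (A u) (f + g) = ipX u (As f + As g)"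
      using adj_char that XX.add_right by simp
    then show ?thesis using adj_intro by blast
  qed
  have scl: "c *\<^sub>C f \<in> AD \<and> As (c *\<^sub>C f) = c *\<^sub>C As f" if "f \<in> AD" for f c
  proof -
    have "\<And>u. u \<in> domA \<Longrightarrow> ipX (A u) (c *\<^sub>C f) = ipX u (c *\<^sub>C As f)"
      using adj_char that XX.scale_right by simp
    then show ?thesis using adj_intro by blast
  qed
  have z: "0 \<in> AD" using scl[of 0 0] adj_intro(1)[of 0 0] by simp
  show "csubspace AD" unfolding csubspace_def using add scl z by blast
  show "f \<in> AD \<Longrightarrow> g \<in> AD \<Longrightarrow> As (f + g) = As f + As g" using add by blast
  show "f \<in> AD \<Longrightarrow> As (c *\<^sub>C f) = c *\<^sub>C As f" using scl by blast
  show "f \<in> AD \<Longrightarrow> g \<in> AD \<Longrightarrow> As (f - g) = As f - As g"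
    using add[of f "(-1) *\<^sub>C g"] scl[of g "-1"] by (simp add: scaleC_minus1)
qed

lemma domA_AD: assumes "f \<in> domA" shows "f \<in> AD" "As f = A f"
  using adj_intro[of f "A f"] Aparts(3)[OF _ assms] by auto

lemma As_0: "As 0 = 0" using domA_AD(2)[OF csubspace_0[OF domA_sub]] A_0 by simp

lemma Rparts: "linear_on AD Hmp G" "G ` AD = Hmp" "lin_homeo Hmp ipMP Hpm ipPM W"
  "\<And>f g. f \<in> AD \<Longrightarrow> g \<in> AD \<Longrightarrow> ipX (As f) g - ipX f (As g) = pair (G f) (W (G g))"
  using red unfolding reduction_tuple_def by blast+

lemma G_in: "f \<in> AD \<Longrightarrow> G f \<in> Hmp" using linear_onD(2)[OF Rparts(1)] .
lemma G_add: "f \<in> AD \<Longrightarrow> g \<in> AD \<Longrightarrow> G (f + g) = G f + G g" using linear_onD(3)[OF Rparts(1)] .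
lemma G_scale: "f \<in> AD \<Longrightarrow> G (c *\<^sub>C f) = c *\<^sub>C G f" using linear_onD(4)[OF Rparts(1)] .
lemma G_diff: "f \<in> AD \<Longrightarrow> g \<in> AD \<Longrightarrow> G (f - g) = G f - G g" using linear_on_diff[OF Rparts(1)] .
lemma G_onto: "h \<in> Hmp \<Longrightarrow> \<exists>f\<in>AD. G f = h" using Rparts(2) by (metis imageE)
lemma green: "f \<in> AD \<Longrightarrow> g \<in> AD \<Longrightarrow> ipX (As f) g - ipX f (As g) = pair (G f) (W (G g))" by (rule Rparts(4))

lemma Wparts: "linear_on Hmp Hpm W" "bij_betw W Hmp Hpm" using Rparts(3) unfolding lin_homeo_def by blast+
lemma W_in: "h \<in> Hmp \<Longrightarrow> W h \<in> Hpm" using linear_onD(2)[OF Wparts(1)] .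
lemma W_add: "f \<in> Hmp \<Longrightarrow> g \<in> Hmp \<Longrightarrow> W (f + g) = W f + W g" using linear_onD(3)[OF Wparts(1)] .
lemma W_scale: "f \<in> Hmp \<Longrightarrow> W (c *\<^sub>C f) = c *\<^sub>C W f" using linear_onD(4)[OF Wparts(1)] .
lemma W_diff: "f \<in> Hmp \<Longrightarrow> g \<in> Hmp \<Longrightarrow> W (f - g) = W f - W g" using linear_on_diff[OF Wparts(1)] .
lemma W_0: "W 0 = 0" using linear_on_0[OF Wparts(1)] .
lemma W_onto: "k \<in> Hpm \<Longrightarrow> \<exists>h\<in>Hmp. W h = k" using Wparts(2) unfolding bij_betw_def by (metis imageE)

lemma lift: assumes "h \<in> Hmp" "k \<in> Hpm" shows "\<exists>p\<in>AD \<times> AD. G (snd p) = h \<and> W (G (fst p)) = k"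
proof -
  obtain a where a: "a \<in> Hmp" "W a = k" using W_onto[OF assms(2)] by blast
  obtain p1 where p1: "p1 \<in> AD" "G p1 = a" using G_onto[OF a(1)] by blast
  obtain p2 where p2: "p2 \<in> AD" "G p2 = h" using G_onto[OF assms(1)] by blast
  show ?thesis using p1 p2 a by (intro bexI[of _ "(p1, p2)"]) auto
qed

lemma G0: assumes f: "f \<in> domA" shows "G f = 0"
proof (rule ND1[OF G_in[OF domA_AD(1)[OF f]]])
  fix k assume k: "k \<in> Hpm"
  obtain h where h: "h \<in> Hmp" "W h = k" using W_onto[OF k] by blast
  obtain g where g: "g \<in> AD" "G g = h" using G_onto[OF h(1)] by blast
  have "pair (G f) (W (G g)) = ipX (As f) g - ipX f (As g)" using green[OF domA_AD(1)[OF f] g(1)] by simp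
  also have "\<dots> = 0" using domA_AD(2)[OF f] adj_char[OF g(1) f] by simp
  finally show "pair (G f) k = 0" using g h by simp
qed

abbreviation "MSt \<equiv> Mstar ipX domA A S"
abbreviation "DMr \<equiv> dom_MGr ipX domA A G W domZ Z"

lemma MS_def2: "MSt p = inv S (\<i> *\<^sub>C As (snd p), (- \<i>) *\<^sub>C As (fst p))" unfolding Mstar_def ..
lemma S_MS: "S (MSt p) = (\<i> *\<^sub>C As (snd p), (- \<i>) *\<^sub>C As (fst p))" unfolding MS_def2 by (rule S_inv1)

lemma MS_diff: assumes "p \<in> AD \<times> AD" "q \<in> AD \<times> AD" shows "MSt (p - q) = MSt p - MSt q"
proof (rule S_inj)
  show "S (MSt (p - q)) = S (MSt p - MSt q)" unfolding S_diff S_MS using assms As_diff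
    by (auto simp: scaleC_diff_right)
qed
lemma MS_add: assumes "p \<in> AD \<times> AD" "q \<in> AD \<times> AD" shows "MSt (p + q) = MSt p + MSt q"
proof (rule S_inj)
  show "S (MSt (p + q)) = S (MSt p + MSt q)" unfolding S_add S_MS using assms As_add
    by (auto simp: scaleC_add_right)
qed
lemma MS_scale: assumes "p \<in> AD \<times> AD" shows "MSt (c *\<^sub>C p) = c *\<^sub>C MSt p"
proof (rule S_inj)
  show "S (MSt (c *\<^sub>C p)) = S (c *\<^sub>C MSt p)" unfolding S_scale S_MS using assms As_scale
    by (auto simp: scaleC_scaleC mult.commute)
qed

lemma ADxAD_sub: "csubspace (AD \<times> AD)"
  using AD_sub unfolding csubspace_def by (auto simp: mem_Times_iff)

lemma IMF: assumes p: "p \<in> AD \<times> AD" shows "Im (ipS ipX S (MSt p) p) = Re (pair (G (snd p)) (W (G (fst p))))"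
proof -
  have p1: "fst p \<in> AD" and p2: "snd p \<in> AD" using p by auto
  have "ipS ipX S (MSt p) p = ipX (\<i> *\<^sub>C As (snd p)) (fst p) + ipX ((- \<i>) *\<^sub>C As (fst p)) (snd p)"
    unfolding ipS_def S_MS ip2_def by simp
  also have "\<dots> = \<i> * ipX (As (snd p)) (fst p) - \<i> * ipX (As (fst p)) (snd p)"
    using XX.scale_left by simp
  finally have e: "Im (ipS ipX S (MSt p) p) = Re (ipX (As (snd p)) (fst p)) - Re (ipX (As (fst p)) (snd p))" by simp
  have "Re (ipX (As (fst p)) (snd p)) = Re (ipX (snd p) (As (fst p)))" using XX.ipsym[of "As (fst p)" "snd p"] by simp
  moreover have "Re (ipX (As (snd p)) (fst p)) - Re (ipX (snd p) (As (fst p))) = Re (pair (G (snd p)) (W (G (fst p))))"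
    using arg_cong[OF green[OF p2 p1], of Re] by simp
  ultimately show ?thesis using e by simp
qed

lemma SYM: assumes phi: "phi \<in> domA \<times> domA" and psi: "psi \<in> AD \<times> AD"
  shows "ipS ipX S (MSt phi) psi = ipS ipX S phi (MSt psi)"
proof -
  have a1: "As (fst phi) = A (fst phi)" "As (snd phi) = A (snd phi)" using domA_AD(2) phi by auto
  have "ipS ipX S (MSt phi) psi = \<i> * ipX (A (snd phi)) (fst psi) - \<i> * ipX (A (fst phi)) (snd psi)"
    unfolding ipS_def S_MS ip2_def a1 using XX.scale_left by simp
  also have "\<dots> = \<i> * ipX (snd phi) (As (fst psi)) - \<i> * ipX (fst phi) (As (snd psi))"
    using adj_char phi psi by auto
  also have "\<dots> = ip2 ipX phi (S (MSt psi))"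
    unfolding S_MS ip2_def using XX.scale_right by simp
  also have "\<dots> = ipS ipX S phi (MSt psi)" unfolding ipS_def by (rule S_sym[symmetric])
  finally show ?thesis .
qed

lemma ADJ: assumes h: "\<And>phi. phi \<in> domA \<times> domA \<Longrightarrow> ipS ipX S (MSt phi) psi = ipS ipX S phi eta"
  shows "psi \<in> AD \<times> AD" "MSt psi = eta"
proof -
  define s where "s = S eta"
  have e: "ipS ipX S phi eta = ipX (fst phi) (fst s) + ipX (snd phi) (snd s)" for phi
  proof -
    have "ipS ipX S phi eta = ip2 ipX phi (S eta)" unfolding ipS_def by (rule S_sym)
    then show ?thesis unfolding s_def ip2_def .
  qed
  have z: "0 \<in> domA" using domA_sub csubspace_0 by blast
  have c1: "ipX (A f) (fst psi) = ipX f (\<i> *\<^sub>C snd s)" if f: "f \<in> domA" for f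
  proof -
    have "ipS ipX S (MSt (0, f)) psi = \<i> * ipX (A f) (fst psi)"
      unfolding ipS_def S_MS ip2_def using domA_AD(2)[OF f] As_0 XX.scale_left by simp
    moreover have "ipS ipX S (MSt (0, f)) psi = ipX f (snd s)" using h[of "(0, f)"] f z e by simp
    ultimately have "\<i> * ipX (A f) (fst psi) = ipX f (snd s)" by simp
    then have "ipX (A f) (fst psi) = (- \<i>) * ipX f (snd s)"
      by (metis (no_types, lifting) complex_i_mult_minus mult.assoc mult_minus_left mult_1 minus_minus i_squared)
    then show ?thesis using XX.scale_right by simp
  qed
  have c2: "ipX (A f) (snd psi) = ipX f ((- \<i>) *\<^sub>C fst s)" if f: "f \<in> domA" for f
  proof -
    have "ipS ipX S (MSt (f, 0)) psi = (- \<i>) * ipX (A f) (snd psi)"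
      unfolding ipS_def S_MS ip2_def using domA_AD(2)[OF f] As_0 XX.scale_left by simp
    moreover have "ipS ipX S (MSt (f, 0)) psi = ipX f (fst s)" using h[of "(f, 0)"] f z e by simp
    ultimately have "(- \<i>) * ipX (A f) (snd psi) = ipX f (fst s)" by simp
    then have "ipX (A f) (snd psi) = \<i> * ipX f (fst s)"
      by (metis (no_types, lifting) complex_i_mult_minus mult.assoc mult_minus_left mult_1 minus_minus i_squared)
    then show ?thesis using XX.scale_right by simp
  qed
  have p1: "fst psi \<in> AD" "As (fst psi) = \<i> *\<^sub>C snd s" using adj_intro[of "fst psi"] c1 by blast+
  have p2: "snd psi \<in> AD" "As (snd psi) = (- \<i>) *\<^sub>C fst s" using adj_intro[of "snd psi"] c2 by blast+
  show "psi \<in> AD \<times> AD" using p1 p2 by (simp add: mem_Times_iff)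
  have "S (MSt psi) = S eta" unfolding S_MS p1(2) p2(2) s_def[symmetric]
    by (simp add: scaleC_scaleC scaleC_one prod_eq_iff)
  then show "MSt psi = eta" by (rule S_inj)
qed

lemma DM_char: "p \<in> DMr \<longleftrightarrow> p \<in> AD \<times> AD \<and> G (snd p) \<in> domZ \<and> W (G (fst p)) = - Z (G (snd p))"
proof -
  have "\<i> *\<^sub>C a + \<i> *\<^sub>C b = 0 \<longleftrightarrow> b = - a" for a b :: 'h
  proof
    assume "\<i> *\<^sub>C a + \<i> *\<^sub>C b = 0"
    then have "\<i> *\<^sub>C (a + b) = \<i> *\<^sub>C 0" by (simp add: scaleC_add_right)
    then have "a + b = 0" using scaleC_cancel[of \<i> "a + b" 0] by simp
    then show "b = - a" by (simp add: eq_neg_iff_add_eq_0 add.commute)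
  next
    assume "b = - a" then show "\<i> *\<^sub>C a + \<i> *\<^sub>C b = 0" by (simp add: scaleC_minus_right)
  qed
  then show ?thesis unfolding dom_MGr_def by auto
qed

lemma DM_sub: "csubspace DMr"
  unfolding csubspace_def
proof (intro conjI ballI allI)
  have z: "(0::'x \<times> 'x) \<in> AD \<times> AD" using csubspace_0[OF ADxAD_sub] .
  show "0 \<in> DMr" unfolding DM_char using z G_diff[of 0 0] Z_diff csubspace_0[OF domZ_sub] W_0
    by (simp add: G_diff[of 0 0, simplified] linear_on_0[OF Rparts(1)] linear_on_0[OF Z2])
  fix p q assume p: "p \<in> DMr" and q: "q \<in> DMr"
  have pa: "fst p \<in> AD" "snd p \<in> AD" and qa: "fst q \<in> AD" "snd q \<in> AD" using p q DM_char by auto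
  show "p + q \<in> DMr" unfolding DM_char
    using p q pa qa AD_sub csubspace_add[OF AD_sub] csubspace_add[OF domZ_sub] G_add W_add G_in Z_add
    by (auto simp: DM_char mem_Times_iff)
next
  fix c p assume p: "p \<in> DMr"
  have pa: "fst p \<in> AD" "snd p \<in> AD" using p DM_char by auto
  show "c *\<^sub>C p \<in> DMr" unfolding DM_char
    using p pa csubspace_scale[OF AD_sub] csubspace_scale[OF domZ_sub] G_scale W_scale G_in Z_scale
    by (auto simp: DM_char mem_Times_iff scaleC_minus_right)
qed

lemma domA2_DM: "p \<in> domA \<times> domA \<Longrightarrow> p \<in> DMr"
  unfolding DM_char using domA_AD(1) G0 W_0 csubspace_0[OF domZ_sub] linear_on_0[OF Z2]
  by (auto simp: mem_Times_iff)

lemma DM_AD: "p \<in> DMr \<Longrightarrow> p \<in> AD \<times> AD" using DM_char by blast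

lemma diss_DM: assumes acc: "accretive_Z pair domZ Z" and p: "p \<in> DMr"
  shows "Im (ipS ipX S (MSt p) p) \<le> 0"
proof -
  have "Im (ipS ipX S (MSt p) p) = Re (pair (G (snd p)) (- Z (G (snd p))))"
    using IMF[OF DM_AD[OF p]] p DM_char by simp
  also have "\<dots> = - Re (pair (G (snd p)) (Z (G (snd p))))"
    using pair_minus2 G_in Z_in p DM_char by (simp add: mem_Times_iff)
  finally show ?thesis using acc p DM_char unfolding accretive_Z_def by simp
qed

end

context setting begin

lemma Lm:
  assumes m: "m_dissipative UNIV (ipS ipX S) DMr MSt" and h0: "h0 \<in> Hmp" and k0: "k0 \<in> Hpm"
    and acc: "\<And>h c. h \<in> domZ \<Longrightarrow> Re (pair (h + c *\<^sub>C h0) (Z h + c *\<^sub>C k0)) \<ge> 0"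
  shows "h0 \<in> domZ \<and> Z h0 = k0"
proof -
  obtain psi where psi: "psi \<in> AD \<times> AD" "G (snd psi) = h0" "W (G (fst psi)) = - k0"
    using lift[OF h0 PM.inminus[OF k0]] by blast
  have zi: "Im \<i> > 0" by simp
  have bij: "bij_betw (\<lambda>p. MSt p - \<i> *\<^sub>C p) DMr UNIV" using m zi unfolding m_dissipative_def by blast
  then have "MSt psi - \<i> *\<^sub>C psi \<in> (\<lambda>p. MSt p - \<i> *\<^sub>C p) ` DMr" unfolding bij_betw_def by simp
  then obtain phi where phi: "phi \<in> DMr" "MSt psi - \<i> *\<^sub>C psi = MSt phi - \<i> *\<^sub>C phi" by (rule imageE)
  have phiA: "phi \<in> AD \<times> AD" using DM_AD[OF phi(1)] .
  define h where "h = G (snd phi)"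
  have hZ: "h \<in> domZ" and Wphi: "W (G (fst phi)) = - Z h" using phi(1) DM_char h_def by auto
  define chi where "chi = psi - phi"
  have chiA: "chi \<in> AD \<times> AD" unfolding chi_def using csubspace_diff[OF ADxAD_sub psi(1) phiA] .
  have "MSt chi - \<i> *\<^sub>C chi = (MSt psi - \<i> *\<^sub>C psi) - (MSt phi - \<i> *\<^sub>C phi)"
    unfolding chi_def MS_diff[OF psi(1) phiA] by (simp add: scaleC_diff_right algebra_simps)
  then have Mchi: "MSt chi = \<i> *\<^sub>C chi" using phi(2) by simp
  have p1: "fst psi \<in> AD" "snd psi \<in> AD" "fst phi \<in> AD" "snd phi \<in> AD" using psi(1) phiA by auto
  have Gs: "G (snd chi) = - h + 1 *\<^sub>C h0" unfolding chi_def h_def using G_diff[OF p1(2) p1(4)] psi(2)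
    by (simp add: scaleC_one)
  have Gf: "W (G (fst chi)) = - (Z (- h) + 1 *\<^sub>C k0)"
    unfolding chi_def using G_diff[OF p1(1) p1(3)] W_diff[OF G_in[OF p1(1)] G_in[OF p1(3)]] psi(3) Wphi
      linear_on_minus[OF Z2 hZ] by (simp add: scaleC_one)
  have mh: "- h \<in> domZ" using csubspace_minus[OF domZ_sub hZ] .
  have "Im (ipS ipX S (MSt chi) chi) = Re (pair (G (snd chi)) (W (G (fst chi))))" by (rule IMF[OF chiA])
  also have "\<dots> = - Re (pair (- h + 1 *\<^sub>C h0) (Z (- h) + 1 *\<^sub>C k0))"
    unfolding Gs Gf using pair_minus2[OF MP.inadd[OF domZ_in[OF mh] MP.inscale[OF h0]] PM.inadd[OF Z_in[OF mh] PM.inscale[OF k0]]]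
    by simp
  finally have le: "Im (ipS ipX S (MSt chi) chi) \<le> 0" using acc[OF mh, of 1] by simp
  have "ipS ipX S (MSt chi) chi = \<i> * complex_of_real ((XSi.nrm chi)\<^sup>2)"
    unfolding Mchi using XSi.scale_left[of chi chi \<i>] XSi.ip_self_nrm[of chi] by simp
  then have "(XSi.nrm chi)\<^sup>2 \<le> 0" using le by simp
  then have "chi = 0" using XSi.nrm_eq_0[of chi] by simp
  then have "psi = phi" unfolding chi_def by simp
  then show ?thesis using phi(1) psi DM_char by auto
qed

theorem MtoZ:
  assumes m: "m_dissipative UNIV (ipS ipX S) DMr MSt"
  shows "max_accretive_Z Hmp Hpm pair domZ Z \<and> closed_op Hmp ipMP Hpm ipPM domZ Z"
proof -
  have diss: "Im (ipS ipX S (MSt p) p) \<le> 0" if "p \<in> DMr" for p by (rule XSi.diss_of_m[OF m that]) simp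
  have accZ: "accretive_Z pair domZ Z" unfolding accretive_Z_def
  proof
    fix h assume h: "h \<in> domZ"
    obtain p where p: "p \<in> AD \<times> AD" "G (snd p) = h" "W (G (fst p)) = - Z h"
      using lift[OF domZ_in[OF h] PM.inminus[OF Z_in[OF h]]] by blast
    have pD: "p \<in> DMr" using p h DM_char by simp
    have "Im (ipS ipX S (MSt p) p) = Re (pair h (- Z h))" using IMF[OF p(1)] p by simp
    also have "\<dots> = - Re (pair h (Z h))" using pair_minus2[OF domZ_in[OF h] Z_in[OF h]] by simp
    finally show "0 \<le> Re (cnj (pair h (Z h)))" using diss[OF pD] by simp
  qed
  have mx: "max_accretive_Z Hmp Hpm pair domZ Z" unfolding max_accretive_Z_def
  proof (intro conjI accZ allI impI)
    fix D' Z' assume a: "D' \<subseteq> Hmp \<and> linear_on D' Hpm Z' \<and> domZ \<subseteq> D' \<and> (\<forall>h\<in>domZ. Z' h = Z h) \<and> accretive_Z pair D' Z'"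
    then have D'H: "D' \<subseteq> Hmp" and lin: "linear_on D' Hpm Z'" and dD: "domZ \<subseteq> D'" and ZZ: "\<And>h. h \<in> domZ \<Longrightarrow> Z' h = Z h"
      and acc': "accretive_Z pair D' Z'" by auto
    show "D' = domZ"
    proof
      show "D' \<subseteq> domZ"
      proof
        fix h0 assume h0: "h0 \<in> D'"
        have "h0 \<in> domZ \<and> Z h0 = Z' h0"
        proof (rule Lm[OF m])
          show "h0 \<in> Hmp" using h0 D'H by blast
          show "Z' h0 \<in> Hpm" using linear_onD(2)[OF lin h0] .
          fix h c assume h: "h \<in> domZ"
          have hD: "h \<in> D'" using h dD by blast
          have xD: "h + c *\<^sub>C h0 \<in> D'" using csubspace_add[OF linear_onD(1)[OF lin] hD csubspace_scale[OF linear_onD(1)[OF lin] h0]] .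
          have "Z' (h + c *\<^sub>C h0) = Z h + c *\<^sub>C Z' h0"
            using linear_onD(3)[OF lin hD csubspace_scale[OF linear_onD(1)[OF lin] h0]] linear_onD(4)[OF lin h0] ZZ[OF h] by simp
          moreover have "0 \<le> Re (cnj (pair (h + c *\<^sub>C h0) (Z' (h + c *\<^sub>C h0))))" using acc' xD unfolding accretive_Z_def by blast
          ultimately show "0 \<le> Re (pair (h + c *\<^sub>C h0) (Z h + c *\<^sub>C Z' h0))" by simp
        qed
        then show "h0 \<in> domZ" by blast
      qed
    qed (rule dD)
  qed
  have cl: "closed_op Hmp ipMP Hpm ipPM domZ Z"
  proof (rule closed_opI)
    fix hs x y assume hs: "\<And>n. hs n \<in> domZ" and x: "x \<in> Hmp" and y: "y \<in> Hpm"
      and hx: "ctends ipMP hs x" and hy: "ctends ipPM (\<lambda>n. Z (hs n)) y"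
    show "x \<in> domZ \<and> Z x = y"
    proof (rule Lm[OF m x y])
      fix h c assume h: "h \<in> domZ"
      have hm: "h \<in> Hmp" using domZ_in[OF h] .
      have an: "\<And>n. h + c *\<^sub>C hs n \<in> domZ" using csubspace_add[OF domZ_sub h csubspace_scale[OF domZ_sub hs]] .
      have Zan: "Z (h + c *\<^sub>C hs n) = Z h + c *\<^sub>C Z (hs n)" for n
        using Z_add[OF h csubspace_scale[OF domZ_sub hs]] Z_scale[OF hs] by simp
      have hsm: "\<And>n. hs n \<in> Hmp" using domZ_in hs by blast
      have t1: "ctends ipMP (\<lambda>n. h + c *\<^sub>C hs n) (h + c *\<^sub>C x)"
        by (rule MP.ctends_add[OF _ MP.inscale[OF hsm] hm MP.inscale[OF x] MP.ctends_const[OF hm] MP.ctends_scale[OF hsm x hx]]) (rule hm)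
      have Zhs: "\<And>n. Z (hs n) \<in> Hpm" using Z_in hs by blast
      have t2: "ctends ipPM (\<lambda>n. Z h + c *\<^sub>C Z (hs n)) (Z h + c *\<^sub>C y)"
        by (rule PM.ctends_add[OF _ PM.inscale[OF Zhs] Z_in[OF h] PM.inscale[OF y] PM.ctends_const[OF Z_in[OF h]] PM.ctends_scale[OF Zhs y hy]]) (rule Z_in[OF h])
      have lim: "(\<lambda>n. pair (h + c *\<^sub>C hs n) (Z h + c *\<^sub>C Z (hs n))) \<longlonglongrightarrow> pair (h + c *\<^sub>C x) (Z h + c *\<^sub>C y)"
        by (rule pair_cont[OF _ MP.inadd[OF hm MP.inscale[OF x]] t1 _ PM.inadd[OF Z_in[OF h] PM.inscale[OF y]] t2])
           (use MP.inadd[OF hm MP.inscale[OF hsm]] PM.inadd[OF Z_in[OF h] PM.inscale[OF Zhs]] in auto)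
      then have limR: "(\<lambda>n. Re (pair (h + c *\<^sub>C hs n) (Z h + c *\<^sub>C Z (hs n)))) \<longlonglongrightarrow> Re (pair (h + c *\<^sub>C x) (Z h + c *\<^sub>C y))"
        by (rule tendsto_Re)
      have "\<forall>n. 0 \<le> Re (pair (h + c *\<^sub>C hs n) (Z h + c *\<^sub>C Z (hs n)))"
      proof
        fix n
        have "0 \<le> Re (cnj (pair (h + c *\<^sub>C hs n) (Z (h + c *\<^sub>C hs n))))" using accZ an unfolding accretive_Z_def by blast
        then show "0 \<le> Re (pair (h + c *\<^sub>C hs n) (Z h + c *\<^sub>C Z (hs n)))" using Zan by simp
      qed
      then show "0 \<le> Re (pair (h + c *\<^sub>C x) (Z h + c *\<^sub>C y))" using LIMSEQ_le_const[OF limR] by blast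
    qed
  qed
  show ?thesis using mx cl by simp
qed


lemma Kl:
  assumes mT: "m_accretive H ipH DT T" and h0: "h0 \<in> Hmp" and k0: "k0 \<in> Hpm"
    and acc: "\<And>h c. h \<in> domZ \<Longrightarrow> Re (pair (h + c *\<^sub>C h0) (Z h + c *\<^sub>C k0)) \<ge> 0"
  shows "h0 \<in> domZ \<and> Z h0 = k0"
proof -
  have md: "m_dissipative H ipH DT (\<lambda>f. (- \<i>) *\<^sub>C T f)" using mT unfolding m_accretive_def .
  have zi: "Im \<i> > 0" by simp
  have bij: "bij_betw (\<lambda>f. (- \<i>) *\<^sub>C T f - \<i> *\<^sub>C f) DT H" using md zi unfolding m_dissipative_def by blast
  define f0 where "f0 = Vi h0"
  have f0H: "f0 \<in> H" unfolding f0_def using Vi_in[OF h0] .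
  have Vf0: "V f0 = h0" unfolding f0_def using V_Vi[OF h0] .
  have yH: "(- \<i>) *\<^sub>C (VS k0 + f0) \<in> H" using VS_in[OF k0] f0H HH.inadd HH.inscale by simp
  then have "(- \<i>) *\<^sub>C (VS k0 + f0) \<in> (\<lambda>f. (- \<i>) *\<^sub>C T f - \<i> *\<^sub>C f) ` DT" using bij unfolding bij_betw_def by simp
  then obtain g where g: "g \<in> DT" "(- \<i>) *\<^sub>C (VS k0 + f0) = (- \<i>) *\<^sub>C T g - \<i> *\<^sub>C g" by (rule imageE)
  have gH: "g \<in> H" using g(1) DT_H by blast
  have Vg: "V g \<in> domZ" using g(1) unfolding DT_def by blast
  have "\<i> *\<^sub>C ((- \<i>) *\<^sub>C (VS k0 + f0)) = \<i> *\<^sub>C ((- \<i>) *\<^sub>C T g - \<i> *\<^sub>C g)" using g(2) by simp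
  then have "VS k0 + f0 = T g + g" by (simp add: scaleC_diff_right scaleC_scaleC scaleC_one scaleC_minus1)
  then have eq: "VS k0 - T g = - (f0 - g)" by (simp add: algebra_simps)
  define e where "e = f0 - g"
  have eH: "e \<in> H" unfolding e_def using HH.indiff f0H gH by simp
  have mVg: "- V g \<in> domZ" using csubspace_minus[OF domZ_sub Vg] .
  have a1: "- V g + 1 *\<^sub>C h0 = V e" unfolding e_def using V_diff[OF f0H gH] Vf0 by (simp add: scaleC_one)
  have a2: "Z (- V g) + 1 *\<^sub>C k0 = k0 - Z (V g)" using linear_on_minus[OF Z2 Vg] by (simp add: scaleC_one)
  have kz: "k0 - Z (V g) \<in> Hpm" using PM.indiff[OF k0 Z_in[OF Vg]] .
  have "pair (V e) (k0 - Z (V g)) = ipH e (VS (k0 - Z (V g)))" by (rule VS_eq[OF kz eH])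
  also have "VS (k0 - Z (V g)) = VS k0 - T g" unfolding T_def using VS_diff[OF k0 Z_in[OF Vg]] .
  also have "\<dots> = - e" using eq e_def by simp
  also have "ipH e (- e) = - complex_of_real ((HH.nrm e)\<^sup>2)" using HH.minus_right[OF eH eH] HH.ip_self_nrm[OF eH] by simp
  finally have "Re (pair (- V g + 1 *\<^sub>C h0) (Z (- V g) + 1 *\<^sub>C k0)) = - (HH.nrm e)\<^sup>2" unfolding a1 a2 by simp
  then have "(HH.nrm e)\<^sup>2 \<le> 0" using acc[OF mVg, of 1] by simp
  then have "e = 0" using HH.nrm_eq_0[OF eH] by simp
  then have fg: "f0 = g" unfolding e_def by simp
  then have h0Z: "h0 \<in> domZ" using Vf0 Vg by simp
  have "VS k0 = VS (Z h0)" using eq fg Vf0 unfolding T_def by simp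
  then have "k0 = Z h0" using VS_inj[OF k0 Z_in[OF h0Z]] by simp
  then show ?thesis using h0Z by simp
qed

lemma acc_from_diss:
  assumes phi: "phi \<in> DMr" and psi: "psi \<in> AD \<times> AD"
    and d: "Im (ipS ipX S (MSt (phi + c *\<^sub>C psi)) (phi + c *\<^sub>C psi)) \<le> 0"
  shows "Re (pair (G (snd phi) + c *\<^sub>C G (snd psi)) (Z (G (snd phi)) + c *\<^sub>C (- W (G (fst psi))))) \<ge> 0"
proof -
  have phiA: "phi \<in> AD \<times> AD" using DM_AD[OF phi] .
  have hZ: "G (snd phi) \<in> domZ" and Wphi: "W (G (fst phi)) = - Z (G (snd phi))" using phi DM_char by auto
  have p: "fst psi \<in> AD" "snd psi \<in> AD" "fst phi \<in> AD" "snd phi \<in> AD" using psi phiA by auto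
  define chi where "chi = phi + c *\<^sub>C psi"
  have chiA: "chi \<in> AD \<times> AD" unfolding chi_def using csubspace_add[OF ADxAD_sub phiA csubspace_scale[OF ADxAD_sub psi]] .
  have G2: "G (snd chi) = G (snd phi) + c *\<^sub>C G (snd psi)"
    unfolding chi_def using G_add[OF p(4) csubspace_scale[OF AD_sub p(2)]] G_scale[OF p(2)] by simp
  have W1: "W (G (fst chi)) = - (Z (G (snd phi)) + c *\<^sub>C (- W (G (fst psi))))"
  proof -
    have "W (G (fst chi)) = W (G (fst phi) + c *\<^sub>C G (fst psi))"
      unfolding chi_def using G_add[OF p(3) csubspace_scale[OF AD_sub p(1)]] G_scale[OF p(1)] by simp
    also have "\<dots> = W (G (fst phi)) + c *\<^sub>C W (G (fst psi))"
      using W_add[OF G_in[OF p(3)] MP.inscale[OF G_in[OF p(1)]]] W_scale[OF G_in[OF p(1)]] by simp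
    finally show ?thesis using Wphi by (simp add: scaleC_minus_right)
  qed
  have inm: "G (snd phi) + c *\<^sub>C G (snd psi) \<in> Hmp" using MP.inadd[OF G_in[OF p(4)] MP.inscale[OF G_in[OF p(2)]]] .
  have inp: "Z (G (snd phi)) + c *\<^sub>C (- W (G (fst psi))) \<in> Hpm"
    using PM.inadd[OF Z_in[OF hZ] PM.inscale[OF PM.inminus[OF W_in[OF G_in[OF p(1)]]]]] .
  have "Im (ipS ipX S (MSt chi) chi) = Re (pair (G (snd chi)) (W (G (fst chi))))" by (rule IMF[OF chiA])
  also have "\<dots> = - Re (pair (G (snd phi) + c *\<^sub>C G (snd psi)) (Z (G (snd phi)) + c *\<^sub>C (- W (G (fst psi)))))"
    unfolding G2 W1 using pair_minus2[OF inm inp] by simp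
  finally show ?thesis using d unfolding chi_def by simp
qed

lemma cplx_diss: fixes Aa p c z :: complex and r :: real
  assumes "Im Aa \<le> 0" "r \<ge> 0" "Im z \<ge> 0"
  shows "Im (Aa + cnj c * (z * p) + c * cnj z * cnj p + c * cnj z * cnj c * complex_of_real r) \<le> 0"
proof -
  have "Im (Aa + cnj c * (z * p) + c * cnj z * cnj p + c * cnj z * cnj c * complex_of_real r)
      = Im Aa - ((Re c)\<^sup>2 + (Im c)\<^sup>2) * (r * Im z)"
    by (simp add: algebra_simps power2_eq_square)
  moreover have "((Re c)\<^sup>2 + (Im c)\<^sup>2) * (r * Im z) \<ge> 0" using assms by simp
  ultimately show ?thesis using assms(1) by linarith
qed

theorem ZtoM:
  assumes mx: "max_accretive_Z Hmp Hpm pair domZ Z" and cl: "closed_op Hmp ipMP Hpm ipPM domZ Z"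
  shows "m_dissipative UNIV (ipS ipX S) DMr MSt"
proof (rule XSi.m_diss_intro)
  have mT: "m_accretive H ipH DT T" by (rule ZtoT[OF mx cl])
  have accZ: "accretive_Z pair domZ Z" using mx unfolding max_accretive_Z_def by blast
  show "csubspace DMr" by (rule DM_sub)
  show Md: "MSt (f - g) = MSt f - MSt g" if "f \<in> DMr" "g \<in> DMr" for f g using MS_diff DM_AD that by blast
  show diss: "Im (ipS ipX S (MSt f) f) \<le> 0" if "f \<in> DMr" for f by (rule diss_DM[OF accZ that])
  fix z :: complex and y :: "'x \<times> 'x" assume z: "Im z > 0"
  define Lz where "Lz p = MSt p - z *\<^sub>C p" for p
  have est: "Im z * XSi.nrm p \<le> XSi.nrm (Lz p)" if "p \<in> DMr" for p
    unfolding Lz_def by (rule XSi.est_of_diss[OF _ _ diss[OF that] z]) auto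
  have Lzd: "Lz (p - q) = Lz p - Lz q" if "p \<in> DMr" "q \<in> DMr" for p q
    unfolding Lz_def using Md[OF that] by (simp add: scaleC_diff_right algebra_simps)
  have lift2: "\<exists>phi\<in>DMr. G (snd phi) = h" if h: "h \<in> domZ" for h
  proof -
    obtain p where p: "p \<in> AD \<times> AD" "G (snd p) = h" "W (G (fst p)) = - Z h"
      using lift[OF domZ_in[OF h] PM.inminus[OF Z_in[OF h]]] by blast
    then have "p \<in> DMr" using h DM_char by simp
    then show ?thesis using p by blast
  qed
  define R where "R = Lz ` DMr"
  have Rsub: "csubspace R" unfolding csubspace_def R_def
  proof (intro conjI ballI allI)
    have "Lz 0 = 0" using Lzd[OF csubspace_0[OF DM_sub] csubspace_0[OF DM_sub]] by simp
    then show "0 \<in> Lz ` DMr" using csubspace_0[OF DM_sub] by force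
    fix a b assume "a \<in> Lz ` DMr" "b \<in> Lz ` DMr"
    then obtain f g where fg: "f \<in> DMr" "g \<in> DMr" "a = Lz f" "b = Lz g" by blast
    have "Lz (f + g) = a + b" unfolding fg(3,4) Lz_def MS_add[OF DM_AD[OF fg(1)] DM_AD[OF fg(2)]]
      by (simp add: scaleC_add_right algebra_simps)
    then show "a + b \<in> Lz ` DMr" using csubspace_add[OF DM_sub fg(1,2)] by (metis image_eqI)
  next
    fix c a assume "a \<in> Lz ` DMr"
    then obtain f where f: "f \<in> DMr" "a = Lz f" by blast
    have "Lz (c *\<^sub>C f) = c *\<^sub>C a" unfolding f(2) Lz_def MS_scale[OF DM_AD[OF f(1)]]
      by (simp add: scaleC_diff_right scaleC_scaleC mult.commute)
    then show "c *\<^sub>C a \<in> Lz ` DMr" using csubspace_scale[OF DM_sub f(1)] by (metis image_eqI)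
  qed
  have Rclosed: "x \<in> R" if fR: "\<forall>n. f n \<in> R" and fx: "ctends (ipS ipX S) f x" for f x
  proof -
    have "\<forall>n. \<exists>g\<in>DMr. f n = Lz g" using fR R_def by blast
    then obtain ps where ps: "\<And>n. ps n \<in> DMr" "\<And>n. f n = Lz (ps n)" by metis
    have psA: "\<And>n. ps n \<in> AD \<times> AD" using DM_AD ps(1) by blast
    have cf: "ccauchy (ipS ipX S) f" by (rule XSi.ctends_cauchy[OF _ _ fx]) auto
    have "ccauchy (ipS ipX S) ps" unfolding XSi.ccauchy_iff
    proof (intro allI impI)
      fix e :: real assume e: "e > 0"
      obtain N where N: "\<forall>m\<ge>N. \<forall>n\<ge>N. XSi.nrm (f m - f n) < Im z * e"
        using cf z e unfolding XSi.ccauchy_iff by (meson mult_pos_pos)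
      show "\<exists>N. \<forall>m\<ge>N. \<forall>n\<ge>N. XSi.nrm (ps m - ps n) < e"
      proof (intro exI allI impI)
        fix m n assume mn: "m \<ge> N" "n \<ge> N"
        have "Im z * XSi.nrm (ps m - ps n) \<le> XSi.nrm (Lz (ps m - ps n))"
          by (rule est[OF csubspace_diff[OF DM_sub ps(1) ps(1)]])
        also have "Lz (ps m - ps n) = f m - f n" using Lzd[OF ps(1) ps(1)] ps(2) by simp
        finally have "Im z * XSi.nrm (ps m - ps n) < Im z * e" using N mn by fastforce
        then show "XSi.nrm (ps m - ps n) < e" using z by simp
      qed
    qed
    then obtain psi where psi: "ctends (ipS ipX S) ps psi" using XS.complete[of ps] by blast
    define eta where "eta = x + z *\<^sub>C psi"
    have Mps: "MSt (ps n) = f n + z *\<^sub>C ps n" for n using ps(2)[of n] unfolding Lz_def by simp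
    have teta: "ctends (ipS ipX S) (\<lambda>n. MSt (ps n)) eta"
      unfolding Mps eta_def by (rule XSi.ctends_add[OF _ _ _ _ fx XSi.ctends_scale[OF _ _ psi]]) auto
    have adj: "ipS ipX S (MSt phi) psi = ipS ipX S phi eta" if phi: "phi \<in> domA \<times> domA" for phi
    proof -
      have l1: "(\<lambda>n. ipS ipX S (MSt phi) (ps n)) \<longlonglongrightarrow> ipS ipX S (MSt phi) psi"
        by (rule XSi.ctends_ip[OF _ _ _ _ XSi.ctends_const psi]) auto
      have l2: "(\<lambda>n. ipS ipX S phi (MSt (ps n))) \<longlonglongrightarrow> ipS ipX S phi eta"
        by (rule XSi.ctends_ip[OF _ _ _ _ XSi.ctends_const teta]) auto
      have "(\<lambda>n. ipS ipX S (MSt phi) (ps n)) = (\<lambda>n. ipS ipX S phi (MSt (ps n)))"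
        using SYM[OF phi psA] by simp
      then show ?thesis using l1 l2 LIMSEQ_unique by metis
    qed
    have psiA: "psi \<in> AD \<times> AD" and Mpsi: "MSt psi = eta" using ADJ[OF adj] by blast+
    have "G (snd psi) \<in> domZ \<and> Z (G (snd psi)) = - W (G (fst psi))"
    proof (rule Kl[OF mT])
      show "G (snd psi) \<in> Hmp" using G_in psiA by auto
      show "- W (G (fst psi)) \<in> Hpm" using PM.inminus W_in G_in psiA by auto
      fix h c assume h: "h \<in> domZ"
      obtain phi where phi: "phi \<in> DMr" "G (snd phi) = h" using lift2[OF h] by blast
      have phiA: "phi \<in> AD \<times> AD" using DM_AD[OF phi(1)] .
      have chin: "\<And>n. phi + c *\<^sub>C ps n \<in> DMr" using csubspace_add[OF DM_sub phi(1) csubspace_scale[OF DM_sub ps(1)]] .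
      have Mchin: "MSt (phi + c *\<^sub>C ps n) = MSt phi + c *\<^sub>C MSt (ps n)" for n
        using MS_add[OF phiA csubspace_scale[OF ADxAD_sub psA]] MS_scale[OF psA] by simp
      have t1: "ctends (ipS ipX S) (\<lambda>n. phi + c *\<^sub>C ps n) (phi + c *\<^sub>C psi)"
        by (rule XSi.ctends_add[OF _ _ _ _ XSi.ctends_const XSi.ctends_scale[OF _ _ psi]]) auto
      have t2: "ctends (ipS ipX S) (\<lambda>n. MSt (phi + c *\<^sub>C ps n)) (MSt phi + c *\<^sub>C eta)"
        unfolding Mchin by (rule XSi.ctends_add[OF _ _ _ _ XSi.ctends_const XSi.ctends_scale[OF _ _ teta]]) auto
      have "(\<lambda>n. ipS ipX S (MSt (phi + c *\<^sub>C ps n)) (phi + c *\<^sub>C ps n)) \<longlonglongrightarrow> ipS ipX S (MSt phi + c *\<^sub>C eta) (phi + c *\<^sub>C psi)"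
        by (rule XSi.ctends_ip[OF _ _ _ _ t2 t1]) auto
      then have "(\<lambda>n. Im (ipS ipX S (MSt (phi + c *\<^sub>C ps n)) (phi + c *\<^sub>C ps n))) \<longlonglongrightarrow> Im (ipS ipX S (MSt phi + c *\<^sub>C eta) (phi + c *\<^sub>C psi))"
        by (rule tendsto_Im)
      moreover have "\<forall>n. Im (ipS ipX S (MSt (phi + c *\<^sub>C ps n)) (phi + c *\<^sub>C ps n)) \<le> 0" using diss chin by blast
      ultimately have "Im (ipS ipX S (MSt phi + c *\<^sub>C eta) (phi + c *\<^sub>C psi)) \<le> 0"
        using LIMSEQ_le_const2 by blast
      moreover have "MSt (phi + c *\<^sub>C psi) = MSt phi + c *\<^sub>C eta"
        using MS_add[OF phiA csubspace_scale[OF ADxAD_sub psiA]] MS_scale[OF psiA] Mpsi by simp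
      ultimately have "Im (ipS ipX S (MSt (phi + c *\<^sub>C psi)) (phi + c *\<^sub>C psi)) \<le> 0" by simp
      then show "0 \<le> Re (pair (h + c *\<^sub>C G (snd psi)) (Z h + c *\<^sub>C - W (G (fst psi))))"
        using acc_from_diss[OF phi(1) psiA] phi(2) by simp
    qed
    then have psiD: "psi \<in> DMr" using psiA DM_char by simp
    have "Lz psi = x" unfolding Lz_def Mpsi eta_def by simp
    then show ?thesis using psiD R_def by blast
  qed
  have orth: "u = 0" if ou: "\<forall>r\<in>R. ipS ipX S r u = 0" for u
  proof -
    have o1: "ipS ipX S (MSt p) u = z * ipS ipX S p u" if p: "p \<in> DMr" for p
    proof -
      have "ipS ipX S (Lz p) u = 0" using ou R_def p by blast
      then show ?thesis unfolding Lz_def using XSi.diff_left[of "MSt p" "z *\<^sub>C p" u] XSi.scale_left[of p u z] by simp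
    qed
    have "ipS ipX S (MSt phi) u = ipS ipX S phi (cnj z *\<^sub>C u)" if phi: "phi \<in> domA \<times> domA" for phi
      using o1[OF domA2_DM[OF phi]] XSi.scale_right[of phi u "cnj z"] by simp
    then have uA: "u \<in> AD \<times> AD" and Mu: "MSt u = cnj z *\<^sub>C u" using ADJ by blast+
    have "G (snd u) \<in> domZ \<and> Z (G (snd u)) = - W (G (fst u))"
    proof (rule Kl[OF mT])
      show "G (snd u) \<in> Hmp" using G_in uA by auto
      show "- W (G (fst u)) \<in> Hpm" using PM.inminus W_in G_in uA by auto
      fix h c assume h: "h \<in> domZ"
      obtain phi where phi: "phi \<in> DMr" "G (snd phi) = h" using lift2[OF h] by blast
      have phiA: "phi \<in> AD \<times> AD" using DM_AD[OF phi(1)] .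
      have "MSt (phi + c *\<^sub>C u) = MSt phi + (c * cnj z) *\<^sub>C u"
        using MS_add[OF phiA csubspace_scale[OF ADxAD_sub uA]] MS_scale[OF uA] Mu by (simp add: scaleC_scaleC)
      then have "ipS ipX S (MSt (phi + c *\<^sub>C u)) (phi + c *\<^sub>C u)
          = ipS ipX S (MSt phi) phi + cnj c * ipS ipX S (MSt phi) u + (c * cnj z) * ipS ipX S u phi
            + (c * cnj z) * cnj c * ipS ipX S u u"
        using XSi.expand2[of "MSt phi" u phi "c * cnj z" c] by simp
      also have "ipS ipX S (MSt phi) u = z * ipS ipX S phi u" by (rule o1[OF phi(1)])
      also have "ipS ipX S u phi = cnj (ipS ipX S phi u)" by (rule XSi.ipsym) auto
      also have "ipS ipX S u u = complex_of_real ((XSi.nrm u)\<^sup>2)" by (rule XSi.ip_self_nrm) auto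
      finally have e: "ipS ipX S (MSt (phi + c *\<^sub>C u)) (phi + c *\<^sub>C u)
          = ipS ipX S (MSt phi) phi + cnj c * (z * ipS ipX S phi u) + c * cnj z * cnj (ipS ipX S phi u)
            + c * cnj z * cnj c * complex_of_real ((XSi.nrm u)\<^sup>2)" by simp
      have "Im (ipS ipX S (MSt (phi + c *\<^sub>C u)) (phi + c *\<^sub>C u)) \<le> 0"
        unfolding e by (rule cplx_diss[OF diss[OF phi(1)]]) (use z in auto)
      then show "0 \<le> Re (pair (h + c *\<^sub>C G (snd u)) (Z h + c *\<^sub>C - W (G (fst u))))"
        using acc_from_diss[OF phi(1) uA] phi(2) by simp
    qed
    then have uD: "u \<in> DMr" using uA DM_char by simp
    have "ipS ipX S (MSt u) u = z * ipS ipX S u u" by (rule o1[OF uD])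
    moreover have "ipS ipX S (MSt u) u = cnj z * ipS ipX S u u" unfolding Mu by (rule XSi.scale_left) auto
    ultimately have "(cnj z - z) * ipS ipX S u u = 0" by (simp add: algebra_simps)
    moreover have "cnj z - z \<noteq> 0" using z by (simp add: complex_eq_iff)
    ultimately have "ipS ipX S u u = 0" by simp
    then show "u = 0" by (rule XSi.definite[rotated]) simp
  qed
  have "R = UNIV" by (rule XS.orth_complete[OF _ Rsub Rclosed orth]) auto
  then have "y \<in> Lz ` DMr" using R_def by simp
  then obtain f where "f \<in> DMr" "y = Lz f" by (rule imageE)
  then show "\<exists>f\<in>DMr. MSt f - z *\<^sub>C f = y" unfolding Lz_def by blast
qed auto

end

theorem corollary7p4:
  fixes ipX :: "'x::cvec \<Rightarrow> 'x \<Rightarrow> complex"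
    and domA :: "'x set" and A :: "'x \<Rightarrow> 'x"
    and S :: "'x \<times> 'x \<Rightarrow> 'x \<times> 'x"
    and H Hmp Hpm :: "'h::cvec set"
    and ipH ipMP ipPM pair :: "'h \<Rightarrow> 'h \<Rightarrow> complex"
    and G :: "'x \<Rightarrow> 'h" and W :: "'h \<Rightarrow> 'h"
    and domZ :: "'h set" and Z :: "'h \<Rightarrow> 'h"
    and V :: "'h \<Rightarrow> 'h"
  assumes X: "hilbert_on (UNIV :: 'x set) ipX"
    and A: "closed_dd_symmetric ipX domA A"
    and S: "bounded_unif_pos_sa ipX S"
    and duality: "mixed_duality H ipH Hmp ipMP Hpm ipPM"
    and pairing: "is_duality_pairing H ipH Hmp ipMP Hpm ipPM pair"
    and red: "reduction_tuple ipX domA A H ipH Hmp ipMP Hpm ipPM pair G W"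
    and Z: "domZ \<subseteq> Hmp" "linear_on domZ Hpm Z"
    and V: "lin_homeo H ipH Hmp ipMP V"
  shows "(m_dissipative UNIV (ipS ipX S) (dom_MGr ipX domA A G W domZ Z) (Mstar ipX domA A S)
            \<longleftrightarrow> max_accretive_Z Hmp Hpm pair domZ Z \<and> closed_op Hmp ipMP Hpm ipPM domZ Z)
       \<and> (max_accretive_Z Hmp Hpm pair domZ Z \<and> closed_op Hmp ipMP Hpm ipPM domZ Z
            \<longleftrightarrow> m_accretive H ipH {f \<in> H. V f \<in> domZ} (\<lambda>f. Vsharp H ipH pair V (Z (V f))))"
proof -
  interpret setting ipX domA A S H Hmp Hpm ipH ipMP ipPM pair G W domZ Z V
    by (rule setting.intro) (fact X A S duality pairing red Z V)+
  have e: "m_accretive H ipH {f \<in> H. V f \<in> domZ} (\<lambda>f. Vsharp H ipH pair V (Z (V f))) = m_accretive H ipH DT T"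
    unfolding DT_def T_def[abs_def] VS_def ..
  show ?thesis using MtoZ ZtoM ZtoT TtoZ e by blast
qed


end
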